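(* Let $\Sigma=\{a,b,c,e\}$ with $e$ neutral, and let $L_{ab}$ be the language of words $u\in\Sigma^*$ such that (1) deleting all $e$'s from $u$ yields exactly $ab$, or (2) $|u|_a\ge 3$, or (3) $|u|_b\ge3$. Let $L_3$ be the language of words $w\in\Sigma^*$ with $|w|_c\ge1$ and $w_{-\{c\}}\in L_{ab}$. Then $L_3$ is a ZG language that is not semi-extensible ZG, and, assuming the prefix-$U_1$ hypothesis, $L_3$ is not tractable.
   Context: $|u|_x$ is the number of occurrences of $x$ in $u$; $w_{-\{c\}}$ is $w$ with all $c$'s deleted. A letter $e$ is neutral for $L$ if $st\in L\Leftrightarrow set\in L$ for all words $s,t$. The syntactic monoid $M$ of $L$ is $\Sigma^*$ quotiented by $u\sim_L v$ iff ($sut\in L\Leftrightarrow svt\in L$ for all $s,t$); $\omega$ is its idempotent power. $L$ is ZG if $yx^{\omega+1}=x^{\omega+1}y$ for all $x,y\in M$; $L$ is semi-extensible ZG if it is ZG and for all words $x,y,z$ and every non-neutral letter $a$, $y\in L$ implies $xyza^\omega\in L$. For $w=a_1\cdots a_n$, an $L$-infix is a pair $[i,j]$ with $1\le i\le j\le n$ and $a_i\cdots a_j\in L$. $L$ is tractable if there is a data structure built on an input word $w$ supporting letter substitution updates (replace the $i$-th letter by a given letter) and enumeration queries (output every $L$-infix of the current word exactly once, any order), and a constant $B$ depending only on $L$ such that for every $w$: each update takes at most $B$ steps; during enumeration the next $L$-infix (or the conclusion that none remain) is produced within $B$ steps; enumeration uses at most $B$ additional memory cells, previous memory read-only; building takes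 at most $B|w|$ steps and memory never exceeds $B|w|$ cells. Model: unit-cost RAM with logarithmic cell size. The prefix-$U_1$ problem: maintain $S\subseteq\{1,\dots,n\}$ supporting, on input $i\le n$, (1) test $i\in S$, (2) insert $i$, (3) remove $i$, (4) return yes iff $i\le\min S$; the prefix-$U_1$ hypothesis states no data structure does all of these in time independent of $n$ in that model. *)

theory Defs
  imports Main
begin

datatype sym = A | B | C | E

definition wpow :: "'a list \<Rightarrow> nat \<Rightarrow> 'a list" where
  "wpow x k = concat (replicate k x)"

definition synt_eq :: "'a list set \<Rightarrow> 'a list \<Rightarrow> 'a list \<Rightarrow> bool" where
  "synt_eq L u v \<longleftrightarrow> (\<forall>s t. s @ u @ t \<in> L \<longleftrightarrow> s @ v @ t \<in> L)"

text \<open>The idempotent power omega of the class of x in the syntactic monoid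
  (least positive k with [x]^k idempotent; it exists whenever the monoid is finite).\<close>
definition omega :: "'a list set \<Rightarrow> 'a list \<Rightarrow> nat" where
  "omega L x = (LEAST k. 1 \<le> k \<and> synt_eq L (wpow x k @ wpow x k) (wpow x k))"

definition neutral :: "'a list set \<Rightarrow> 'a \<Rightarrow> bool" where
  "neutral L e \<longleftrightarrow> (\<forall>s t. s @ t \<in> L \<longleftrightarrow> s @ [e] @ t \<in> L)"

definition ZG :: "'a list set \<Rightarrow> bool" where
  "ZG L \<longleftrightarrow> (\<forall>x y. synt_eq L (y @ wpow x (omega L x + 1)) (wpow x (omega L x + 1) @ y))"

definition semi_ext_ZG :: "'a list set \<Rightarrow> bool" where
  "semi_ext_ZG L \<longleftrightarrow> ZG L \<and>
     (\<forall>x y z a. \<not> neutral L a \<longrightarrow> y \<in> L \<longrightarrow> x @ y @ z @ wpow [a] (omega L [a]) \<in> L)"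

definition L_ab :: "sym list set" where
  "L_ab = {u. filter (\<lambda>x. x \<noteq> E) u = [A, B] \<or> count_list u A \<ge> 3 \<or> count_list u B \<ge> 3}"

definition L3 :: "sym list set" where
  "L3 = {w. count_list w C \<ge> 1 \<and> filter (\<lambda>x. x \<noteq> C) w \<in> L_ab}"

text \<open>For an instance of size n,
  every value stored and every address used must be below (n+2)^K, where K is a constant
  of the data structure (cells of O(log n) bits).\<close>

datatype instr =
    Const nat nat
  | Add nat nat nat
  | Sub nat nat nat        (* truncated subtraction *)
  | Mul nat nat nat
  | Div nat nat nat
  | Mod nat nat nat
  | Load nat nat
  | Store nat nat
  | Input nat nat          (* M[a] := inp ! M[b]  (0 if out of range) *)
  | Jmp nat
  | Jz nat nat
  | Out nat nat

type_synonym mem = "nat \<Rightarrow> nat"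
text \<open>configuration: pc, memory, outputs (time of output, pair), time, set of written cells\<close>
type_synonym config = "nat \<times> mem \<times> (nat \<times> nat \<times> nat) list \<times> nat \<times> nat set"

definition step :: "instr list \<Rightarrow> nat list \<Rightarrow> nat \<Rightarrow> nat \<Rightarrow> config \<Rightarrow> config option" where
  "step P inp cap amax c = (case c of (pc, M, Os, t, W) \<Rightarrow>
     if length P \<le> pc then Some c else
     (let ok = (\<lambda>a. a < amax);
          wr = (\<lambda>a v. if a < amax \<and> v < cap
                       then Some (Suc pc, M(a := v), Os, Suc t, insert a W) else None)
      in case P ! pc of
        Const a v \<Rightarrow> wr a v
      | Add a b d \<Rightarrow> if ok b \<and> ok d then wr a (M b + M d) else None
      | Sub a b d \<Rightarrow> if ok b \<and> ok d then wr a (M b - M d) else None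
      | Mul a b d \<Rightarrow> if ok b \<and> ok d then wr a (M b * M d) else None
      | Div a b d \<Rightarrow> if ok b \<and> ok d then wr a (M b div M d) else None
      | Mod a b d \<Rightarrow> if ok b \<and> ok d then wr a (M b mod M d) else None
      | Load a b \<Rightarrow> if ok b \<and> ok (M b) then wr a (M (M b)) else None
      | Store a b \<Rightarrow> if ok a \<and> ok b then wr (M a) (M b) else None
      | Input a b \<Rightarrow> if ok b then wr a (if M b < length inp then inp ! (M b) else 0) else None
      | Jmp l \<Rightarrow> Some (l, M, Os, Suc t, W)
      | Jz a l \<Rightarrow> if ok a then Some (if M a = 0 then l else Suc pc, M, Os, Suc t, W) else None
      | Out a b \<Rightarrow> if ok a \<and> ok b then Some (Suc pc, M, Os @ [(Suc t, M a, M b)], Suc t, W)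
                   else None))"

fun steps :: "instr list \<Rightarrow> nat list \<Rightarrow> nat \<Rightarrow> nat \<Rightarrow> nat \<Rightarrow> config \<Rightarrow> config option" where
  "steps P inp cap amax 0 c = Some c"
| "steps P inp cap amax (Suc k) c = Option.bind (step P inp cap amax c) (steps P inp cap amax k)"

definition run :: "instr list \<Rightarrow> nat list \<Rightarrow> nat \<Rightarrow> nat \<Rightarrow> nat \<Rightarrow> mem
                   \<Rightarrow> (mem \<times> (nat \<times> nat \<times> nat) list \<times> nat \<times> nat set) option" where
  "run P inp cap amax fuel M = (case steps P inp cap amax fuel (0, M, [], 0, {}) of
      None \<Rightarrow> None
    | Some (pc, M', Os, t, W) \<Rightarrow> if length P \<le> pc then Some (M', Os, t, W) else None)"

fun code :: "sym \<Rightarrow> nat" where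
  "code A = 0" | "code B = 1" | "code C = 2" | "code E = 3"

definition infixes :: "sym list set \<Rightarrow> sym list \<Rightarrow> (nat \<times> nat) set" where
  "infixes L w = {(i, j). 1 \<le> i \<and> i \<le> j \<and> j \<le> length w \<and> take (j - i + 1) (drop (i - 1) w) \<in> L}"

definition valid_upds :: "nat \<Rightarrow> (nat \<times> sym) list \<Rightarrow> bool" where
  "valid_upds n us \<longleftrightarrow> (\<forall>(i, x) \<in> set us. 1 \<le> i \<and> i \<le> n)"

definition apply_upds :: "sym list \<Rightarrow> (nat \<times> sym) list \<Rightarrow> sym list" where
  "apply_upds w us = fold (\<lambda>(i, x) v. v[i - 1 := x]) us w"

fun upds :: "instr list \<Rightarrow> nat \<Rightarrow> nat \<Rightarrow> nat \<Rightarrow> mem \<Rightarrow> (nat \<times> sym) list \<Rightarrow> mem option" where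
  "upds Pu cap amax Bd M [] = Some M"
| "upds Pu cap amax Bd M ((i, x) # us) = (case run Pu [i, code x] cap amax Bd M of
      None \<Rightarrow> None
    | Some (M', _) \<Rightarrow> upds Pu cap amax Bd M' us)"

definition gaps_le :: "nat \<Rightarrow> nat list \<Rightarrow> bool" where
  "gaps_le Bd ts \<longleftrightarrow> (\<forall>k. Suc k < length ts \<longrightarrow> ts ! Suc k - ts ! k \<le> Bd)"

text \<open>The data-structure memory is left unchanged
  (the enumeration's memory effects are discarded), modelling "previous memory read-only".\<close>
definition enum_ok :: "sym list set \<Rightarrow> instr list \<Rightarrow> nat \<Rightarrow> nat \<Rightarrow> nat \<Rightarrow> sym list \<Rightarrow> mem \<Rightarrow> bool" where
  "enum_ok L Pe cap amax Bd w M \<longleftrightarrow>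
     (\<exists>fuel M' Os T W. run Pe [] cap amax fuel M = Some (M', Os, T, W) \<and>
        card W \<le> Bd \<and> distinct (map snd Os) \<and> set (map snd Os) = infixes L w \<and>
        gaps_le Bd (0 # map fst Os @ [T]))"

definition tractable :: "sym list set \<Rightarrow> bool" where
  "tractable L \<longleftrightarrow> (\<exists>Pb Pu Pe K Bd. \<forall>w us. valid_upds (length w) us \<longrightarrow>
     (let n = length w; cap = (n + 2) ^ K; amax = Bd * (n + 1) in
      case run Pb (n # map code w) cap amax (Bd * (n + 1)) (\<lambda>_. 0) of
        None \<Rightarrow> False
      | Some (M0, _) \<Rightarrow>
          (case upds Pu cap amax Bd M0 us of
             None \<Rightarrow> False
           | Some M \<Rightarrow> enum_ok L Pe cap amax Bd (apply_upds w us) M)))"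

text \<open>Operation codes: 1 test membership, 2 insert, 3 remove, 4 prefix query (i \<le> min S,
  true when S is empty). Returns the correct answer and the new set.\<close>
definition u1_spec :: "nat set \<Rightarrow> nat \<Rightarrow> nat \<Rightarrow> bool \<times> nat set" where
  "u1_spec S op i = (if op = 1 then (i \<in> S, S)
                     else if op = 2 then (False, insert i S)
                     else if op = 3 then (False, S - {i})
                     else ((\<forall>j\<in>S. i \<le> j), S))"

text \<open>Answer of a query = "yes" iff the operation produced some output.\<close>
fun u1_run :: "instr list \<Rightarrow> nat \<Rightarrow> nat \<Rightarrow> mem \<Rightarrow> nat set \<Rightarrow> (nat \<times> nat) list \<Rightarrow> bool" where
  "u1_run Po cap Cst M S [] = True"
| "u1_run Po cap Cst M S ((op, i) # ops) = (case run Po [op, i] cap cap Cst M of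
      None \<Rightarrow> False
    | Some (M', Os, _) \<Rightarrow> (op \<in> {1, 4} \<longrightarrow> (Os \<noteq> []) = fst (u1_spec S op i)) \<and>
                         u1_run Po cap Cst M' (snd (u1_spec S op i)) ops)"

definition prefix_U1_hyp :: bool where
  "prefix_U1_hyp \<longleftrightarrow> \<not> (\<exists>Pi Po K Cst. \<forall>n ops.
      (\<forall>(op, i) \<in> set ops. op \<in> {1, 2, 3, 4} \<and> 1 \<le> i \<and> i \<le> n) \<longrightarrow>
      (\<exists>fuel M0 Os t W. run Pi [n] ((n + 2) ^ K) ((n + 2) ^ K) fuel (\<lambda>_. 0) = Some (M0, Os, t, W) \<and>
         u1_run Po ((n + 2) ^ K) Cst M0 {} ops))"

end

theory Submission
  imports Defs
begin


lemma wpow_Suc: "wpow x (Suc k) = x @ wpow x k" by (simp add: wpow_def)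
lemma wpow_0[simp]: "wpow x 0 = []" by (simp add: wpow_def)
lemma wpow_add: "wpow x (k + l) = wpow x k @ wpow x l"
  by (simp add: wpow_def replicate_add)
lemma count_wpow[simp]: "count_list (wpow x k) c = k * count_list x c"
  by (induction k) (simp_all add: wpow_Suc)
lemma filter_wpow[simp]: "filter P (wpow x k) = wpow (filter P x) k"
  by (induction k) (simp_all add: wpow_Suc)

definition ff :: "sym list \<Rightarrow> sym list" where
  "ff w = filter (\<lambda>x. x \<noteq> E) (filter (\<lambda>x. x \<noteq> C) w)"

lemma count_rep[simp]: "count_list (replicate n x) y = (if x = y then n else 0)"
  by (induction n) auto

lemma count_filter_gen: "count_list (filter P xs) x = (if P x then count_list xs x else 0)"
  by (induction xs) auto

lemma L3_iff: "w \<in> L3 \<longleftrightarrow> count_list w C \<ge> 1 \<and>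
   (ff w = [A,B] \<or> count_list w A \<ge> 3 \<or> count_list w B \<ge> 3)"
  by (simp add: L3_def L_ab_def ff_def count_filter_gen)

lemma ff_append[simp]: "ff (u @ v) = ff u @ ff v" by (simp add: ff_def)

lemma ff_noAB: "count_list X A = 0 \<Longrightarrow> count_list X B = 0 \<Longrightarrow> ff X = []"
proof (induction X)
  case (Cons a X) then show ?case by (cases a) (auto simp: ff_def)
qed (simp add: ff_def)

lemma count_ff: "x = A \<or> x = B \<Longrightarrow> count_list (ff w) x = count_list w x"
  by (auto simp: ff_def count_filter_gen)

lemma sat_eq:
  assumes "(count_list u A \<ge> 3 \<and> count_list v A \<ge> 3) \<or> (count_list u B \<ge> 3 \<and> count_list v B \<ge> 3)"
    and "(count_list u C \<ge> 1) = (count_list v C \<ge> 1)"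
  shows "synt_eq L3 u v"
  using assms unfolding synt_eq_def L3_iff by auto

lemma omega_ge2:
  assumes "count_list x A \<ge> 1 \<or> count_list x B \<ge> 1"
    and "count_list x A \<le> 2" and "count_list x B \<le> 2"
  shows "omega L3 x \<ge> 2"
proof -
  let ?P = "\<lambda>k. 1 \<le> k \<and> synt_eq L3 (wpow x k @ wpow x k) (wpow x k)"
  have P3: "?P 3"
    by (rule conjI, simp, rule sat_eq) (use assms in auto)
  have ex: "?P (omega L3 x)" unfolding omega_def by (rule LeastI[of ?P, OF P3])
  have not1: "\<not> synt_eq L3 (x @ x) x"
  proof
    assume h: "synt_eq L3 (x @ x) x"
    show False
    proof (cases "count_list x A \<ge> 1")
      case True
      let ?t = "replicate (3 - 2 * count_list x A) A"
      have "[C] @ (x @ x) @ ?t \<in> L3 \<longleftrightarrow> [C] @ x @ ?t \<in> L3" using h unfolding synt_eq_def by blast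
      moreover have "[C] @ (x @ x) @ ?t \<in> L3" using True assms
        unfolding L3_iff by (auto simp: count_list_append)
      moreover have "[C] @ x @ ?t \<notin> L3"
      proof
        assume "[C] @ x @ ?t \<in> L3"
        moreover have "count_list ([C] @ x @ ?t) A = 2" using True assms(2)
          by (auto simp: count_list_append)
        moreover have "count_list (ff ([C] @ x @ ?t)) A = 2"
          using calculation(2) count_ff by metis
        ultimately show False using assms(3) unfolding L3_iff by (auto simp: count_list_append)
      qed
      ultimately show False by blast
    next
      case False
      hence B1: "count_list x B \<ge> 1" using assms(1) by auto
      let ?t = "replicate (3 - 2 * count_list x B) B"
      have "[C] @ (x @ x) @ ?t \<in> L3 \<longleftrightarrow> [C] @ x @ ?t \<in> L3" using h unfolding synt_eq_def by blast
      moreover have "[C] @ (x @ x) @ ?t \<in> L3" using B1 assms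
        unfolding L3_iff by (auto simp: count_list_append)
      moreover have "[C] @ x @ ?t \<notin> L3"
      proof
        assume "[C] @ x @ ?t \<in> L3"
        moreover have "count_list ([C] @ x @ ?t) B = 2" using B1 assms(3)
          by (auto simp: count_list_append)
        moreover have "count_list (ff ([C] @ x @ ?t)) B = 2"
          using calculation(2) count_ff by metis
        ultimately show False using assms(2) False unfolding L3_iff by (auto simp: count_list_append)
      qed
      ultimately show False by blast
    qed
  qed
  have "omega L3 x \<noteq> 1"
  proof
    assume "omega L3 x = 1"
    with ex have "synt_eq L3 (wpow x 1 @ wpow x 1) (wpow x 1)" by simp
    thus False using not1 by (simp add: wpow_def)
  qed
  with ex show ?thesis by linarith
qed

lemma ZG_L3: "ZG L3"
  unfolding ZG_def
proof (intro allI)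
  fix x y
  let ?X = "wpow x (omega L3 x + 1)"
  have cX: "count_list ?X c = (omega L3 x + 1) * count_list x c" for c by (simp only: count_wpow)
  have big: "count_list ?X A \<ge> 3 \<or> count_list ?X B \<ge> 3" if h1: "count_list x A \<ge> 1 \<or> count_list x B \<ge> 1"
  proof (cases "count_list x A \<le> 2 \<and> count_list x B \<le> 2")
    case True
    with omega_ge2[OF h1] have o3: "omega L3 x + 1 \<ge> 3" by linarith
    show ?thesis
    proof (cases "count_list x A \<ge> 1")
      case True
      have "(omega L3 x + 1) * count_list x A \<ge> 3 * 1" using o3 True by (rule mult_le_mono)
      then show ?thesis unfolding cX by simp
    next
      case False
      hence "count_list x B \<ge> 1" using h1 by simp
      have "(omega L3 x + 1) * count_list x B \<ge> 3 * 1" using o3 \<open>count_list x B \<ge> 1\<close> by (rule mult_le_mono)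
      then show ?thesis unfolding cX by simp
    qed
  next
    case False
    show ?thesis
    proof (cases "count_list x A \<le> 2")
      case True
      hence "count_list x B \<ge> 3" using False by simp
      have "(omega L3 x + 1) * count_list x B \<ge> 1 * 3" using \<open>count_list x B \<ge> 3\<close> by (intro mult_le_mono) auto
      then show ?thesis unfolding cX by simp
    next
      case False
      hence "count_list x A \<ge> 3" by simp
      have "(omega L3 x + 1) * count_list x A \<ge> 1 * 3" using \<open>count_list x A \<ge> 3\<close> by (intro mult_le_mono) auto
      then show ?thesis unfolding cX by simp
    qed
  qed
  show "synt_eq L3 (y @ ?X) (?X @ y)"
    unfolding synt_eq_def
  proof (intro allI)
    fix s t
    have cnt: "\<And>c. count_list (s @ (y @ ?X) @ t) c = count_list (s @ (?X @ y) @ t) c"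
      by (simp add: count_list_append)
    show "s @ (y @ ?X) @ t \<in> L3 \<longleftrightarrow> s @ (?X @ y) @ t \<in> L3"
    proof (cases "count_list x A \<ge> 1 \<or> count_list x B \<ge> 1")
      case True
      from big[OF True] have "count_list (s @ (y @ ?X) @ t) A \<ge> 3 \<or> count_list (s @ (y @ ?X) @ t) B \<ge> 3"
        by (auto simp: count_list_append)
      hence "count_list (s @ (?X @ y) @ t) A \<ge> 3 \<or> count_list (s @ (?X @ y) @ t) B \<ge> 3"
        by (simp only: cnt)
      then show ?thesis unfolding L3_iff cnt by blast
    next
      case False
      hence "count_list x A = 0" "count_list x B = 0" by simp_all
      hence "ff ?X = []" by (intro ff_noAB) (simp_all only: cX mult_0_right)
      hence "ff (s @ (y @ ?X) @ t) = ff (s @ (?X @ y) @ t)" by (simp only: ff_append append_Nil append_Nil2)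
      then show ?thesis unfolding L3_iff cnt by (simp only:)
    qed
  qed
qed

lemma not_semi: "\<not> semi_ext_ZG L3"
proof
  assume h: "semi_ext_ZG L3"
  have nn: "\<not> neutral L3 C"
  proof
    assume "neutral L3 C"
    hence "[] @ [A,B] \<in> L3 \<longleftrightarrow> [] @ [C] @ [A,B] \<in> L3" unfolding neutral_def by blast
    thus False by (simp add: L3_iff ff_def)
  qed
  have y: "[C,A,B] \<in> L3" by (simp add: L3_iff ff_def)
  from h nn y have "[A] @ [C,A,B] @ [] @ wpow [C] (omega L3 [C]) \<in> L3"
    unfolding semi_ext_ZG_def by blast
  moreover have "\<And>k. ff (wpow [C] k) = []" by (simp add: ff_def wpow_def)
  ultimately show False by (simp add: L3_iff ff_def count_list_append)
qed


definition gS :: "nat set \<Rightarrow> nat \<Rightarrow> sym" where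
  "gS S k = (if k = 0 then A else if k mod 3 = 0 \<and> k div 3 \<in> S then C else E)"

definition wordS :: "nat \<Rightarrow> nat set \<Rightarrow> sym list" where
  "wordS n S = map (gS S) [0..<3*n+1]"

definition qS :: "nat set \<Rightarrow> nat \<Rightarrow> nat \<Rightarrow> sym" where
  "qS S i k = (if k = 3*i-2 \<or> k = 3*i-1 then B else gS S k)"

lemma length_wordS[simp]: "length (wordS n S) = 3*n+1" by (simp add: wordS_def)

lemma infix_map: "1 \<le> l \<Longrightarrow> l \<le> r \<Longrightarrow> r \<le> length w \<Longrightarrow> take (r - l + 1) (drop (l - 1) w) = map (nth w) [l - 1..<r]"
  by (rule nth_equalityI) (auto simp: min_def nth_drop split: if_splits)

lemma ff_CE: "(\<forall>x\<in>set w. x = C \<or> x = E) \<Longrightarrow> ff w = []"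
  by (induction w) (auto simp: ff_def)

lemma count_map_upt: "count_list (map f [a..<b]) x = card {k. a \<le> k \<and> k < b \<and> f k = x}"
proof -
  have "count_list (map f [a..<b]) x = length (filter (\<lambda>k. f k = x) [a..<b])"
    by (induction b) auto
  also have "\<dots> = card (set (filter (\<lambda>k. f k = x) [a..<b]))"
    by (rule distinct_card[symmetric]) simp
  also have "set (filter (\<lambda>k. f k = x) [a..<b]) = {k. a \<le> k \<and> k < b \<and> f k = x}" by auto
  finally show ?thesis .
qed

lemma qword_infixes:
  assumes S: "S \<subseteq> {1..n}" and i: "1 \<le> i" "i \<le> n"
  shows "infixes L3 (map (qS S i) [0..<3*n+1]) = {} \<longleftrightarrow> (\<forall>j\<in>S. i \<le> j)"
proof
  assume emp: "infixes L3 (map (qS S i) [0..<3*n+1]) = {}"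
  show "\<forall>j\<in>S. i \<le> j"
  proof (rule ccontr)
    assume "\<not> (\<forall>j\<in>S. i \<le> j)"
    then obtain j where j: "j \<in> S" "j < i" by auto
    with S have j1: "1 \<le> j" by auto
    let ?w = "map (qS S i) [0..<3*n+1]"
    have eq: "take (3*i - 1 - 1 + 1) (drop (1 - 1) ?w) = map (qS S i) [0..<3*i-1]"
      using i by (subst infix_map) (auto simp del: upt_Suc intro!: map_cong)
    have e1: "3*i-1 = Suc (3*i-2)" using i by simp
    have e2: "[0..<3*i-2] = 0 # [1..<3*i-2]" using i by (simp add: upt_conv_Cons)
    have ups: "[0..<3*i-1] = [0] @ [1..<3*i-2] @ [3*i-2]"
      unfolding e1 upt_Suc_append[OF le0] e2 by simp
    have ce: "\<forall>x\<in>set (map (qS S i) [1..<3*i-2]). x = C \<or> x = E"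
      by (auto simp: qS_def gS_def)
    have "ff (map (qS S i) [0..<3*i-1]) = [A,B]"
      unfolding ups using ff_CE[OF ce] i by (simp add: qS_def gS_def ff_def)
    moreover have "C \<in> set (map (qS S i) [0..<3*i-1])"
    proof -
      have "3*j < 3*i-2" using j by linarith
      hence "qS S i (3*j) = C" using j j1 by (simp add: qS_def gS_def)
      moreover have "3*j < 3*i-1" using j by simp
      ultimately show ?thesis by force
    qed
    moreover have "count_list (map (qS S i) [0..<3*i-1]) C \<noteq> 0"
      using calculation(2) count_list_0_iff by metis
    ultimately have "map (qS S i) [0..<3*i-1] \<in> L3"
      unfolding L3_iff by simp
    hence "(1, 3*i-1) \<in> infixes L3 ?w"
      unfolding infixes_def using eq i by auto
    with emp show False by simp
  qed
next
  assume all: "\<forall>j\<in>S. i \<le> j"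
  show "infixes L3 (map (qS S i) [0..<3*n+1]) = {}"
  proof (rule ccontr)
    assume "infixes L3 (map (qS S i) [0..<3*n+1]) \<noteq> {}"
    then obtain l r where lr: "1 \<le> l" "l \<le> r" "r \<le> 3*n+1"
      and mem: "take (r - l + 1) (drop (l - 1) (map (qS S i) [0..<3*n+1])) \<in> L3"
      unfolding infixes_def by auto
    let ?u = "map (qS S i) [l-1..<r]"
    have "take (r - l + 1) (drop (l - 1) (map (qS S i) [0..<3*n+1])) = ?u"
      using lr by (subst infix_map) (auto simp del: upt_Suc intro!: map_cong)
    with mem have u: "?u \<in> L3" by simp
    have qA: "qS S i k = A \<longleftrightarrow> k = 0" for k
      using i by (simp add: qS_def gS_def)
    have qB: "qS S i k = B \<longleftrightarrow> (k = 3*i-2 \<or> k = 3*i-1)" for k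
      by (simp add: qS_def gS_def)
    have cA: "count_list ?u A = card {k. l - 1 \<le> k \<and> k < r \<and> k = 0}"
      unfolding count_map_upt qA ..
    have cB: "count_list ?u B = card {k. l - 1 \<le> k \<and> k < r \<and> (k = 3*i-2 \<or> k = 3*i-1)}"
      unfolding count_map_upt qB ..
    have cA1: "count_list ?u A \<le> 1"
    proof -
      have "{k. l - 1 \<le> k \<and> k < r \<and> k = 0} \<subseteq> {0}" by auto
      hence "card {k. l - 1 \<le> k \<and> k < r \<and> k = 0} \<le> card {0::nat}" by (intro card_mono) auto
      thus ?thesis using cA by simp
    qed
    have cB2: "count_list ?u B \<le> 2"
    proof -
      have "{k. l - 1 \<le> k \<and> k < r \<and> (k = 3*i-2 \<or> k = 3*i-1)} \<subseteq> {3*i-2, 3*i-1}" by auto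
      hence "card {k. l - 1 \<le> k \<and> k < r \<and> (k = 3*i-2 \<or> k = 3*i-1)} \<le> card {3*i-2, 3*i-1}" by (intro card_mono) auto
      also have "\<dots> \<le> 2" by (rule card_insert_le_m1) auto
      finally show ?thesis using cB by simp
    qed
    from u cA1 cB2 have ffu: "ff ?u = [A,B]" and hasC: "count_list ?u C \<ge> 1"
      unfolding L3_iff by auto
    have "count_list ?u A = 1" using count_ff[of A ?u] ffu by simp
    hence "card {k. l - 1 \<le> k \<and> k < r \<and> k = 0} \<noteq> 0" using cA by simp
    hence "{k. l - 1 \<le> k \<and> k < r \<and> k = 0} \<noteq> {}" by (metis card.empty)
    hence l1: "l = 1" using lr by auto
    have "count_list ?u B = 1" using count_ff[of B ?u] ffu by simp
    hence cb1: "card {k. l - 1 \<le> k \<and> k < r \<and> (k = 3*i-2 \<or> k = 3*i-1)} = 1" using cB by simp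
    have r: "r = 3*i-1"
    proof -
      have "{k. l - 1 \<le> k \<and> k < r \<and> (k = 3*i-2 \<or> k = 3*i-1)} = {k. k < r \<and> (k = 3*i-2 \<or> k = 3*i-1)}"
        using l1 by auto
      show ?thesis
      proof (rule ccontr)
        assume "r \<noteq> 3*i-1"
        hence "r \<le> 3*i-2 \<or> r \<ge> 3*i" by linarith
        then show False
        proof
          assume "r \<le> 3*i-2"
          hence "{k. l - 1 \<le> k \<and> k < r \<and> (k = 3*i-2 \<or> k = 3*i-1)} = {}" by auto
          with cb1 show False by (metis card.empty zero_neq_one)
        next
          assume "r \<ge> 3*i"
          hence "{k. l - 1 \<le> k \<and> k < r \<and> (k = 3*i-2 \<or> k = 3*i-1)} = {3*i-2, 3*i-1}" using l1 i by auto
          moreover have "card {3*i-2, 3*i-1} = 2" using i by simp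
          ultimately show False using cb1 by simp
        qed
      qed
    qed
    from hasC have "C \<in> set ?u" by (metis count_list_0_iff not_one_le_zero)
    then obtain k where k: "l - 1 \<le> k" "k < r" "qS S i k = C" by auto
    hence "k mod 3 = 0" "k div 3 \<in> S" "k \<noteq> 0"
      by (auto simp: qS_def gS_def split: if_splits)
    moreover have "k div 3 < i" using k r by auto
    ultimately show False using all by auto
  qed
qed


fun sem :: "nat list \<Rightarrow> nat \<Rightarrow> nat \<Rightarrow> instr \<Rightarrow> mem \<Rightarrow> mem option" where
  "sem inp cap amax (Const a v) M = (if a < amax \<and> v < cap then Some (M(a := v)) else None)"
| "sem inp cap amax (Add a b d) M = (if b < amax \<and> d < amax \<and> a < amax \<and> M b + M d < cap then Some (M(a := M b + M d)) else None)"
| "sem inp cap amax (Sub a b d) M = (if b < amax \<and> d < amax \<and> a < amax \<and> M b - M d < cap then Some (M(a := M b - M d)) else None)"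
| "sem inp cap amax (Mul a b d) M = (if b < amax \<and> d < amax \<and> a < amax \<and> M b * M d < cap then Some (M(a := M b * M d)) else None)"
| "sem inp cap amax (Div a b d) M = (if b < amax \<and> d < amax \<and> a < amax \<and> M b div M d < cap then Some (M(a := M b div M d)) else None)"
| "sem inp cap amax (Mod a b d) M = (if b < amax \<and> d < amax \<and> a < amax \<and> M b mod M d < cap then Some (M(a := M b mod M d)) else None)"
| "sem inp cap amax (Load a b) M = (if b < amax \<and> M b < amax \<and> a < amax \<and> M (M b) < cap then Some (M(a := M (M b))) else None)"
| "sem inp cap amax (Store a b) M = (if a < amax \<and> b < amax \<and> M a < amax \<and> M b < cap then Some (M(M a := M b)) else None)"
| "sem inp cap amax (Input a b) M = (if b < amax \<and> a < amax \<and> (if M b < length inp then inp ! (M b) else 0) < cap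
       then Some (M(a := (if M b < length inp then inp ! (M b) else 0))) else None)"
| "sem inp cap amax (Jmp l) M = None"
| "sem inp cap amax (Jz a l) M = None"
| "sem inp cap amax (Out a b) M = None"

lemma step_sem:
  assumes "pc < length Q" "Q ! pc = ins" "sem inp cap amax ins M = Some M'"
  shows "\<exists>W'. step Q inp cap amax (pc, M, Os, t, W) = Some (Suc pc, M', Os, Suc t, W')"
  using assms by (cases ins) (simp_all add: step_def Let_def split: if_split_asm)

fun sl :: "nat list \<Rightarrow> nat \<Rightarrow> nat \<Rightarrow> instr list \<Rightarrow> mem \<Rightarrow> mem option" where
  "sl inp cap amax [] M = Some M"
| "sl inp cap amax (i # is) M = Option.bind (sem inp cap amax i M) (sl inp cap amax is)"

lemma sl_append: "sl inp cap amax (xs @ ys) M = Option.bind (sl inp cap amax xs M) (sl inp cap amax ys)"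
  by (induction xs arbitrary: M) (auto split: Option.bind_split)

definition code_at :: "instr list \<Rightarrow> nat \<Rightarrow> instr list \<Rightarrow> bool" where
  "code_at Q p xs \<longleftrightarrow> p + length xs \<le> length Q \<and> (\<forall>j<length xs. Q ! (p + j) = xs ! j)"

lemma code_at_app: "code_at Q p (xs @ ys) \<longleftrightarrow> code_at Q p xs \<and> code_at Q (p + length xs) ys"
proof
  assume h: "code_at Q p (xs @ ys)"
  have a: "\<forall>j<length xs. Q ! (p + j) = xs ! j"
  proof (intro allI impI)
    fix j assume "j < length xs"
    with h show "Q ! (p + j) = xs ! j" unfolding code_at_def by (auto simp: nth_append)
  qed
  have b: "\<forall>j<length ys. Q ! (p + length xs + j) = ys ! j"
  proof (intro allI impI)
    fix j assume j: "j < length ys"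
    with h have "Q ! (p + (length xs + j)) = (xs @ ys) ! (length xs + j)" unfolding code_at_def by auto
    thus "Q ! (p + length xs + j) = ys ! j" by (simp add: add.assoc)
  qed
  from h a b show "code_at Q p xs \<and> code_at Q (p + length xs) ys" unfolding code_at_def by auto
next
  assume h: "code_at Q p xs \<and> code_at Q (p + length xs) ys"
  have "Q ! (p + j) = (xs @ ys) ! j" if j: "j < length (xs @ ys)" for j
  proof (cases "j < length xs")
    case True with h show ?thesis unfolding code_at_def by (auto simp: nth_append)
  next
    case False
    then obtain j' where j': "j = length xs + j'" by (metis le_add_diff_inverse not_le)
    with j have "j' < length ys" by simp
    with h have "Q ! (p + length xs + j') = ys ! j'" unfolding code_at_def by auto
    thus ?thesis using j' by (simp add: add.assoc nth_append)
  qed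
  with h show "code_at Q p (xs @ ys)" unfolding code_at_def by auto
qed

lemma code_at_Cons: "code_at Q p (x # ys) \<longleftrightarrow> p < length Q \<and> Q ! p = x \<and> code_at Q (Suc p) ys"
  using code_at_app[of Q p "[x]" ys] by (auto simp: code_at_def)

lemma code_at_here: "code_at (xs @ ys @ zs) (length xs) ys"
  by (auto simp: code_at_def nth_append)

lemma steps_add: "steps P inp cap amax (k1 + k2) c = Option.bind (steps P inp cap amax k1 c) (steps P inp cap amax k2)"
  by (induction k1 arbitrary: c) (auto split: Option.bind_split)

lemma steps_trans: "steps P inp cap amax k1 c = Some c1 \<Longrightarrow> steps P inp cap amax k2 c1 = Some c2 \<Longrightarrow>
   steps P inp cap amax (k1 + k2) c = Some c2"
  by (simp add: steps_add)

lemma steps_one: "step P inp cap amax c = Some c' \<Longrightarrow> steps P inp cap amax 1 c = Some c'"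
  by simp

lemma exec_sl:
  assumes "code_at Q pc xs" "sl inp cap amax xs M = Some M'"
  shows "\<exists>W'. steps Q inp cap amax (length xs) (pc, M, Os, t, W) = Some (pc + length xs, M', Os, t + length xs, W')"
  using assms
proof (induction xs arbitrary: pc M t W)
  case Nil then show ?case by simp
next
  case (Cons i xs)
  from Cons.prems(2) obtain M1 where s1: "sem inp cap amax i M = Some M1" and r: "sl inp cap amax xs M1 = Some M'"
    by (auto split: Option.bind_splits)
  from Cons.prems(1) have c: "pc < length Q" "Q ! pc = i" "code_at Q (Suc pc) xs" by (auto simp: code_at_Cons)
  from step_sem[OF c(1,2) s1] obtain W1 where st: "step Q inp cap amax (pc, M, Os, t, W) = Some (Suc pc, M1, Os, Suc t, W1)" by blast
  from Cons.IH[OF c(3) r] obtain W' where "steps Q inp cap amax (length xs) (Suc pc, M1, Os, Suc t, W1) = Some (Suc pc + length xs, M', Os, Suc t + length xs, W')" by blast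
  with st show ?case by auto
qed

lemma step_Jmp: "pc < length Q \<Longrightarrow> Q ! pc = Jmp l \<Longrightarrow> step Q inp cap amax (pc, M, Os, t, W) = Some (l, M, Os, Suc t, W)"
  by (simp add: step_def)
lemma step_Jz: "pc < length Q \<Longrightarrow> Q ! pc = Jz a l \<Longrightarrow> a < amax \<Longrightarrow>
   step Q inp cap amax (pc, M, Os, t, W) = Some (if M a = 0 then l else Suc pc, M, Os, Suc t, W)"
  by (simp add: step_def)
lemma step_Out: "pc < length Q \<Longrightarrow> Q ! pc = Out a b \<Longrightarrow> a < amax \<Longrightarrow> b < amax \<Longrightarrow>
   step Q inp cap amax (pc, M, Os, t, W) = Some (Suc pc, M, Os @ [(Suc t, M a, M b)], Suc t, W)"
  by (simp add: step_def)
lemma step_halt: "length Q \<le> pc \<Longrightarrow> step Q inp cap amax (pc, M, Os, t, W) = Some (pc, M, Os, t, W)"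
  by (simp add: step_def)

lemma steps_halt: "length Q \<le> pc \<Longrightarrow> steps Q inp cap amax k (pc, M, Os, t, W) = Some (pc, M, Os, t, W)"
  by (induction k) (simp_all add: step_halt)

lemma steps_mono_halt:
  assumes "steps Q inp cap amax k c = Some (pc, M, Os, t, W)" "length Q \<le> pc" "k \<le> k'"
  shows "steps Q inp cap amax k' c = Some (pc, M, Os, t, W)"
proof -
  have "k' = k + (k' - k)" using assms(3) by simp
  then show ?thesis using assms steps_halt by (metis steps_trans)
qed

lemma step_time:
  assumes "step Q inp cap amax (pc, M, Os, t, W) = Some (pc', M', Os', t', W')"
  shows "(length Q \<le> pc \<and> (pc', M', Os', t', W') = (pc, M, Os, t, W)) \<or> (pc < length Q \<and> t' = Suc t)"
  using assms by (auto simp: step_def Let_def split: if_splits instr.splits)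

lemma step_Os:
  assumes "step Q inp cap amax (pc, M, Os, t, W) = Some (pc', M', Os', t', W')"
  shows "Os' = Os \<or> (pc < length Q \<and> (\<exists>a b. Q ! pc = Out a b \<and> Os' = Os @ [(Suc t, M a, M b)]))"
  using assms by (auto simp: step_def Let_def split: if_splits instr.splits)

lemma steps_time:
  assumes "steps Q inp cap amax k (pc, M, Os, t, W) = Some (pc', M', Os', t', W')"
  shows "t \<le> t' \<and> t' - t \<le> k \<and> steps Q inp cap amax (t' - t) (pc, M, Os, t, W) = Some (pc', M', Os', t', W')"
  using assms
proof (induction k arbitrary: pc M Os t W)
  case 0 then show ?case by simp
next
  case (Suc k)
  from Suc.prems obtain c1 where s1: "step Q inp cap amax (pc, M, Os, t, W) = Some c1"
    and r: "steps Q inp cap amax k c1 = Some (pc', M', Os', t', W')" by (auto split: Option.bind_splits)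
  obtain pc1 M1 Os1 t1 W1 where c1: "c1 = (pc1, M1, Os1, t1, W1)" by (cases c1) auto
  from step_time[OF s1[unfolded c1]]
  show ?case
  proof
    assume h: "length Q \<le> pc \<and> (pc1, M1, Os1, t1, W1) = (pc, M, Os, t, W)"
    with Suc.IH[of pc M Os t W] r c1 show ?thesis by auto
  next
    assume h: "pc < length Q \<and> t1 = Suc t"
    from Suc.IH[of pc1 M1 Os1 t1 W1] r c1 have ih: "t1 \<le> t' \<and> t' - t1 \<le> k \<and>
      steps Q inp cap amax (t' - t1) c1 = Some (pc', M', Os', t', W')" by auto
    hence "t' - t = Suc (t' - t1)" using h by auto
    with ih s1 h show ?thesis by auto
  qed
qed

lemma steps_Os_prefix:
  assumes "steps Q inp cap amax k (pc, M, Os, t, W) = Some (pc', M', Os', t', W')"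
  shows "\<exists>zs. Os' = Os @ zs"
  using assms
proof (induction k arbitrary: pc M Os t W)
  case 0 then show ?case by simp
next
  case (Suc k)
  from Suc.prems obtain c1 where s1: "step Q inp cap amax (pc, M, Os, t, W) = Some c1"
    and r: "steps Q inp cap amax k c1 = Some (pc', M', Os', t', W')" by (auto split: Option.bind_splits)
  obtain pc1 M1 Os1 t1 W1 where c1: "c1 = (pc1, M1, Os1, t1, W1)" by (cases c1) auto
  from Suc.IH[of pc1 M1 Os1 t1 W1] r c1 obtain zs where "Os' = Os1 @ zs" by auto
  with step_Os[OF s1[unfolded c1]] show ?case by auto
qed

lemma first_out:
  assumes "steps Q inp cap amax k (pc, M, [], t, W) = Some (pc', M', Os', t', W')" "Os' \<noteq> []"
  shows "\<exists>j pcm Mm tm Wm a b. steps Q inp cap amax j (pc, M, [], t, W) = Some (pcm, Mm, [], tm, Wm) \<and>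
     pcm < length Q \<and> Q ! pcm = Out a b \<and> fst (hd Os') = Suc tm"
  using assms
proof (induction k arbitrary: pc M t W)
  case 0 then show ?case by simp
next
  case (Suc k)
  from Suc.prems obtain c1 where s1: "step Q inp cap amax (pc, M, [], t, W) = Some c1"
    and r: "steps Q inp cap amax k c1 = Some (pc', M', Os', t', W')" by (auto split: Option.bind_splits)
  obtain pc1 M1 Os1 t1 W1 where c1: "c1 = (pc1, M1, Os1, t1, W1)" by (cases c1) auto
  from step_Os[OF s1[unfolded c1]] show ?case
  proof
    assume "Os1 = []"
    with Suc.IH[of pc1 M1 t1 W1] r c1 Suc.prems(2) obtain j pcm Mm tm Wm a b where
      "steps Q inp cap amax j c1 = Some (pcm, Mm, [], tm, Wm) \<and> pcm < length Q \<and> Q ! pcm = Out a b \<and> fst (hd Os') = Suc tm"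
      by auto
    moreover from this s1 have "steps Q inp cap amax (Suc j) (pc, M, [], t, W) = Some (pcm, Mm, [], tm, Wm)" by simp
    ultimately show ?thesis by blast
  next
    assume "pc < length Q \<and> (\<exists>a b. Q ! pc = Out a b \<and> Os1 = [] @ [(Suc t, M a, M b)])"
    then obtain a b where h: "pc < length Q" "Q ! pc = Out a b" "Os1 = [(Suc t, M a, M b)]" by auto
    from steps_Os_prefix[OF r[unfolded c1]] h obtain zs where "Os' = (Suc t, M a, M b) # zs" by auto
    moreover have "steps Q inp cap amax 0 (pc, M, [], t, W) = Some (pc, M, [], t, W)" by simp
    ultimately show ?thesis using h by fastforce
  qed
qed


abbreviation "rZ \<equiv> (0::nat)"
abbreviation "rONE \<equiv> (1::nat)"
abbreviation "rTHREE \<equiv> (2::nat)"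
abbreviation "rRR \<equiv> (3::nat)"
abbreviation "rMM \<equiv> (4::nat)"
abbreviation "rBM \<equiv> (5::nat)"
abbreviation "rLB \<equiv> (6::nat)"
abbreviation "rI0 \<equiv> (7::nat)"
abbreviation "rI1 \<equiv> (8::nat)"
abbreviation "rOP \<equiv> (9::nat)"
abbreviation "rIX \<equiv> (10::nat)"
abbreviation "rANS \<equiv> (11::nat)"
abbreviation "rN \<equiv> (12::nat)"
abbreviation "rX \<equiv> (13::nat)"
abbreviation "rV \<equiv> (14::nat)"
abbreviation "rT \<equiv> (15::nat)"
abbreviation "rX1 \<equiv> (16::nat)"
abbreviation "rX2 \<equiv> (17::nat)"
abbreviation "rX3 \<equiv> (18::nat)"
abbreviation "rLP \<equiv> (19::nat)"
abbreviation "rT2 \<equiv> (20::nat)"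
abbreviation "LOGB \<equiv> (21::nat)"

datatype mode = MB | MU | ME

definition sblk :: nat where "sblk = 16"

fun iswrite :: "instr \<Rightarrow> bool" where
  "iswrite (Jmp l) = False" | "iswrite (Jz a l) = False" | "iswrite (Out a b) = False" | "iswrite _ = True"

fun dst :: "instr \<Rightarrow> nat" where
  "dst (Const a v) = a" | "dst (Add a b d) = a" | "dst (Sub a b d) = a" | "dst (Mul a b d) = a"
| "dst (Div a b d) = a" | "dst (Mod a b d) = a" | "dst (Load a b) = a" | "dst (Store a b) = a"
| "dst (Input a b) = a" | "dst _ = 0"

definition wdest :: "nat \<Rightarrow> instr \<Rightarrow> instr list" where
  "wdest R i = (case i of Store a b \<Rightarrow> [Add rX (a+R) rRR] | _ \<Rightarrow> [Const rX (dst i + R)])"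

fun inblk :: "mode \<Rightarrow> nat \<Rightarrow> nat \<Rightarrow> instr list" where
  "inblk MB R b = [Add rT (b+R) rZ, Sub rX1 rONE rT, Sub rX2 rT rONE, Sub rX2 rONE rX2, Sub rX2 rX2 rX1,
      Sub rX3 rT rMM, Sub rX3 rONE rX3, Sub rX3 rX3 rX1, Sub rX3 rX3 rX2, Mul rX3 rX3 rTHREE,
      Mul rV rX1 rMM, Add rV rV rX3]"
| "inblk MU R b = [Add rT (b+R) rZ, Sub rX1 rONE rT, Sub rX2 rT rONE, Sub rX2 rONE rX2, Sub rX2 rX2 rX1,
      Mul rX1 rX1 rI0, Mul rX2 rX2 rI1, Add rV rX1 rX2]"
| "inblk ME R b = [Const rV 0]"

fun wval :: "mode \<Rightarrow> nat \<Rightarrow> instr \<Rightarrow> instr list" where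
  "wval m R (Const a v) = [Const rV v]"
| "wval m R (Add a b d) = [Add rV (b+R) (d+R)]"
| "wval m R (Sub a b d) = [Sub rV (b+R) (d+R)]"
| "wval m R (Mul a b d) = [Mul rV (b+R) (d+R)]"
| "wval m R (Div a b d) = [Div rV (b+R) (d+R)]"
| "wval m R (Mod a b d) = [Mod rV (b+R) (d+R)]"
| "wval m R (Load a b) = [Add rT (b+R) rRR, Load rV rT]"
| "wval m R (Store a b) = [Add rV (b+R) rZ]"
| "wval m R (Input a b) = inblk m R b"
| "wval m R _ = []"

definition logc :: "mode \<Rightarrow> instr list" where
  "logc m = (if m = ME then [Store rLP rX, Add rLP rLP rONE, Load rT rX, Store rLP rT, Add rLP rLP rONE] else [])"

definition tgt :: "nat \<Rightarrow> nat \<Rightarrow> nat \<Rightarrow> nat" where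
  "tgt off len l = off + sblk * min l len"

definition blk :: "mode \<Rightarrow> nat \<Rightarrow> nat \<Rightarrow> nat \<Rightarrow> nat \<Rightarrow> instr \<Rightarrow> instr list" where
  "blk m R off len fnd i = (case i of
     Jmp l \<Rightarrow> [Jmp (tgt off len l)]
   | Jz a l \<Rightarrow> [Jz (a+R) (tgt off len l)]
   | Out a b \<Rightarrow> (if m = ME then [Jmp fnd] else [])
   | _ \<Rightarrow> wdest R i @ logc m @ wval m R i @ [Store rX rV])"

definition pad :: "instr list \<Rightarrow> instr list" where
  "pad xs = xs @ replicate (sblk - length xs) (Const rT 0)"

definition cseg :: "mode \<Rightarrow> nat \<Rightarrow> nat \<Rightarrow> nat \<Rightarrow> instr list \<Rightarrow> instr list" where
  "cseg m R off fnd P = concat (map (\<lambda>i. pad (blk m R off (length P) fnd i)) P)"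

lemma blk_len: "length (blk m R off len fnd i) \<le> sblk"
  by (cases i; cases m) (simp_all add: blk_def wdest_def logc_def sblk_def)

lemma pad_len[simp]: "length (pad (blk m R off len fnd i)) = sblk"
  using blk_len[of m R off len fnd i] by (simp add: pad_def)

lemma concat_eq_len_nth:
  assumes "\<forall>x\<in>set xs. length (f x) = s" "p < length xs"
  shows "code_at (concat (map f xs)) (s * p) (f (xs ! p))"
  using assms
proof (induction xs arbitrary: p)
  case Nil then show ?case by simp
next
  case (Cons x xs)
  show ?case
  proof (cases p)
    case 0
    then show ?thesis using Cons.prems code_at_here[of "[]" "f x" "concat (map f xs)"] by simp
  next
    case (Suc p')
    with Cons have ih: "code_at (concat (map f xs)) (s * p') (f (xs ! p'))" by auto
    have "code_at (f x @ concat (map f xs)) (length (f x) + s * p') (f (xs ! p'))"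
      using ih code_at_app[of "f x @ concat (map f xs)" 0 "f x"] unfolding code_at_def by (auto simp: nth_append)
    then show ?thesis using Suc Cons.prems by (simp add: algebra_simps)
  qed
qed

lemma code_at_sub:
  assumes "code_at Q off xs" "code_at xs p ys" shows "code_at Q (off + p) ys"
  using assms unfolding code_at_def by (auto simp: add.assoc)

lemma cseg_blk:
  assumes "code_at Q off (cseg m R off fnd P)" "p < length P"
  shows "code_at Q (off + sblk * p) (pad (blk m R off (length P) fnd (P ! p)))"
proof -
  have "code_at (cseg m R off fnd P) (sblk * p) (pad (blk m R off (length P) fnd (P ! p)))"
    unfolding cseg_def using concat_eq_len_nth[of P "\<lambda>i. pad (blk m R off (length P) fnd i)" sblk p] assms(2)
    by simp
  with assms(1) show ?thesis by (rule code_at_sub)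
qed

lemma length_cseg[simp]: "length (cseg m R off fnd P) = sblk * length P"
  by (simp add: cseg_def length_concat sum_list_triv comp_def)


definition memrel :: "nat \<Rightarrow> nat \<Rightarrow> mem \<Rightarrow> mem \<Rightarrow> bool" where
  "memrel R amax Mo Mc \<longleftrightarrow> (\<forall>a<amax. Mc (a + R) = Mo a)"

fun ival :: "mode \<Rightarrow> mem \<Rightarrow> nat \<Rightarrow> nat" where
  "ival MB M v = (if v = 0 then M rMM else if v = 1 then 0 else if v \<le> M rMM then 3 else 0)"
| "ival MU M v = (if v = 0 then M rI0 else if v = 1 then M rI1 else 0)"
| "ival ME M v = 0"

fun ov :: "nat list \<Rightarrow> instr \<Rightarrow> mem \<Rightarrow> nat" where
  "ov inp (Const a v) M = v"
| "ov inp (Add a b d) M = M b + M d"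
| "ov inp (Sub a b d) M = M b - M d"
| "ov inp (Mul a b d) M = M b * M d"
| "ov inp (Div a b d) M = M b div M d"
| "ov inp (Mod a b d) M = M b mod M d"
| "ov inp (Load a b) M = M (M b)"
| "ov inp (Store a b) M = M b"
| "ov inp (Input a b) M = (if M b < length inp then inp ! (M b) else 0)"
| "ov inp _ M = 0"

fun odst :: "instr \<Rightarrow> mem \<Rightarrow> nat" where
  "odst (Store a b) M = M a"
| "odst i M = dst i"

fun opsok :: "instr \<Rightarrow> mem \<Rightarrow> nat \<Rightarrow> bool" where
  "opsok (Const a v) M amax = True"
| "opsok (Add a b d) M amax = (b < amax \<and> d < amax)"
| "opsok (Sub a b d) M amax = (b < amax \<and> d < amax)"
| "opsok (Mul a b d) M amax = (b < amax \<and> d < amax)"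
| "opsok (Div a b d) M amax = (b < amax \<and> d < amax)"
| "opsok (Mod a b d) M amax = (b < amax \<and> d < amax)"
| "opsok (Load a b) M amax = (b < amax \<and> M b < amax)"
| "opsok (Store a b) M amax = (a < amax \<and> b < amax)"
| "opsok (Input a b) M amax = (b < amax)"
| "opsok _ M amax = True"

lemma orig_write:
  assumes "p < length P" "iswrite (P ! p)"
    "step P inp cap amax (p, Mo, Os, t, W) = Some (p', Mo', Os', t', W')"
  shows "p' = Suc p \<and> Mo' = Mo(odst (P ! p) Mo := ov inp (P ! p) Mo) \<and> Os' = Os \<and> t' = Suc t \<and>
    odst (P ! p) Mo < amax \<and> ov inp (P ! p) Mo < cap \<and> opsok (P ! p) Mo amax"
  using assms by (cases "P ! p") (simp_all add: step_def Let_def split: if_split_asm)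

lemma mb_arith:
  fixes m v :: nat
  assumes "1 \<le> m"
  shows "(1 - v) * m + ((((1 - (v - m)) - (1 - v)) - ((1 - (v - 1)) - (1 - v))) * 3) =
     (if v = 0 then m else if v = 1 then 0 else if v \<le> m then 3 else 0)"
proof -
  consider "v = 0" | "v = 1" | "2 \<le> v \<and> v \<le> m" | "v > m \<and> v \<ge> 2" using assms by linarith
  then show ?thesis
  proof cases
    case 3
    then have "1 - v = 0" "1 - (v - 1) = 0" "1 - (v - m) = 1" by auto
    then show ?thesis using 3 by auto
  next
    case 4
    then have "1 - v = 0" "1 - (v - 1) = 0" "1 - (v - m) = 0" by auto
    then show ?thesis using 4 by auto
  qed (use assms in auto)
qed

lemma mu_arith:
  fixes v i0 i1 :: nat
  shows "(1 - v) * i0 + ((1 - (v - 1)) - (1 - v)) * i1 = (if v = 0 then i0 else if v = 1 then i1 else 0)"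
proof -
  consider "v = 0" | "v = 1" | "2 \<le> v" by linarith
  then show ?thesis
  proof cases
    case 3
    then have "1 - v = 0" "1 - (v - 1) = 0" by auto
    then show ?thesis using 3 by auto
  qed auto
qed

lemma sl_wval:
  assumes mr: "memrel R amax Mo M" and regs: "M rZ = 0" "M rONE = 1" "M rTHREE = 3" "M rRR = R"
    and R: "LOGB \<le> R" and cp: "R + amax \<le> cap" "capo \<le> cap" "4 \<le> cap"
    and mb: "m = MB \<Longrightarrow> 1 \<le> M rMM \<and> M rMM < cap"
    and mu: "m = MU \<Longrightarrow> M rI0 < cap \<and> M rI1 < cap"
    and inp: "\<forall>v. (if v < length inp then inp ! v else 0) = ival m M v"
    and w: "iswrite i" and ok: "opsok i Mo amax" and vb: "ov inp i Mo < capo" and mob: "\<forall>a. Mo a < capo"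
  shows "\<exists>M'. sl inp' cap cap (wval m R i) M = Some M' \<and> M' rV = ov inp i Mo \<and>
     (\<forall>q. q \<noteq> rT \<and> q \<noteq> rX1 \<and> q \<noteq> rX2 \<and> q \<noteq> rX3 \<and> q \<noteq> rV \<longrightarrow> M' q = M q)"
proof -
  have mrel: "\<And>a. a < amax \<Longrightarrow> M (a + R) = Mo a" using mr by (simp add: memrel_def)
  have lt: "\<And>a. a < amax \<Longrightarrow> a + R < cap" using cp by linarith
  have ne: "\<And>a q. q < LOGB \<Longrightarrow> a + R \<noteq> q" using R by linarith
  have rc: "\<And>q. q \<le> 20 \<Longrightarrow> q < cap" using R cp by linarith
  show ?thesis
  proof (cases i)
    case (Input a b)
    with ok have b: "b < amax" by simp
    from inp have iv: "ov inp i Mo = ival m M (Mo b)" using Input by simp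
    show ?thesis
    proof (cases m)
      case MB
      with mb have m1: "1 \<le> M rMM" "M rMM < cap" by auto
      have "ival m M (Mo b) < cap" using MB m1 cp by auto
      have "Mo b < cap" using mob cp by (meson less_le_trans)
      then show ?thesis using Input MB b iv m1 regs cp lt[OF b] ne mrel[OF b] mb_arith[OF m1(1), of "Mo b"] rc
        by (auto simp: ) 
    next
      case MU
      have "Mo b < cap" using mob cp by (meson less_le_trans)
      then show ?thesis using MU Input b iv regs cp lt[OF b] ne mrel[OF b] mu_arith[of "Mo b" "M rI0" "M rI1"] mu rc
        by auto
    next
      case ME
      then show ?thesis using Input iv cp rc by auto
    qed
  qed (use w ok vb cp lt ne mrel regs rc in auto)
qed

lemma sl_wdest:
  assumes w: "iswrite i" and mr: "memrel R amax Mo M" and rr: "M rRR = R" and R: "LOGB \<le> R"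
    and cp: "R + amax \<le> cap" and ok: "opsok i Mo amax" and od: "odst i Mo < amax"
  shows "sl inp' cap cap (wdest R i) M = Some (M(rX := odst i Mo + R))"
proof -
  have rc: "\<And>q. q \<le> 20 \<Longrightarrow> q < cap" using R cp by linarith
  have mrel: "\<And>a. a < amax \<Longrightarrow> M (a + R) = Mo a" using mr by (simp add: memrel_def)
  show ?thesis
  proof (cases i)
    case (Store a b)
    with ok od have "a < amax" "Mo a < amax" by auto
    with Store rr rc cp mrel show ?thesis by (auto simp: wdest_def)
  qed (use w od cp rc in \<open>auto simp: wdest_def\<close>)
qed

lemma sl_logc:
  assumes "M rLP = lp" "M rX = x" "M rONE = 1" "LOGB \<le> lp" "lp + 2 < cap" "x < cap" "M x < cap"
    "x \<noteq> lp" "x \<noteq> lp + 1" "LOGB \<le> x"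
  shows "\<exists>M'. sl inp' cap cap (logc ME) M = Some M' \<and> M' lp = x \<and> M' (lp + 1) = M x \<and> M' rLP = lp + 2 \<and>
     (\<forall>q. q \<noteq> lp \<and> q \<noteq> lp + 1 \<and> q \<noteq> rLP \<and> q \<noteq> rT \<longrightarrow> M' q = M q)"
proof -
  have rc: "\<And>q. q \<le> 20 \<Longrightarrow> q < cap" using assms by linarith
  show ?thesis using assms rc by (auto simp: logc_def)
qed

lemma sl_pad0: "rT < cap \<Longrightarrow> 0 < cap \<Longrightarrow> sl inp' cap cap (replicate k (Const rT 0)) M = Some (if k = 0 then M else M(rT := 0))"
  by (induction k arbitrary: M) auto

definition sregs :: "nat \<Rightarrow> bool" where "sregs q \<longleftrightarrow> 13 \<le> q \<and> q \<le> 20"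

lemma wblock:
  assumes ca: "code_at Q pc (pad (blk m R off len fnd i))"
    and mr: "memrel R amax Mo M" and regs: "M rZ = 0" "M rONE = 1" "M rTHREE = 3" "M rRR = R"
    and R: "LOGB \<le> R" and cp: "R + amax \<le> cap" "capo \<le> cap" "4 \<le> cap"
    and mb: "m = MB \<Longrightarrow> 1 \<le> M rMM \<and> M rMM < cap"
    and mu: "m = MU \<Longrightarrow> M rI0 < cap \<and> M rI1 < cap"
    and inp: "\<forall>v. (if v < length inp then inp ! v else 0) = ival m M v"
    and w: "iswrite i" and ok: "opsok i Mo amax" and vb: "ov inp i Mo < capo" and mob: "\<forall>a. Mo a < capo"
    and od: "odst i Mo < amax"
    and me: "m = ME \<Longrightarrow> M rLP = lp \<and> LOGB \<le> lp \<and> lp + 2 < R"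
  shows "\<exists>M' W'. steps Q inp' cap cap sblk (pc, M, Os, t, W) = Some (pc + sblk, M', Os, t + sblk, W') \<and>
    M' (odst i Mo + R) = ov inp i Mo \<and>
    (\<forall>q. \<not> sregs q \<and> q \<noteq> odst i Mo + R \<and> (m = ME \<longrightarrow> q \<noteq> lp \<and> q \<noteq> lp + 1) \<longrightarrow> M' q = M q) \<and>
    (m = ME \<longrightarrow> M' lp = odst i Mo + R \<and> M' (lp + 1) = M (odst i Mo + R) \<and> M' rLP = lp + 2)"
proof -
  let ?x = "odst i Mo + R"
  have rc: "\<And>q. q \<le> 20 \<Longrightarrow> q < cap" using R cp by linarith
  have mrel: "\<And>a. a < amax \<Longrightarrow> M (a + R) = Mo a" using mr by (simp add: memrel_def)
  have xb: "?x < cap" using od cp by linarith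
  have blk: "blk m R off len fnd i = wdest R i @ logc m @ wval m R i @ [Store rX rV]"
    using w by (cases i) (auto simp: blk_def)
  define M1 where "M1 = M(rX := ?x)"
  have s1: "sl inp' cap cap (wdest R i) M = Some M1" unfolding M1_def
    by (rule sl_wdest[OF w mr regs(4) R cp(1) ok od])
  obtain M2 where s2: "sl inp' cap cap (logc m) M1 = Some M2"
    and M2: "\<forall>q. \<not> sregs q \<and> (m = ME \<longrightarrow> q \<noteq> lp \<and> q \<noteq> lp + 1) \<longrightarrow> M2 q = M1 q"
    and M2e: "m = ME \<longrightarrow> M2 lp = ?x \<and> M2 (lp + 1) = M ?x \<and> M2 rLP = lp + 2"
    and M2x: "M2 rX = M1 rX"
  proof (cases "m = ME")
    case True
    with me have lp: "M rLP = lp" "LOGB \<le> lp" "lp + 2 < R" by auto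
    have "M1 rLP = lp" "M1 rX = ?x" "M1 ?x = M ?x" "M1 rONE = 1" using lp R regs unfolding M1_def by auto
    moreover have "M ?x < cap" using mrel[OF od] mob cp by (metis less_le_trans)
    ultimately obtain M' where "sl inp' cap cap (logc ME) M1 = Some M'" "M' lp = ?x" "M' (lp + 1) = M ?x" "M' rLP = lp + 2"
       "\<forall>q. q \<noteq> lp \<and> q \<noteq> lp + 1 \<and> q \<noteq> rLP \<and> q \<noteq> rT \<longrightarrow> M' q = M1 q"
      using sl_logc[of M1 lp ?x cap] lp xb cp R by fastforce
    moreover have "\<forall>q. \<not> sregs q \<and> (m = ME \<longrightarrow> q \<noteq> lp \<and> q \<noteq> lp + 1) \<longrightarrow> M' q = M1 q"
      using calculation(5) True by (auto simp: sregs_def)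
    moreover have "M' rX = M1 rX" using calculation(5) lp by auto
    ultimately show ?thesis using that[of M'] True by blast
  next
    case False
    then show ?thesis using that[of M1] by (simp add: logc_def)
  qed
  have M2r: "memrel R amax Mo M2" "M2 rZ = 0" "M2 rONE = 1" "M2 rTHREE = 3" "M2 rRR = R"
    "m = MB \<Longrightarrow> M2 rMM = M rMM" "m = MU \<Longrightarrow> M2 rI0 = M rI0 \<and> M2 rI1 = M rI1"
  proof -
    have "M2 (a + R) = M (a + R)" if "a < amax" for a
    proof -
      have "\<not> sregs (a + R)" using R by (auto simp: sregs_def)
      moreover have "m = ME \<longrightarrow> a + R \<noteq> lp \<and> a + R \<noteq> lp + 1" using me by auto
      ultimately show ?thesis using M2 R unfolding M1_def by auto
    qed
    then show "memrel R amax Mo M2" using mr by (simp add: memrel_def)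
    have lpq: "m = ME \<longrightarrow> (q::nat) < LOGB \<longrightarrow> q \<noteq> lp \<and> q \<noteq> lp + 1" for q using me by auto
    show "M2 rZ = 0" "M2 rONE = 1" "M2 rTHREE = 3" "M2 rRR = R"
      "m = MB \<Longrightarrow> M2 rMM = M rMM" "m = MU \<Longrightarrow> M2 rI0 = M rI0 \<and> M2 rI1 = M rI1"
      using M2 lpq[of 0] lpq[of 1] lpq[of 2] lpq[of 3] lpq[of 4] lpq[of 7] lpq[of 8] regs
      unfolding M1_def by (auto simp: sregs_def)
  qed
  have inp2: "\<forall>v. (if v < length inp then inp ! v else 0) = ival m M2 v"
    using inp M2r(6,7) by (cases m) auto
  obtain M3 where s3: "sl inp' cap cap (wval m R i) M2 = Some M3" and M3v: "M3 rV = ov inp i Mo"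
    and M3: "\<forall>q. q \<noteq> rT \<and> q \<noteq> rX1 \<and> q \<noteq> rX2 \<and> q \<noteq> rX3 \<and> q \<noteq> rV \<longrightarrow> M3 q = M2 q"
    using sl_wval[OF M2r(1-5) R cp _ _ inp2 w ok vb mob, of inp'] mb mu M2r(6,7) by auto
  have M3x: "M3 rX = ?x"
  proof -
    from M2x show ?thesis using M3 unfolding M1_def by simp
  qed
  define M4 where "M4 = M3(?x := ov inp i Mo)"
  have vc: "ov inp i Mo < cap" using vb cp by linarith
  have s4: "sl inp' cap cap [Store rX rV] M3 = Some M4"
    unfolding M4_def using M3x M3v rc xb vc by simp
  define k where "k = sblk - length (blk m R off len fnd i)"
  have s5: "sl inp' cap cap (replicate k (Const rT 0)) M4 = Some (if k = 0 then M4 else M4(rT := 0))"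
    using rc cp by (intro sl_pad0) auto
  define M' where "M' = (if k = 0 then M4 else M4(rT := 0))"
  have pe: "pad (blk m R off len fnd i) = (wdest R i @ logc m @ wval m R i @ [Store rX rV]) @ replicate k (Const rT 0)"
    unfolding pad_def k_def by (simp only: blk)
  have sall: "sl inp' cap cap (pad (blk m R off len fnd i)) M = Some M'"
    unfolding pe M'_def sl_append using s1 s2 s3 s4 s5 by simp
  from exec_sl[OF ca sall, of Os t W] obtain W' where
    ex: "steps Q inp' cap cap sblk (pc, M, Os, t, W) = Some (pc + sblk, M', Os, t + sblk, W')" by auto
  have x15: "?x \<noteq> rT" using R by auto
  have A: "M' ?x = ov inp i Mo" unfolding M'_def M4_def using x15 by auto
  have B: "\<forall>q. \<not> sregs q \<and> q \<noteq> ?x \<and> (m = ME \<longrightarrow> q \<noteq> lp \<and> q \<noteq> lp + 1) \<longrightarrow> M' q = M q"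
  proof (intro allI impI)
    fix q assume q: "\<not> sregs q \<and> q \<noteq> ?x \<and> (m = ME \<longrightarrow> q \<noteq> lp \<and> q \<noteq> lp + 1)"
    hence "q \<noteq> rT" "q \<noteq> rX1" "q \<noteq> rX2" "q \<noteq> rX3" "q \<noteq> rV" "q \<noteq> rX" by (auto simp: sregs_def)
    hence "M' q = M2 q" unfolding M'_def M4_def using M3 q by auto
    also have "\<dots> = M q" using M2 q unfolding M1_def by (auto simp: sregs_def)
    finally show "M' q = M q" .
  qed
  have C: "m = ME \<longrightarrow> M' lp = ?x \<and> M' (lp + 1) = M ?x \<and> M' rLP = lp + 2"
  proof
    assume mE: "m = ME"
    with me have lp: "LOGB \<le> lp" "lp + 2 < R" by auto
    have "lp \<noteq> rT \<and> lp \<noteq> rX1 \<and> lp \<noteq> rX2 \<and> lp \<noteq> rX3 \<and> lp \<noteq> rV \<and> lp \<noteq> ?x \<and> lp + 1 \<noteq> ?x" using lp by auto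
    moreover have "lp + 1 \<noteq> rT \<and> lp + 1 \<noteq> rX1 \<and> lp + 1 \<noteq> rX2 \<and> lp + 1 \<noteq> rX3 \<and> lp + 1 \<noteq> rV" using lp by auto
    ultimately show "M' lp = ?x \<and> M' (lp + 1) = M ?x \<and> M' rLP = lp + 2"
      unfolding M'_def M4_def using M3 M2e mE R by auto
  qed
  from ex A B C show ?thesis by blast
qed


definition scratch :: "nat \<Rightarrow> nat \<Rightarrow> bool" where "scratch R q \<longleftrightarrow> 13 \<le> q \<and> q < R"
definition dsreg :: "nat \<Rightarrow> nat \<Rightarrow> nat \<Rightarrow> bool" where "dsreg R amax q \<longleftrightarrow> R \<le> q \<and> q < R + amax"

definition undo :: "(nat \<times> nat) list \<Rightarrow> mem \<Rightarrow> mem" where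
  "undo lg M = foldr (\<lambda>e M. M(fst e := snd e)) lg M"

lemma undo_snoc: "undo (lg @ [e]) M = undo lg (M(fst e := snd e))"
  by (simp add: undo_def)
lemma undo_Nil[simp]: "undo [] M = M" by (simp add: undo_def)

lemma undo_agree:
  assumes "\<forall>q. \<not> scratch R q \<longrightarrow> M1 q = M2 q" "\<forall>e\<in>set lg. \<not> scratch R (fst e)"
  shows "\<forall>q. \<not> scratch R q \<longrightarrow> undo lg M1 q = undo lg M2 q"
  using assms by (induction lg) (auto simp: undo_def)

definition loginv :: "nat \<Rightarrow> nat \<Rightarrow> mem \<Rightarrow> (nat \<times> nat) list \<Rightarrow> mem \<Rightarrow> bool" where
  "loginv R amax Mst lg M \<longleftrightarrow> M rLP = LOGB + 2 * length lg \<and>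
     (\<forall>j<length lg. M (LOGB + 2 * j) = fst (lg ! j) \<and> M (LOGB + 2 * j + 1) = snd (lg ! j)) \<and>
     (\<forall>e\<in>set lg. R \<le> fst e \<and> fst e < R + amax) \<and>
     (\<forall>q. \<not> scratch R q \<longrightarrow> undo lg M q = Mst q)"

definition ctx :: "mode \<Rightarrow> nat \<Rightarrow> nat \<Rightarrow> nat \<Rightarrow> nat \<Rightarrow> nat \<Rightarrow> mem \<Rightarrow> nat list \<Rightarrow> bool" where
  "ctx m R cap capo amax Bd Mst inp \<longleftrightarrow> Mst rZ = 0 \<and> Mst rONE = 1 \<and> Mst rTHREE = 3 \<and> Mst rRR = R \<and>
     LOGB + 2 * Bd < R \<and> R + amax \<le> cap \<and> capo \<le> cap \<and> 4 \<le> cap \<and>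
     (m = MB \<longrightarrow> 1 \<le> Mst rMM \<and> Mst rMM < cap) \<and> (m = MU \<longrightarrow> Mst rI0 < cap \<and> Mst rI1 < cap) \<and>
     (\<forall>v. (if v < length inp then inp ! v else 0) = ival m Mst v)"

definition simrel :: "mode \<Rightarrow> nat \<Rightarrow> nat \<Rightarrow> nat \<Rightarrow> nat \<Rightarrow> mem \<Rightarrow> (nat \<times> nat) list \<Rightarrow> nat \<Rightarrow> mem \<Rightarrow> nat \<Rightarrow> mem \<Rightarrow> nat \<Rightarrow> bool" where
  "simrel m R amax off len Mst lg p Mo t Mc pc \<longleftrightarrow> pc = off + sblk * min p len \<and> memrel R amax Mo Mc \<and>
     (\<forall>q. \<not> scratch R q \<and> \<not> dsreg R amax q \<longrightarrow> Mc q = Mst q) \<and>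
     (m = ME \<longrightarrow> loginv R amax Mst lg Mc \<and> length lg \<le> t)"

lemma simrel_regs:
  assumes "simrel m R amax off len Mst lg p Mo t Mc pc" "q < 13" "13 \<le> R"
  shows "Mc q = Mst q"
  using assms by (auto simp: simrel_def scratch_def dsreg_def)

lemma simrel_rT:
  assumes "simrel m R amax off len Mst lg p Mo t Mc pc" "t \<le> t'" "LOGB \<le> R"
  shows "simrel m R amax off len Mst lg p' Mo t' (Mc(rT := v)) (off + sblk * min p' len)"
proof -
  have s15: "scratch R rT" using assms(3) by (simp add: scratch_def)
  have ds: "\<not> dsreg R amax rT" using assms(3) by (simp add: dsreg_def)
  have mr: "memrel R amax Mo (Mc(rT := v))" using assms(1,3) by (auto simp: simrel_def memrel_def)
  have pr: "\<forall>q. \<not> scratch R q \<and> \<not> dsreg R amax q \<longrightarrow> (Mc(rT := v)) q = Mst q"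
    using assms(1) s15 by (auto simp: simrel_def)
  have lgi: "m = ME \<longrightarrow> loginv R amax Mst lg (Mc(rT := v)) \<and> length lg \<le> t'"
  proof
    assume mE: "m = ME"
    with assms(1) have li: "loginv R amax Mst lg Mc" "length lg \<le> t" by (auto simp: simrel_def)
    have "\<forall>q. \<not> scratch R q \<longrightarrow> undo lg (Mc(rT := v)) q = undo lg Mc q"
      using li(1) s15 by (intro undo_agree) (auto simp: loginv_def scratch_def)
    with li assms(2,3) show "loginv R amax Mst lg (Mc(rT := v)) \<and> length lg \<le> t'"
      unfolding loginv_def by auto
  qed
  from mr pr lgi show ?thesis by (simp add: simrel_def)
qed

lemma sim_write:
  assumes cx: "ctx m R cap capo amax Bd Mst inp"
    and seg: "code_at Q off (cseg m R off fnd P)" and pl: "p < length P"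
    and w: "iswrite (P ! p)"
    and st: "step P inp capo amax (p, Mo, Os, t, W) = Some (p', Mo', Os', t', W')"
    and rel: "simrel m R amax off (length P) Mst lg p Mo t Mc pc" and mob: "\<forall>a. Mo a < capo"
    and me: "m = ME \<Longrightarrow> t < Bd"
  shows "\<exists>k lg' Mc' Wc'. k \<le> sblk \<and> steps Q inp' cap cap k (pc, Mc, Osc, tc, Wc) =
      Some (off + sblk * min p' (length P), Mc', Osc, tc + k, Wc') \<and>
      simrel m R amax off (length P) Mst lg' p' Mo' t' Mc' (off + sblk * min p' (length P))"
proof -
  let ?i = "P ! p" let ?len = "length P"
  from orig_write[OF pl w st] have o: "p' = Suc p" "Mo' = Mo(odst ?i Mo := ov inp ?i Mo)" "Os' = Os" "t' = Suc t"
    "odst ?i Mo < amax" "ov inp ?i Mo < capo" "opsok ?i Mo amax" by auto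
  from cx have c: "Mst rZ = 0" "Mst rONE = 1" "Mst rTHREE = 3" "Mst rRR = R" "LOGB + 2 * Bd < R"
    "R + amax \<le> cap" "capo \<le> cap" "4 \<le> cap" "m = MB \<longrightarrow> 1 \<le> Mst rMM \<and> Mst rMM < cap"
    "m = MU \<longrightarrow> Mst rI0 < cap \<and> Mst rI1 < cap" "\<forall>v. (if v < length inp then inp ! v else 0) = ival m Mst v"
    unfolding ctx_def by auto
  have R13: "13 \<le> R" "LOGB \<le> R" using c(5) by auto
  have rg: "\<And>q. q < 13 \<Longrightarrow> Mc q = Mst q" using simrel_regs[OF rel _ R13(1)] by auto
  have pc: "pc = off + sblk * p" using rel pl by (simp add: simrel_def)
  have ca: "code_at Q pc (pad (blk m R off ?len fnd ?i))" using cseg_blk[OF seg pl] pc by simp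
  have mr: "memrel R amax Mo Mc" using rel by (simp add: simrel_def)
  have inp: "\<forall>v. (if v < length inp then inp ! v else 0) = ival m Mc v"
    using c(11) rg[of rMM] rg[of rI0] rg[of rI1] by (cases m) auto
  let ?lp = "Mc rLP"
  have meq: "m = ME \<Longrightarrow> loginv R amax Mst lg Mc \<and> length lg \<le> t" using rel by (simp add: simrel_def)
  have lpv: "m = ME \<Longrightarrow> ?lp = LOGB + 2 * length lg" using meq by (simp add: loginv_def)
  have me2: "m = ME \<Longrightarrow> Mc rLP = ?lp \<and> LOGB \<le> ?lp \<and> ?lp + 2 < R"
  proof -
    assume mE: "m = ME"
    with meq me have "length lg < Bd" by fastforce
    with lpv[OF mE] c(5) show ?thesis by auto
  qed
  have r4: "Mc rZ = 0" "Mc rONE = 1" "Mc rTHREE = 3" "Mc rRR = R" using rg c by auto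
  have mb: "m = MB \<Longrightarrow> 1 \<le> Mc rMM \<and> Mc rMM < cap" using rg[of rMM] c(9) by auto
  have mu: "m = MU \<Longrightarrow> Mc rI0 < cap \<and> Mc rI1 < cap" using rg[of rI0] rg[of rI1] c(10) by auto
  from wblock[OF ca mr r4 R13(2) c(6) c(7) c(8) mb mu inp w o(7) o(6) mob o(5) me2, where Os=Osc and t=tc and W=Wc and inp'=inp']
  obtain Mc' Wc' where ex: "steps Q inp' cap cap sblk (pc, Mc, Osc, tc, Wc) = Some (pc + sblk, Mc', Osc, tc + sblk, Wc')"
    and A: "Mc' (odst ?i Mo + R) = ov inp ?i Mo"
    and B: "\<forall>q. \<not> sregs q \<and> q \<noteq> odst ?i Mo + R \<and> (m = ME \<longrightarrow> q \<noteq> ?lp \<and> q \<noteq> ?lp + 1) \<longrightarrow> Mc' q = Mc q"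
    and C: "m = ME \<longrightarrow> Mc' ?lp = odst ?i Mo + R \<and> Mc' (?lp + 1) = Mc (odst ?i Mo + R) \<and> Mc' rLP = ?lp + 2"
    by auto
  let ?x = "odst ?i Mo + R"
  have xds: "R \<le> ?x" "?x < R + amax" using o(5) by auto
  have lpb: "m = ME \<Longrightarrow> LOGB \<le> ?lp \<and> ?lp + 2 < R" using me2 by auto
  have mr': "memrel R amax Mo' Mc'"
    unfolding memrel_def
  proof (intro allI impI)
    fix a assume a: "a < amax"
    show "Mc' (a + R) = Mo' a"
    proof (cases "a = odst ?i Mo")
      case True then show ?thesis using A o(2) by simp
    next
      case False
      have "\<not> sregs (a + R)" using R13 by (auto simp: sregs_def)
      moreover have "m = ME \<longrightarrow> a + R \<noteq> ?lp \<and> a + R \<noteq> ?lp + 1" using lpb by fastforce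
      ultimately have "Mc' (a + R) = Mc (a + R)" using B False by auto
      also have "\<dots> = Mo a" using mr a by (simp add: memrel_def)
      finally show ?thesis using o(2) False by simp
    qed
  qed
  have nsx: "\<And>q. \<not> scratch R q \<Longrightarrow> \<not> sregs q \<and> (m = ME \<longrightarrow> q \<noteq> ?lp \<and> q \<noteq> ?lp + 1)"
    using lpb R13 by (fastforce simp: scratch_def sregs_def)
  have pr': "\<forall>q. \<not> scratch R q \<and> \<not> dsreg R amax q \<longrightarrow> Mc' q = Mst q"
  proof (intro allI impI)
    fix q assume q: "\<not> scratch R q \<and> \<not> dsreg R amax q"
    hence "q \<noteq> ?x" using xds by (auto simp: dsreg_def)
    with nsx q B have "Mc' q = Mc q" by auto
    also have "\<dots> = Mst q" using rel q by (simp add: simrel_def)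
    finally show "Mc' q = Mst q" .
  qed
  have lg': "m = ME \<longrightarrow> loginv R amax Mst (lg @ [(?x, Mc ?x)]) Mc' \<and> length (lg @ [(?x, Mc ?x)]) \<le> t'"
  proof
    assume mE: "m = ME"
    with meq have li: "loginv R amax Mst lg Mc" "length lg \<le> t" by auto
    from lpv[OF mE] have lpe: "?lp = LOGB + 2 * length lg" .
    have l1: "Mc' rLP = LOGB + 2 * length (lg @ [(?x, Mc ?x)])" using C mE lpe by simp
    have l2: "\<forall>j<length (lg @ [(?x, Mc ?x)]). Mc' (LOGB + 2 * j) = fst ((lg @ [(?x, Mc ?x)]) ! j) \<and>
        Mc' (LOGB + 2 * j + 1) = snd ((lg @ [(?x, Mc ?x)]) ! j)"
    proof (intro allI impI)
      fix j assume j: "j < length (lg @ [(?x, Mc ?x)])"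
      show "Mc' (LOGB + 2 * j) = fst ((lg @ [(?x, Mc ?x)]) ! j) \<and> Mc' (LOGB + 2 * j + 1) = snd ((lg @ [(?x, Mc ?x)]) ! j)"
      proof (cases "j < length lg")
        case True
        have q1: "LOGB + 2 * j \<noteq> ?lp" "LOGB + 2 * j \<noteq> ?lp + 1" "LOGB + 2 * j + 1 \<noteq> ?lp" "LOGB + 2 * j + 1 \<noteq> ?lp + 1"
          using True lpe by auto
        have q2: "LOGB + 2 * j \<noteq> ?x" "LOGB + 2 * j + 1 \<noteq> ?x" "\<not> sregs (LOGB + 2 * j)" "\<not> sregs (LOGB + 2 * j + 1)"
          using True lpe lpb[OF mE] xds by (auto simp: sregs_def)
        have "Mc' (LOGB + 2 * j) = Mc (LOGB + 2 * j)" "Mc' (LOGB + 2 * j + 1) = Mc (LOGB + 2 * j + 1)"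
          using B q1 q2 by auto
        then show ?thesis using li(1) True by (auto simp: loginv_def nth_append)
      next
        case False
        hence "j = length lg" using j by simp
        then show ?thesis using C mE lpe by (simp add: nth_append)
      qed
    qed
    have l3: "\<forall>e\<in>set (lg @ [(?x, Mc ?x)]). R \<le> fst e \<and> fst e < R + amax" using li(1) xds by (auto simp: loginv_def)
    have l4: "\<forall>q. \<not> scratch R q \<longrightarrow> undo (lg @ [(?x, Mc ?x)]) Mc' q = Mst q"
    proof -
      have ag: "\<forall>q. \<not> scratch R q \<longrightarrow> (Mc'(?x := Mc ?x)) q = Mc q"
        using B nsx by auto
      have "\<forall>e\<in>set lg. \<not> scratch R (fst e)" using li(1) by (auto simp: loginv_def scratch_def)
      from undo_agree[OF ag this] have ua: "\<forall>q. \<not> scratch R q \<longrightarrow> undo lg (Mc'(?x := Mc ?x)) q = undo lg Mc q" .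
      have "undo (lg @ [(?x, Mc ?x)]) Mc' = undo lg (Mc'(?x := Mc ?x))" by (simp add: undo_snoc)
      with ua li(1) show ?thesis unfolding loginv_def by metis
    qed
    from l1 l2 l3 l4 li(2) o(4) show "loginv R amax Mst (lg @ [(?x, Mc ?x)]) Mc' \<and> length (lg @ [(?x, Mc ?x)]) \<le> t'"
      unfolding loginv_def by simp
  qed
  have pcs: "off + sblk * min p' ?len = pc + sblk" using o(1) pl pc by (simp add: algebra_simps)
  have "simrel m R amax off ?len Mst (if m = ME then lg @ [(?x, Mc ?x)] else lg) p' Mo' t' Mc' (off + sblk * min p' ?len)"
    unfolding simrel_def using mr' pr' lg' by auto
  then show ?thesis using pcs ex by (metis order_refl)
qed

lemma simrel_pt:
  assumes "simrel m R amax off len Mst lg p Mo t Mc pc" "t \<le> t'"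
  shows "simrel m R amax off len Mst lg p' Mo t' Mc (off + sblk * min p' len)"
  using assms by (auto simp: simrel_def)

lemma orig_Jmp: "p < length P \<Longrightarrow> P ! p = Jmp l \<Longrightarrow> step P inp cap amax (p, Mo, Os, t, W) = Some (p', Mo', Os', t', W') \<Longrightarrow>
   p' = l \<and> Mo' = Mo \<and> t' = Suc t"
  by (simp add: step_def)
lemma orig_Jz: "p < length P \<Longrightarrow> P ! p = Jz a l \<Longrightarrow> step P inp cap amax (p, Mo, Os, t, W) = Some (p', Mo', Os', t', W') \<Longrightarrow>
   a < amax \<and> p' = (if Mo a = 0 then l else Suc p) \<and> Mo' = Mo \<and> t' = Suc t"
  by (simp add: step_def split: if_split_asm)
lemma orig_Out: "p < length P \<Longrightarrow> P ! p = Out a b \<Longrightarrow> step P inp cap amax (p, Mo, Os, t, W) = Some (p', Mo', Os', t', W') \<Longrightarrow>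
   p' = Suc p \<and> Mo' = Mo \<and> t' = Suc t"
  by (simp add: step_def split: if_split_asm)

lemma sim_step:
  assumes cx: "ctx m R cap capo amax Bd Mst inp"
    and seg: "code_at Q off (cseg m R off fnd P)" and pl: "p < length P"
    and st: "step P inp capo amax (p, Mo, Os, t, W) = Some (p', Mo', Os', t', W')"
    and rel: "simrel m R amax off (length P) Mst lg p Mo t Mc pc" and mob: "\<forall>a. Mo a < capo"
    and me: "m = ME \<Longrightarrow> t < Bd \<and> (\<forall>a b. P ! p \<noteq> Out a b)"
  shows "\<exists>k lg' Mc' Wc'. k \<le> sblk \<and> steps Q inp' cap cap k (pc, Mc, Osc, tc, Wc) =
      Some (off + sblk * min p' (length P), Mc', Osc, tc + k, Wc') \<and>
      simrel m R amax off (length P) Mst lg' p' Mo' t' Mc' (off + sblk * min p' (length P))"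
proof -
  let ?i = "P ! p" let ?len = "length P"
  have R: "LOGB \<le> R" "R + amax \<le> cap" using cx by (auto simp: ctx_def)
  have rc: "\<And>q. q \<le> 20 \<Longrightarrow> q < cap" using R by linarith
  have pc: "pc = off + sblk * p" using rel pl by (simp add: simrel_def)
  have ca: "code_at Q pc (pad (blk m R off ?len fnd ?i))" using cseg_blk[OF seg pl] pc by simp
  have mr: "memrel R amax Mo Mc" using rel by (simp add: simrel_def)
  have sb: "sblk = Suc (sblk - 1)" by (simp add: sblk_def)
  have padrun: "\<exists>Wc'. steps Q inp' cap cap (sblk - length xs) (pc + length xs, Mc, Osc, tc', Wc) =
      Some (pc + sblk, Mc(rT := 0), Osc, tc' + (sblk - length xs), Wc')"
    if "code_at Q pc (xs @ replicate (sblk - length xs) (Const rT 0))" "length xs < sblk" for xs tc'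
  proof -
    from that(1) have c2: "code_at Q (pc + length xs) (replicate (sblk - length xs) (Const rT 0))" by (simp add: code_at_app)
    have "sl inp' cap cap (replicate (sblk - length xs) (Const rT 0)) Mc = Some (Mc(rT := 0))"
      using sl_pad0[of cap inp' "sblk - length xs" Mc] rc that(2) by auto
    from exec_sl[OF c2 this, of Osc tc' Wc] show ?thesis using that(2) by auto
  qed
  show ?thesis
  proof (cases "iswrite ?i")
    case True
    have "m = ME \<Longrightarrow> t < Bd" using me by auto
    from sim_write[OF cx seg pl True st rel mob this] show ?thesis .
  next
    case False
    then consider l where "?i = Jmp l" | a l where "?i = Jz a l" | a b where "?i = Out a b"
      by (cases ?i) auto
    then show ?thesis
    proof cases
      case (1 l)
      from orig_Jmp[OF pl 1 st] have o: "p' = l" "Mo' = Mo" "t' = Suc t" by auto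
      have "pc < length Q" "Q ! pc = Jmp (tgt off ?len l)" using ca 1 by (auto simp: code_at_Cons pad_def blk_def)
      from step_Jmp[OF this] have "steps Q inp' cap cap 1 (pc, Mc, Osc, tc, Wc) = Some (tgt off ?len l, Mc, Osc, tc + 1, Wc)" by simp
      moreover have "simrel m R amax off ?len Mst lg p' Mo' t' Mc (off + sblk * min p' ?len)"
        using simrel_pt[OF rel, of t' p'] o by auto
      ultimately show ?thesis using o by (intro exI[of _ 1]) (auto simp: tgt_def sblk_def)
    next
      case (2 a l)
      from orig_Jz[OF pl 2 st] have o: "a < amax" "p' = (if Mo a = 0 then l else Suc p)" "Mo' = Mo" "t' = Suc t" by auto
      have cz: "code_at Q pc ([Jz (a+R) (tgt off ?len l)] @ replicate (sblk - length [Jz (a+R) (tgt off ?len l)]) (Const rT 0))"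
        using ca 2 by (simp add: pad_def blk_def)
      have jz: "pc < length Q" "Q ! pc = Jz (a+R) (tgt off ?len l)" using cz by (auto simp: code_at_Cons)
      have "a + R < cap" using R o(1) by linarith
      note step_Jz[OF jz this, where inp=inp' and cap=cap and M=Mc and Os=Osc and t=tc and W=Wc]
      then have s1: "step Q inp' cap cap (pc, Mc, Osc, tc, Wc) = Some (if Mo a = 0 then tgt off ?len l else Suc pc, Mc, Osc, Suc tc, Wc)"
        using mr o(1) by (auto simp: memrel_def)
      show ?thesis
      proof (cases "Mo a = 0")
        case True
        have "steps Q inp' cap cap 1 (pc, Mc, Osc, tc, Wc) = Some (tgt off ?len l, Mc, Osc, tc + 1, Wc)" using s1 True by simp
        moreover have "simrel m R amax off ?len Mst lg p' Mo' t' Mc (off + sblk * min p' ?len)"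
          using simrel_pt[OF rel, of t' p'] o by auto
        ultimately show ?thesis using o True by (intro exI[of _ 1]) (auto simp: tgt_def sblk_def)
      next
        case False
        from padrun[OF cz, of "Suc tc"] obtain Wc' where
          "steps Q inp' cap cap (sblk - 1) (Suc pc, Mc, Osc, Suc tc, Wc) = Some (pc + sblk, Mc(rT := 0), Osc, Suc tc + (sblk - 1), Wc')"
          by (auto simp: sblk_def)
        with s1 False have "steps Q inp' cap cap (1 + (sblk - 1)) (pc, Mc, Osc, tc, Wc) = Some (pc + sblk, Mc(rT := 0), Osc, Suc tc + (sblk - 1), Wc')"
          by (intro steps_trans[of _ _ _ _ 1]) auto
        moreover have "1 + (sblk - 1) = sblk" "Suc tc + (sblk - 1) = tc + sblk" by (auto simp: sblk_def)
        moreover have "pc + sblk = off + sblk * min p' ?len" using o(2) False pl pc by (simp add: algebra_simps)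
        moreover have "simrel m R amax off ?len Mst lg p' Mo' t' (Mc(rT := 0)) (off + sblk * min p' ?len)"
          using simrel_rT[OF rel, of t' p'] o R by auto
        ultimately show ?thesis by (metis order_refl)
      qed
    next
      case (3 a b)
      with me have nME: "m \<noteq> ME" by auto
      from orig_Out[OF pl 3 st] have o: "p' = Suc p" "Mo' = Mo" "t' = Suc t" by auto
      have cz: "code_at Q pc ([] @ replicate (sblk - length []) (Const rT 0))"
        using ca 3 nME by (simp add: pad_def blk_def)
      from padrun[OF cz, of tc] obtain Wc' where
        "steps Q inp' cap cap sblk (pc, Mc, Osc, tc, Wc) = Some (pc + sblk, Mc(rT := 0), Osc, tc + sblk, Wc')"
        by (auto simp: sblk_def)
      moreover have "pc + sblk = off + sblk * min p' ?len" using o pl pc by (simp add: algebra_simps)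
      moreover have "simrel m R amax off ?len Mst lg p' Mo' t' (Mc(rT := 0)) (off + sblk * min p' ?len)"
        using simrel_rT[OF rel, of t' p'] o R by auto
      ultimately show ?thesis by (metis order_refl)
    qed
  qed
qed

lemma step_mob:
  assumes "step P inp capo amax (p, Mo, Os, t, W) = Some (p', Mo', Os', t', W')" "\<forall>a. Mo a < capo"
  shows "\<forall>a. Mo' a < capo"
proof (cases "p < length P")
  case True
  show ?thesis
  proof (cases "iswrite (P ! p)")
    case True
    from orig_write[OF \<open>p < length P\<close> True assms(1)] assms(2) show ?thesis by auto
  next
    case False
    then consider l where "P ! p = Jmp l" | a l where "P ! p = Jz a l" | a b where "P ! p = Out a b"
      by (cases "P ! p") auto
    then show ?thesis
    proof cases
      case 1 from orig_Jmp[OF True 1 assms(1)] assms(2) show ?thesis by simp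
    next
      case 2 from orig_Jz[OF True 2 assms(1)] assms(2) show ?thesis by simp
    next
      case 3 from orig_Out[OF True 3 assms(1)] assms(2) show ?thesis by simp
    qed
  qed
next
  case False
  then show ?thesis using assms by (simp add: step_halt)
qed

lemma sim_steps:
  assumes cx: "ctx m R cap capo amax Bd Mst inp"
    and seg: "code_at Q off (cseg m R off fnd P)"
    and st: "steps P inp capo amax k (p, Mo, Os, t, W) = Some (p', Mo', Os', t', W')"
    and rel: "simrel m R amax off (length P) Mst lg p Mo t Mc pc" and mob: "\<forall>a. Mo a < capo"
    and me: "m = ME \<Longrightarrow> t' \<le> Bd \<and> Os' = []"
  shows "\<exists>k' lg' Mc' Wc'. k' \<le> sblk * k \<and> steps Q inp' cap cap k' (pc, Mc, Osc, tc, Wc) =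
      Some (off + sblk * min p' (length P), Mc', Osc, tc + k', Wc') \<and>
      simrel m R amax off (length P) Mst lg' p' Mo' t' Mc' (off + sblk * min p' (length P)) \<and> (\<forall>a. Mo' a < capo)"
  using st rel mob me
proof (induction k arbitrary: p Mo Os t W lg Mc pc tc Wc)
  case 0
  then show ?case by (intro exI[of _ 0]) (auto simp: simrel_def)
next
  case (Suc k)
  from Suc.prems(1) obtain c1 where s1: "step P inp capo amax (p, Mo, Os, t, W) = Some c1"
    and r: "steps P inp capo amax k c1 = Some (p', Mo', Os', t', W')" by (auto split: Option.bind_splits)
  obtain p1 Mo1 Os1 t1 W1 where c1: "c1 = (p1, Mo1, Os1, t1, W1)" by (cases c1) auto
  show ?case
  proof (cases "p < length P")
    case False
    with s1 c1 have "c1 = (p, Mo, Os, t, W)" by (simp add: step_halt)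
    with r have r': "steps P inp capo amax k (p, Mo, Os, t, W) = Some (p', Mo', Os', t', W')" by simp
    from Suc.IH[OF r' Suc.prems(2-4), of tc Wc] obtain k' lg' Mc' Wc' where
      "k' \<le> sblk * k" "steps Q inp' cap cap k' (pc, Mc, Osc, tc, Wc) = Some (off + sblk * min p' (length P), Mc', Osc, tc + k', Wc')"
      "simrel m R amax off (length P) Mst lg' p' Mo' t' Mc' (off + sblk * min p' (length P)) \<and> (\<forall>a. Mo' a < capo)"
      by blast
    moreover have "sblk * k \<le> sblk * Suc k" by simp
    ultimately show ?thesis by (meson le_trans)
  next
    case True
    have t1: "t1 = Suc t" using step_time[OF s1[unfolded c1]] True by auto
    have tt: "t1 \<le> t'" using steps_time[OF r[unfolded c1]] by simp
    have me1: "m = ME \<Longrightarrow> t < Bd \<and> (\<forall>a b. P ! p \<noteq> Out a b)"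
    proof -
      assume mE: "m = ME"
      with Suc.prems(4) have "t' \<le> Bd" "Os' = []" by auto
      moreover have "\<forall>a b. P ! p \<noteq> Out a b"
      proof (intro allI notI)
        fix a b assume "P ! p = Out a b"
        with s1 c1 True have "Os1 = Os @ [(Suc t, Mo a, Mo b)]"
          by (simp add: step_def split: if_split_asm) (metis)
        hence "Os1 \<noteq> []" by simp
        with steps_Os_prefix[OF r[unfolded c1]] \<open>Os' = []\<close> show False by auto
      qed
      ultimately show ?thesis using t1 tt by auto
    qed
    from sim_step[OF cx seg True s1[unfolded c1] Suc.prems(2,3) me1, of inp' Osc tc Wc]
    obtain k1 lg1 Mc1 Wc1 where k1: "k1 \<le> sblk"
      and e1: "steps Q inp' cap cap k1 (pc, Mc, Osc, tc, Wc) = Some (off + sblk * min p1 (length P), Mc1, Osc, tc + k1, Wc1)"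
      and r1: "simrel m R amax off (length P) Mst lg1 p1 Mo1 t1 Mc1 (off + sblk * min p1 (length P))" by blast
    have mob1: "\<forall>a. Mo1 a < capo" using step_mob[OF s1[unfolded c1] Suc.prems(3)] .
    from Suc.IH[OF r[unfolded c1] r1 mob1 Suc.prems(4), of "tc + k1" Wc1]
    obtain k2 lg2 Mc2 Wc2 where k2: "k2 \<le> sblk * k"
      and e2: "steps Q inp' cap cap k2 (off + sblk * min p1 (length P), Mc1, Osc, tc + k1, Wc1) = Some (off + sblk * min p' (length P), Mc2, Osc, tc + k1 + k2, Wc2)"
      and r2: "simrel m R amax off (length P) Mst lg2 p' Mo' t' Mc2 (off + sblk * min p' (length P)) \<and> (\<forall>a. Mo' a < capo)"
      by blast
    from steps_trans[OF e1 e2] have "steps Q inp' cap cap (k1 + k2) (pc, Mc, Osc, tc, Wc) = Some (off + sblk * min p' (length P), Mc2, Osc, tc + (k1 + k2), Wc2)"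
      by (simp add: add.assoc)
    moreover have "k1 + k2 \<le> sblk * Suc k" using k1 k2 by simp
    ultimately show ?thesis using r2 by blast
  qed
qed


lemma simrel_init: "memrel R amax Mo Mst \<Longrightarrow> (m = ME \<Longrightarrow> Mst rLP = LOGB) \<Longrightarrow> simrel m R amax off len Mst [] 0 Mo 0 Mst off"
  by (simp add: simrel_def loginv_def)

lemma run_sim:
  assumes cx: "ctx m R cap capo amax Bd Mst inp" and seg: "code_at Q off (cseg m R off fnd P)"
    and st: "steps P inp capo amax k (0, Mo, [], 0, W0) = Some (p', Mo', Os', t', W')"
    and hl: "length P \<le> p'" and mr: "memrel R amax Mo Mst" and mob: "\<forall>a. Mo a < capo" and nme: "m \<noteq> ME"
  shows "\<exists>k' Mc' Wc'. k' \<le> sblk * k \<and>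
    steps Q inp' cap cap k' (off, Mst, Osc, tc, Wc) = Some (off + sblk * length P, Mc', Osc, tc + k', Wc') \<and>
    memrel R amax Mo' Mc' \<and> (\<forall>q. \<not> scratch R q \<and> \<not> dsreg R amax q \<longrightarrow> Mc' q = Mst q) \<and> (\<forall>a. Mo' a < capo)"
proof -
  from sim_steps[OF cx seg st simrel_init[OF mr] mob, of inp' Osc tc Wc] nme
  obtain k' lg' Mc' Wc' where "k' \<le> sblk * k"
    "steps Q inp' cap cap k' (off + sblk * min 0 (length P), Mst, Osc, tc, Wc) = Some (off + sblk * min p' (length P), Mc', Osc, tc + k', Wc')"
    "simrel m R amax off (length P) Mst lg' p' Mo' t' Mc' (off + sblk * min p' (length P))" "\<forall>a. Mo' a < capo"
    by auto
  moreover have "min p' (length P) = length P" using hl by simp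
  ultimately show ?thesis by (auto simp: simrel_def)
qed

lemma gaps_first: "gaps_le Bd (0 # xs @ [T]) \<Longrightarrow> (xs = [] \<longrightarrow> T \<le> Bd) \<and> (xs \<noteq> [] \<longrightarrow> hd xs \<le> Bd)"
proof -
  assume g: "gaps_le Bd (0 # xs @ [T])"
  from g have "(0 # xs @ [T]) ! Suc 0 - (0 # xs @ [T]) ! 0 \<le> Bd" unfolding gaps_le_def by (metis length_Cons length_append_singleton less_Suc_eq_0_disj zero_less_Suc)
  thus ?thesis by (cases xs) auto
qed

lemma enum_sim:
  assumes cx: "ctx ME R cap capo amax Bd Mst []" and seg: "code_at Q off (cseg ME R off fnd P)"
    and rn: "run P [] capo amax fuel Mo = Some (M', Os, T, W)"
    and gp: "gaps_le Bd (0 # map fst Os @ [T])"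
    and mr: "memrel R amax Mo Mst" and mob: "\<forall>a. Mo a < capo" and lp0: "Mst rLP = LOGB"
  shows "\<exists>k' Mc' Wc' lg. k' \<le> sblk * Bd + 1 \<and>
    steps Q inp' cap cap k' (off, Mst, Osc, tc, Wc) = Some (if Os = [] then off + sblk * length P else fnd, Mc', Osc, tc + k', Wc') \<and>
    loginv R amax Mst lg Mc' \<and> length lg \<le> Bd \<and> (\<forall>q. \<not> scratch R q \<and> \<not> dsreg R amax q \<longrightarrow> Mc' q = Mst q)"
proof -
  from rn obtain pf where st: "steps P [] capo amax fuel (0, Mo, [], 0, {}) = Some (pf, M', Os, T, W)" and hl: "length P \<le> pf"
    unfolding run_def by (auto split: option.splits if_splits)
  from gaps_first[OF gp] have g: "Os = [] \<longrightarrow> T \<le> Bd" "Os \<noteq> [] \<longrightarrow> fst (hd Os) \<le> Bd"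
    by (auto simp: hd_map)
  show ?thesis
  proof (cases "Os = []")
    case True
    from steps_time[OF st] have st2: "steps P [] capo amax T (0, Mo, [], 0, {}) = Some (pf, M', Os, T, W)" by simp
    from sim_steps[OF cx seg st2 simrel_init[OF mr lp0] mob, of inp' Osc tc Wc] True g(1)
    obtain k' lg' Mc' Wc' where "k' \<le> sblk * T"
      "steps Q inp' cap cap k' (off + sblk * min 0 (length P), Mst, Osc, tc, Wc) = Some (off + sblk * min pf (length P), Mc', Osc, tc + k', Wc')"
      "simrel ME R amax off (length P) Mst lg' pf M' T Mc' (off + sblk * min pf (length P))"
      by auto
    moreover have "min pf (length P) = length P" using hl by simp
    moreover have "sblk * T \<le> sblk * Bd" using True g(1) by simp
    ultimately have "k' \<le> sblk * Bd + 1" by linarith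
    with \<open>steps Q inp' cap cap k' _ = _\<close> \<open>simrel ME R amax off (length P) Mst lg' pf M' T Mc' _\<close> \<open>min pf (length P) = length P\<close>
    show ?thesis using True g(1) unfolding simrel_def
      by (intro exI[of _ k'] exI[of _ Mc'] exI[of _ Wc'] exI[of _ lg']) auto
  next
    case False
    from first_out[OF st False] obtain j pcm Mm tm Wm a b where
      fo: "steps P [] capo amax j (0, Mo, [], 0, {}) = Some (pcm, Mm, [], tm, Wm)" "pcm < length P" "P ! pcm = Out a b"
        "fst (hd Os) = Suc tm" by blast
    from steps_time[OF fo(1)] have st2: "steps P [] capo amax tm (0, Mo, [], 0, {}) = Some (pcm, Mm, [], tm, Wm)" by simp
    have tmb: "tm < Bd" using g(2) False fo(4) by simp
    from sim_steps[OF cx seg st2 simrel_init[OF mr lp0] mob, of inp' Osc tc Wc] tmb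
    obtain k' lg' Mc' Wc' where k': "k' \<le> sblk * tm"
      and e1: "steps Q inp' cap cap k' (off + sblk * min 0 (length P), Mst, Osc, tc, Wc) = Some (off + sblk * min pcm (length P), Mc', Osc, tc + k', Wc')"
      and r: "simrel ME R amax off (length P) Mst lg' pcm Mm tm Mc' (off + sblk * min pcm (length P))"
      by auto
    have ca: "code_at Q (off + sblk * pcm) (pad (blk ME R off (length P) fnd (P ! pcm)))" by (rule cseg_blk[OF seg fo(2)])
    hence "off + sblk * pcm < length Q" "Q ! (off + sblk * pcm) = Jmp fnd" using fo(3) by (auto simp: pad_def blk_def code_at_Cons)
    from step_Jmp[OF this] have "steps Q inp' cap cap 1 (off + sblk * pcm, Mc', Osc, tc + k', Wc') = Some (fnd, Mc', Osc, Suc (tc + k'), Wc')" by simp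
    with e1 fo(2) have "steps Q inp' cap cap (k' + 1) (off, Mst, Osc, tc, Wc) = Some (fnd, Mc', Osc, tc + (k' + 1), Wc')"
      using steps_trans by fastforce
    moreover have "k' + 1 \<le> sblk * Bd + 1" using k' tmb by (meson add_le_mono1 le_trans less_imp_le_nat mult_le_mono2)
    ultimately show ?thesis using False r tmb unfolding simrel_def
      by (intro exI[of _ "k' + 1"] exI[of _ Mc'] exI[of _ Wc'] exI[of _ lg']) auto
  qed
qed


lemma steps_vals:
  assumes "steps P inp cap amax k (p, M, Os, t, W) = Some (p', M', Os', t', W')" "\<forall>a. M a < cap"
  shows "\<forall>a. M' a < cap"
  using assms
proof (induction k arbitrary: p M Os t W)
  case 0 then show ?case by simp
next
  case (Suc k)
  from Suc.prems(1) obtain c1 where s1: "step P inp cap amax (p, M, Os, t, W) = Some c1"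
    and r: "steps P inp cap amax k c1 = Some (p', M', Os', t', W')" by (auto split: Option.bind_splits)
  obtain p1 M1 Os1 t1 W1 where c1: "c1 = (p1, M1, Os1, t1, W1)" by (cases c1) auto
  from step_mob[OF s1[unfolded c1] Suc.prems(2)] have "\<forall>a. M1 a < cap" .
  with Suc.IH[of p1 M1 Os1 t1 W1] r c1 show ?case by auto
qed

definition ucode :: "nat \<Rightarrow> instr list" where
  "ucode u = [Sub rT rLP rLB, Jz rT (u + 9), Sub rLP rLP rONE, Sub rLP rLP rONE, Add rT rLP rONE,
     Load rV rT, Load rX rLP, Store rX rV, Jmp u]"

lemma undo_loop:
  assumes ca: "code_at Q u (ucode u)"
    and r: "M rLB = LOGB" "M rONE = 1" "M rLP = LOGB + 2 * length lg"
    and cells: "\<forall>j<length lg. M (LOGB + 2 * j) = fst (lg ! j) \<and> M (LOGB + 2 * j + 1) = snd (lg ! j)"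
    and addr: "\<forall>e\<in>set lg. R \<le> fst e \<and> fst e < cap"
    and lb: "LOGB + 2 * length lg \<le> R" and vals: "\<forall>q. M q < cap" and R: "LOGB \<le> R" "R \<le> cap"
  shows "\<exists>k M' W'. k \<le> 9 * length lg + 2 \<and> steps Q inp cap cap k (u, M, Os, t, W) = Some (u + 9, M', Os, t + k, W') \<and>
    (\<forall>q. \<not> scratch R q \<longrightarrow> M' q = undo lg M q) \<and> (\<forall>q. M' q < cap)"
  using r cells addr lb vals
proof (induction lg arbitrary: M t W rule: rev_induct)
  case Nil
  have rc: "\<And>q. q \<le> 20 \<Longrightarrow> q < cap" using R by linarith
  have c0: "code_at Q u [Sub rT rLP rLB]" "code_at Q (u + 1) (Jz rT (u + 9) # [])"
  proof -
    have dec: "ucode u = [Sub rT rLP rLB] @ [Jz rT (u + 9)] @ [Sub rLP rLP rONE, Sub rLP rLP rONE, Add rT rLP rONE, Load rV rT, Load rX rLP, Store rX rV] @ [Jmp u]"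
      by (simp add: ucode_def)
    from ca[unfolded dec code_at_app] show "code_at Q u [Sub rT rLP rLB]" "code_at Q (u + 1) (Jz rT (u + 9) # [])"
      by simp_all
  qed
  have "sl inp cap cap [Sub rT rLP rLB] M = Some (M(rT := 0))" using Nil rc by simp
  from exec_sl[OF c0(1) this, of Os t W] obtain W1 where
    e1: "steps Q inp cap cap 1 (u, M, Os, t, W) = Some (u + 1, M(rT := 0), Os, t + 1, W1)" by auto
  have jz: "u + 1 < length Q" "Q ! (u + 1) = Jz rT (u + 9)" using c0(2) by (auto simp: code_at_Cons)
  from step_Jz[OF jz, where amax=cap and cap=cap and inp=inp and M="M(rT := 0)" and Os=Os and t="t + 1" and W=W1] rc
  have "steps Q inp cap cap 1 (u + 1, M(rT := 0), Os, t + 1, W1) = Some (u + 9, M(rT := 0), Os, t + 2, W1)" by simp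
  from steps_trans[OF e1 this] have "steps Q inp cap cap 2 (u, M, Os, t, W) = Some (u + 9, M(rT := 0), Os, t + 2, W1)"
    by (simp only: one_add_one)
  moreover have "\<forall>q. \<not> scratch R q \<longrightarrow> (M(rT := 0)) q = undo [] M q" using R by (auto simp: scratch_def)
  moreover have "\<forall>q. (M(rT := 0)) q < cap" using Nil rc by auto
  ultimately show ?case by (intro exI[of _ 2]) auto
next
  case (snoc e lg)
  let ?L = "length lg"
  have rc: "\<And>q. q \<le> 20 \<Longrightarrow> q < cap" using R by linarith
  have ca2: "code_at Q u [Sub rT rLP rLB]" "code_at Q (u + 1) [Jz rT (u + 9)]"
    "code_at Q (u + 2) [Sub rLP rLP rONE, Sub rLP rLP rONE, Add rT rLP rONE, Load rV rT, Load rX rLP, Store rX rV]"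
    "code_at Q (u + 8) [Jmp u]"
  proof -
    have dec: "ucode u = [Sub rT rLP rLB] @ [Jz rT (u + 9)] @ [Sub rLP rLP rONE, Sub rLP rLP rONE, Add rT rLP rONE, Load rV rT, Load rX rLP, Store rX rV] @ [Jmp u]"
      by (simp add: ucode_def)
    from ca[unfolded dec code_at_app] show "code_at Q u [Sub rT rLP rLB]" "code_at Q (u + 1) [Jz rT (u + 9)]"
    "code_at Q (u + 2) [Sub rLP rLP rONE, Sub rLP rLP rONE, Add rT rLP rONE, Load rV rT, Load rX rLP, Store rX rV]"
    "code_at Q (u + 8) [Jmp u]" by (simp_all add: add.assoc numeral_eq_Suc)
  qed
  have ce: "M (LOGB + 2 * ?L) = fst e" "M (LOGB + 2 * ?L + 1) = snd e"
    using snoc.prems(4)[rule_format, of ?L] by (auto simp: nth_append)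
  have ea: "R \<le> fst e" "fst e < cap" using snoc.prems(5) by auto
  have lL: "LOGB + 2 * ?L + 2 \<le> R" using snoc.prems(6) by simp
  have v1: "snd e < cap" using snoc.prems(7) ce(2) by metis
  define T0 where "T0 = 2 * ?L + 2"
  have "sl inp cap cap [Sub rT rLP rLB] M = Some (M(rT := T0))" using snoc.prems(1,3) rc R lL unfolding T0_def by simp
  from exec_sl[OF ca2(1) this, of Os t W] obtain W1 where
    e1: "steps Q inp cap cap 1 (u, M, Os, t, W) = Some (u + 1, M(rT := T0), Os, t + 1, W1)" by auto
  have jz: "u + 1 < length Q" "Q ! (u + 1) = Jz rT (u + 9)" using ca2(2) by (auto simp: code_at_Cons)
  from step_Jz[OF jz, where amax=cap and cap=cap and inp=inp and M="M(rT := T0)" and Os=Os and t="t + 1" and W=W1] rc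
  have e2: "steps Q inp cap cap 1 (u + 1, M(rT := T0), Os, t + 1, W1) = Some (u + 2, M(rT := T0), Os, t + 2, W1)"
    by (simp add: T0_def)
  define M2 where "M2 = (M(rT := T0))(rLP := LOGB + 2 * ?L + 1, rLP := LOGB + 2 * ?L, rT := LOGB + 2 * ?L + 1,
     rV := snd e, rX := fst e, fst e := snd e)"
  have sl6: "sl inp cap cap [Sub rLP rLP rONE, Sub rLP rLP rONE, Add rT rLP rONE, Load rV rT, Load rX rLP, Store rX rV] (M(rT := T0)) = Some M2"
    using snoc.prems(1-3) rc R lL ce ea v1 unfolding M2_def by (simp add: add.commute)
  have l6: "length [Sub rLP rLP rONE, Sub rLP rLP rONE, Add rT rLP rONE, Load rV rT, Load rX rLP, Store rX rV] = 6"
    "u + 2 + 6 = u + 8" "t + 2 + 6 = t + 8" by simp_all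
  from exec_sl[OF ca2(3) sl6, of Os "t + 2" W1, unfolded l6] obtain W2 where
    e3: "steps Q inp cap cap 6 (u + 2, M(rT := T0), Os, t + 2, W1) = Some (u + 8, M2, Os, t + 8, W2)" by blast
  have "u + 8 < length Q" "Q ! (u + 8) = Jmp u" using ca2(4) by (auto simp: code_at_Cons)
  from step_Jmp[OF this] have e4: "steps Q inp cap cap 1 (u + 8, M2, Os, t + 8, W2) = Some (u, M2, Os, t + 9, W2)" by simp
  have nn: "(1::nat) + 1 + 6 + 1 = 9" by simp
  from steps_trans[OF steps_trans[OF steps_trans[OF e1 e2] e3] e4]
  have e5: "steps Q inp cap cap 9 (u, M, Os, t, W) = Some (u, M2, Os, t + 9, W2)" by (simp only: nn)
  have fe: "fst e \<noteq> rLB" "fst e \<noteq> rONE" "fst e \<noteq> rLP" "fst e \<noteq> rT" "fst e \<noteq> rV" "fst e \<noteq> rX" using ea R by auto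
  have p1: "M2 rLB = LOGB" "M2 rONE = 1" "M2 rLP = LOGB + 2 * ?L" unfolding M2_def using fe snoc.prems(1,2) by auto
  have p2: "\<forall>j<?L. M2 (LOGB + 2 * j) = fst (lg ! j) \<and> M2 (LOGB + 2 * j + 1) = snd (lg ! j)"
  proof (intro allI impI)
    fix j assume j: "j < ?L"
    have "LOGB + 2 * j + 1 < R" using j lL by linarith
    hence "LOGB + 2 * j \<noteq> fst e" "LOGB + 2 * j + 1 \<noteq> fst e" using ea by auto
    moreover have "M (LOGB + 2 * j) = fst (lg ! j) \<and> M (LOGB + 2 * j + 1) = snd (lg ! j)"
      using snoc.prems(4)[rule_format, of j] j by (auto simp: nth_append)
    ultimately show "M2 (LOGB + 2 * j) = fst (lg ! j) \<and> M2 (LOGB + 2 * j + 1) = snd (lg ! j)"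
      unfolding M2_def by auto
  qed
  have p3: "\<forall>e\<in>set lg. R \<le> fst e \<and> fst e < cap" using snoc.prems(5) by auto
  have p4: "LOGB + 2 * ?L \<le> R" using lL by simp
  have p5: "\<forall>q. M2 q < cap" using snoc.prems(7) rc v1 ea lL R unfolding M2_def by auto
  from snoc.IH[OF p1 p2 p3 p4 p5, of "t + 9" W2] obtain k M' W' where
    k: "k \<le> 9 * ?L + 2" and e6: "steps Q inp cap cap k (u, M2, Os, t + 9, W2) = Some (u + 9, M', Os, t + 9 + k, W')"
    and m': "\<forall>q. \<not> scratch R q \<longrightarrow> M' q = undo lg M2 q" "\<forall>q. M' q < cap" by blast
  from steps_trans[OF e5 e6] have e7: "steps Q inp cap cap (9 + k) (u, M, Os, t, W) = Some (u + 9, M', Os, t + (9 + k), W')"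
    by (simp add: add.assoc)
  have ag: "\<forall>q. \<not> scratch R q \<longrightarrow> M2 q = (M(fst e := snd e)) q"
    unfolding M2_def using R by (auto simp: scratch_def)
  have "\<forall>e\<in>set lg. \<not> scratch R (fst e)" using p3 by (auto simp: scratch_def)
  from undo_agree[OF ag this] have X: "\<forall>q. \<not> scratch R q \<longrightarrow> undo lg M2 q = undo lg (M(fst e := snd e)) q" .
  have Y: "undo (lg @ [e]) M = undo lg (M(fst e := snd e))" by (rule undo_snoc)
  from X have "\<forall>q. \<not> scratch R q \<longrightarrow> undo lg M2 q = undo (lg @ [e]) M q" unfolding Y .
  with m' have "\<forall>q. \<not> scratch R q \<longrightarrow> M' q = undo (lg @ [e]) M q" by auto
  moreover have "9 + k \<le> 9 * length (lg @ [e]) + 2" using k by simp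
  ultimately show ?case using e7 m'(2) by blast
qed


definition reach :: "instr list \<Rightarrow> nat list \<Rightarrow> nat \<Rightarrow> nat \<Rightarrow> nat \<times> mem \<times> (nat \<times> nat \<times> nat) list \<Rightarrow> nat \<times> mem \<times> (nat \<times> nat \<times> nat) list \<Rightarrow> bool" where
  "reach Q inp cap k c c' \<longleftrightarrow> (\<forall>t W. \<exists>W'. steps Q inp cap cap k (fst c, fst (snd c), snd (snd c), t, W) =
      Some (fst c', fst (snd c'), snd (snd c'), t + k, W'))"

lemma reach_trans: "reach Q inp cap k1 a b \<Longrightarrow> reach Q inp cap k2 b c \<Longrightarrow> reach Q inp cap (k1 + k2) a c"
  unfolding reach_def
proof (intro allI)
  fix t W
  assume h1: "\<forall>t W. \<exists>W'. steps Q inp cap cap k1 (fst a, fst (snd a), snd (snd a), t, W) = Some (fst b, fst (snd b), snd (snd b), t + k1, W')"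
    and h2: "\<forall>t W. \<exists>W'. steps Q inp cap cap k2 (fst b, fst (snd b), snd (snd b), t, W) = Some (fst c, fst (snd c), snd (snd c), t + k2, W')"
  from h1 obtain W1 where e1: "steps Q inp cap cap k1 (fst a, fst (snd a), snd (snd a), t, W) = Some (fst b, fst (snd b), snd (snd b), t + k1, W1)" by blast
  from h2 obtain W2 where e2: "steps Q inp cap cap k2 (fst b, fst (snd b), snd (snd b), t + k1, W1) = Some (fst c, fst (snd c), snd (snd c), t + k1 + k2, W2)" by blast
  from steps_trans[OF e1 e2] show "\<exists>W'. steps Q inp cap cap (k1 + k2) (fst a, fst (snd a), snd (snd a), t, W) = Some (fst c, fst (snd c), snd (snd c), t + (k1 + k2), W')"
    by (auto simp: add.assoc)
qed

lemma reach_sl: "code_at Q pc xs \<Longrightarrow> sl inp cap cap xs M = Some M' \<Longrightarrow> reach Q inp cap (length xs) (pc, M, Os) (pc + length xs, M', Os)"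
  unfolding reach_def using exec_sl by fastforce

lemma reach_Jmp: "code_at Q pc [Jmp l] \<Longrightarrow> reach Q inp cap 1 (pc, M, Os) (l, M, Os)"
  unfolding reach_def by (auto simp: code_at_Cons step_Jmp)

lemma reach_Jz: "code_at Q pc [Jz a l] \<Longrightarrow> a < cap \<Longrightarrow> reach Q inp cap 1 (pc, M, Os) (if M a = 0 then l else Suc pc, M, Os)"
  unfolding reach_def by (auto simp: code_at_Cons step_Jz)


lemma reach_0: "reach Q inp cap 0 c c" unfolding reach_def by auto

lemma reach_run:
  assumes "reach Q inp cap k (0, M, []) (pc, M', Os)" "length Q \<le> pc" "k \<le> F"
  shows "\<exists>t W. run Q inp cap cap F M = Some (M', Os, t, W)"
proof -
  from assms(1) have "\<forall>t W. \<exists>W'. steps Q inp cap cap k (0, M, [], t, W) = Some (pc, M', Os, t + k, W')"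
    unfolding reach_def by simp
  hence "\<exists>W'. steps Q inp cap cap k (0, M, [], 0, {}) = Some (pc, M', Os, 0 + k, W')" by blast
  then obtain W' where "steps Q inp cap cap k (0, M, [], 0, {}) = Some (pc, M', Os, k, W')" by auto
  from steps_mono_halt[OF this assms(2,3)] assms(2) show ?thesis unfolding run_def by auto
qed

lemma reach_run_out:
  assumes "reach Q inp cap k (0, M, []) (pc, M', [])" "code_at Q pc [Out a b]" "length Q \<le> Suc pc"
    "a < cap" "b < cap" "Suc k \<le> F"
  shows "\<exists>t W Os. run Q inp cap cap F M = Some (M', Os, t, W) \<and> Os \<noteq> []"
proof -
  from assms(1) have "\<forall>t W. \<exists>W'. steps Q inp cap cap k (0, M, [], t, W) = Some (pc, M', [], t + k, W')"
    unfolding reach_def by simp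
  hence "\<exists>W'. steps Q inp cap cap k (0, M, [], 0, {}) = Some (pc, M', [], 0 + k, W')" by blast
  then obtain W' where e1: "steps Q inp cap cap k (0, M, [], 0, {}) = Some (pc, M', [], k, W')" by auto
  have "pc < length Q" "Q ! pc = Out a b" using assms(2) by (auto simp: code_at_Cons)
  from step_Out[OF this assms(4,5)] have "steps Q inp cap cap 1 (pc, M', [], k, W') = Some (Suc pc, M', [(Suc k, M' a, M' b)], Suc k, W')"
    by simp
  from steps_trans[OF e1 this] have "steps Q inp cap cap (Suc k) (0, M, [], 0, {}) = Some (Suc pc, M', [(Suc k, M' a, M' b)], Suc k, W')" by simp
  from steps_mono_halt[OF this assms(3,6)] assms(3) show ?thesis unfolding run_def by auto
qed


abbreviation "sLu Pu \<equiv> sblk * length Pu"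
abbreviation "sLe Pe \<equiv> sblk * length Pe"

definition "aL3 Pu = 20 + sLu Pu"
definition "aU3 Pu = 25 + sLu Pu"
definition "aL4 Pu = 26 + 2 * sLu Pu"
definition "aU4a Pu = 29 + 2 * sLu Pu"
definition "aU4b Pu = 32 + 3 * sLu Pu"
definition "aE Pu = 34 + 4 * sLu Pu"
definition "aF Pu Pe = 35 + 4 * sLu Pu + sLe Pe"
definition "aU Pu Pe = 36 + 4 * sLu Pu + sLe Pe"
definition "aU4c Pu Pe = 48 + 4 * sLu Pu + sLe Pe"
definition "aU4d Pu Pe = 51 + 5 * sLu Pu + sLe Pe"
definition "aZ Pu Pe = 51 + 6 * sLu Pu + sLe Pe"
definition "aH Pu Pe = 55 + 6 * sLu Pu + sLe Pe"

definition disp :: "instr list \<Rightarrow> instr list" where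
  "disp Pu = [Input rOP rZ, Input rIX rONE, Sub rT rOP rONE, Jz rT 9, Sub rT rT rONE, Jz rT 14,
     Sub rT rT rONE, Jz rT (aL3 Pu), Jmp (aL4 Pu)]"
definition op1c :: "instr list \<Rightarrow> instr list \<Rightarrow> instr list" where
  "op1c Pu Pe = [Add rT rBM rIX, Load rV rT, Jz rV (aH Pu Pe), Jmp (aZ Pu Pe + 3), Jmp (aH Pu Pe)]"
definition "op2c = [Add rT rBM rIX, Store rT rONE, Mul rT rIX rTHREE, Add rI0 rT rONE, Const rI1 2]"
definition "op3c = [Add rT rBM rIX, Store rT rZ, Mul rT rIX rTHREE, Add rI0 rT rONE, Const rI1 3]"
definition "q1c = [Mul rT rIX rTHREE, Sub rI0 rT rONE, Const rI1 1]"
definition "q2c = [Mul rT rIX rTHREE, Add rI0 rT rZ, Const rI1 1]"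
definition "q3c = [Add rLP rLB rZ, Store rBM rZ]"
definition "q4c = [Mul rT rIX rTHREE, Sub rI0 rT rONE, Const rI1 3]"
definition "q5c = [Mul rT rIX rTHREE, Add rI0 rT rZ, Const rI1 3]"
definition finc :: "instr list \<Rightarrow> instr list \<Rightarrow> instr list" where
  "finc Pu Pe = [Load rV rBM, Jz rV (aZ Pu Pe + 3), Jmp (aH Pu Pe), Out rZ rZ]"

definition po :: "nat \<Rightarrow> instr list \<Rightarrow> instr list \<Rightarrow> instr list" where
  "po R Pu Pe = disp Pu @ op1c Pu Pe @ op2c @ cseg MU R 19 0 Pu @ [Jmp (aH Pu Pe)] @
     op3c @ cseg MU R (aU3 Pu) 0 Pu @ [Jmp (aH Pu Pe)] @
     q1c @ cseg MU R (aU4a Pu) 0 Pu @ q2c @ cseg MU R (aU4b Pu) 0 Pu @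
     q3c @ cseg ME R (aE Pu) (aF Pu Pe) Pe @ [Jmp (aU Pu Pe)] @ [Store rBM rONE] @ ucode (aU Pu Pe) @
     q4c @ cseg MU R (aU4c Pu Pe) 0 Pu @ q5c @ cseg MU R (aU4d Pu Pe) 0 Pu @ finc Pu Pe"

lemma po_code:
  fixes R :: nat and Pu Pe :: "instr list"
  defines "Q \<equiv> po R Pu Pe"
  shows "code_at Q 0 (disp Pu)" "code_at Q 9 (op1c Pu Pe)" "code_at Q 14 op2c"
    "code_at Q 19 (cseg MU R 19 0 Pu)" "code_at Q (19 + sLu Pu) [Jmp (aH Pu Pe)]"
    "code_at Q (aL3 Pu) op3c" "code_at Q (aU3 Pu) (cseg MU R (aU3 Pu) 0 Pu)" "code_at Q (aU3 Pu + sLu Pu) [Jmp (aH Pu Pe)]"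
    "code_at Q (aL4 Pu) q1c" "code_at Q (aU4a Pu) (cseg MU R (aU4a Pu) 0 Pu)"
    "code_at Q (aU4a Pu + sLu Pu) q2c" "code_at Q (aU4b Pu) (cseg MU R (aU4b Pu) 0 Pu)"
    "code_at Q (aU4b Pu + sLu Pu) q3c" "code_at Q (aE Pu) (cseg ME R (aE Pu) (aF Pu Pe) Pe)"
    "code_at Q (aE Pu + sLe Pe) [Jmp (aU Pu Pe)]" "code_at Q (aF Pu Pe) [Store rBM rONE]"
    "code_at Q (aU Pu Pe) (ucode (aU Pu Pe))" "code_at Q (aU Pu Pe + 9) q4c"
    "code_at Q (aU4c Pu Pe) (cseg MU R (aU4c Pu Pe) 0 Pu)" "code_at Q (aU4c Pu Pe + sLu Pu) q5c"
    "code_at Q (aU4d Pu Pe) (cseg MU R (aU4d Pu Pe) 0 Pu)" "code_at Q (aZ Pu Pe) (finc Pu Pe)"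
    "length Q = aH Pu Pe"
proof -
  have self: "\<And>xs. Q = xs \<Longrightarrow> code_at Q 0 xs" by (simp add: code_at_def)
  have Qe: "Q = disp Pu @ op1c Pu Pe @ op2c @ cseg MU R 19 0 Pu @ [Jmp (aH Pu Pe)] @
     op3c @ cseg MU R (aU3 Pu) 0 Pu @ [Jmp (aH Pu Pe)] @
     q1c @ cseg MU R (aU4a Pu) 0 Pu @ q2c @ cseg MU R (aU4b Pu) 0 Pu @
     q3c @ cseg ME R (aE Pu) (aF Pu Pe) Pe @ [Jmp (aU Pu Pe)] @ [Store rBM rONE] @ ucode (aU Pu Pe) @
     q4c @ cseg MU R (aU4c Pu Pe) 0 Pu @ q5c @ cseg MU R (aU4d Pu Pe) 0 Pu @ finc Pu Pe"
    unfolding Q_def po_def ..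
  note h = self[OF Qe, unfolded code_at_app]
  have l: "length (disp Pu) = 9" "length (op1c Pu Pe) = 5" "length op2c = 5" "length op3c = 5" "length q1c = 3"
    "length q2c = 3" "length q3c = 2" "length q4c = 3" "length q5c = 3" "length (finc Pu Pe) = 4"
    "length (ucode (aU Pu Pe)) = 9"
    by (simp_all add: disp_def op1c_def op2c_def op3c_def q1c_def q2c_def q3c_def q4c_def q5c_def finc_def ucode_def)
  note h2 = h[unfolded l length_cseg list.size]
  show "code_at Q 0 (disp Pu)" "code_at Q 9 (op1c Pu Pe)" "code_at Q 14 op2c"
    "code_at Q 19 (cseg MU R 19 0 Pu)" "code_at Q (19 + sLu Pu) [Jmp (aH Pu Pe)]"
    "code_at Q (aL3 Pu) op3c" "code_at Q (aU3 Pu) (cseg MU R (aU3 Pu) 0 Pu)" "code_at Q (aU3 Pu + sLu Pu) [Jmp (aH Pu Pe)]"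
    "code_at Q (aL4 Pu) q1c" "code_at Q (aU4a Pu) (cseg MU R (aU4a Pu) 0 Pu)"
    "code_at Q (aU4a Pu + sLu Pu) q2c" "code_at Q (aU4b Pu) (cseg MU R (aU4b Pu) 0 Pu)"
    "code_at Q (aU4b Pu + sLu Pu) q3c" "code_at Q (aE Pu) (cseg ME R (aE Pu) (aF Pu Pe) Pe)"
    "code_at Q (aE Pu + sLe Pe) [Jmp (aU Pu Pe)]" "code_at Q (aF Pu Pe) [Store rBM rONE]"
    "code_at Q (aU Pu Pe) (ucode (aU Pu Pe))" "code_at Q (aU Pu Pe + 9) q4c"
    "code_at Q (aU4c Pu Pe) (cseg MU R (aU4c Pu Pe) 0 Pu)" "code_at Q (aU4c Pu Pe + sLu Pu) q5c"
    "code_at Q (aU4d Pu Pe) (cseg MU R (aU4d Pu Pe) 0 Pu)" "code_at Q (aZ Pu Pe) (finc Pu Pe)"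
    using h2 by (simp_all add: aL3_def aU3_def aL4_def aU4a_def aU4b_def aE_def aF_def aU_def aU4c_def aU4d_def aZ_def algebra_simps)
  show "length Q = aH Pu Pe"
    unfolding Q_def po_def by (simp add: l ucode_def aH_def aL3_def aU3_def aL4_def aU4a_def aU4b_def aE_def aF_def aU_def aU4c_def aU4d_def aZ_def)
qed


lemma step_indep:
  assumes "step Q inp cap amax (pc, M, Os, t, W) = Some (pc', M', Os, t', W')"
  shows "\<exists>W2'. step Q inp cap amax (pc, M, Os2, t2, W2) = Some (pc', M', Os2, t2 + (t' - t), W2')"
  using assms by (auto simp: step_def Let_def split: if_splits instr.splits)

lemma steps_indep:
  assumes "steps Q inp cap amax k (pc, M, Os, t, W) = Some (pc', M', Os, t', W')"
  shows "\<exists>W2'. steps Q inp cap amax k (pc, M, Os2, t2, W2) = Some (pc', M', Os2, t2 + (t' - t), W2')"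
  using assms
proof (induction k arbitrary: pc M t W t2 W2)
  case 0 then show ?case by simp
next
  case (Suc k)
  from Suc.prems obtain c1 where s1: "step Q inp cap amax (pc, M, Os, t, W) = Some c1"
    and r: "steps Q inp cap amax k c1 = Some (pc', M', Os, t', W')" by (auto split: Option.bind_splits)
  obtain p1 M1 Os1 t1 W1 where c1: "c1 = (p1, M1, Os1, t1, W1)" by (cases c1) auto
  from steps_Os_prefix[OF r[unfolded c1]] step_Os[OF s1[unfolded c1]] have o1: "Os1 = Os" by auto
  from step_indep[OF s1[unfolded c1 o1], of Os2 t2 W2] obtain W2a where
    e1: "step Q inp cap amax (pc, M, Os2, t2, W2) = Some (p1, M1, Os2, t2 + (t1 - t), W2a)" by auto
  from Suc.IH[OF r[unfolded c1 o1], of "t2 + (t1 - t)" W2a] obtain W2' where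
    e2: "steps Q inp cap amax k (p1, M1, Os2, t2 + (t1 - t), W2a) = Some (pc', M', Os2, t2 + (t1 - t) + (t' - t1), W2')" by auto
  have "t \<le> t1" using step_time[OF s1[unfolded c1]] by auto
  moreover have "t1 \<le> t'" using steps_time[OF r[unfolded c1]] by auto
  ultimately have "t2 + (t1 - t) + (t' - t1) = t2 + (t' - t)" by simp
  with e1 e2 show ?case by auto
qed

lemma reach_of:
  assumes "steps Q inp cap cap k (pc, M, Os, t, W) = Some (pc', M', Os, t + k, W')"
  shows "reach Q inp cap k (pc, M, Os) (pc', M', Os)"
  unfolding reach_def using steps_indep[OF assms] by auto

definition pst :: "nat \<Rightarrow> nat \<Rightarrow> nat \<Rightarrow> nat \<Rightarrow> mem \<Rightarrow> bool" where
  "pst R cap m bm M \<longleftrightarrow> M rZ = 0 \<and> M rONE = 1 \<and> M rTHREE = 3 \<and> M rRR = R \<and> M rMM = m \<and> M rBM = bm \<and>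
     M rLB = LOGB \<and> (\<forall>q. M q < cap)"

definition parms :: "nat \<Rightarrow> nat \<Rightarrow> nat \<Rightarrow> nat \<Rightarrow> nat \<Rightarrow> bool" where
  "parms R amax cap capo Bd \<longleftrightarrow> LOGB + 2 * Bd < R \<and> R + amax \<le> cap \<and> capo \<le> cap \<and> 4 \<le> cap"

lemma pst_keep:
  assumes "pst R cap m bm M" "\<forall>q. q < 7 \<longrightarrow> M' q = M q" "\<forall>q. M' q < cap"
  shows "pst R cap m bm M'"
  using assms by (simp add: pst_def)

lemma keep13: "LOGB \<le> R \<Longrightarrow> \<forall>q. \<not> scratch R q \<and> \<not> dsreg R amax q \<longrightarrow> M' q = M q \<Longrightarrow> \<forall>q. q < 13 \<longrightarrow> M' q = M q"
  by (auto simp: scratch_def dsreg_def)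

lemma call_pu:
  assumes pa: "parms R amax cap capo Bd" and ps: "pst R cap m bm M"
    and ca: "code_at Q off (cseg MU R off 0 Pu)" and i: "M rI0 < cap" "M rI1 < cap"
    and mr: "memrel R amax Mo M" and mob: "\<forall>a. Mo a < capo"
    and rn: "run Pu [M rI0, M rI1] capo amax Bd Mo = Some (Mo', rr)"
  shows "\<exists>k M'. k \<le> sblk * Bd \<and> reach Q inp cap k (off, M, Os) (off + sLu Pu, M', Os) \<and> memrel R amax Mo' M' \<and>
    (\<forall>q. \<not> scratch R q \<and> \<not> dsreg R amax q \<longrightarrow> M' q = M q) \<and> (\<forall>a. Mo' a < capo) \<and> pst R cap m bm M'"
proof -
  from rn obtain pf Os' T W where st: "steps Pu [M rI0, M rI1] capo amax Bd (0, Mo, [], 0, {}) = Some (pf, Mo', Os', T, W)"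
    and hl: "length Pu \<le> pf" unfolding run_def by (auto split: option.splits if_splits)
  have cx: "ctx MU R cap capo amax Bd M [M rI0, M rI1]"
    using pa ps i unfolding ctx_def parms_def pst_def by (auto simp: nth_Cons split: nat.splits)
  from run_sim[OF cx ca st hl mr mob, of inp Os 0 "{}"] obtain k' Mc' Wc' where
    k': "k' \<le> sblk * Bd" and e: "steps Q inp cap cap k' (off, M, Os, 0, {}) = Some (off + sblk * length Pu, Mc', Os, 0 + k', Wc')"
    and r: "memrel R amax Mo' Mc'" "\<forall>q. \<not> scratch R q \<and> \<not> dsreg R amax q \<longrightarrow> Mc' q = M q" "\<forall>a. Mo' a < capo"
    by auto
  have v: "\<forall>q. Mc' q < cap" using steps_vals[OF e] ps by (simp add: pst_def)
  have "\<forall>q. q < 7 \<longrightarrow> Mc' q = M q" using keep13[OF _ r(2)] pa by (auto simp: parms_def)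
  hence "pst R cap m bm Mc'" using pst_keep[OF ps _ v] by blast
  moreover have "reach Q inp cap k' (off, M, Os) (off + sLu Pu, Mc', Os)" using reach_of[of Q inp cap k' off M Os 0 "{}"] e by simp
  ultimately show ?thesis using k' r by blast
qed

lemma call_pe:
  assumes pa: "parms R amax cap capo Bd" and ps: "pst R cap m bm M" and lp: "M rLP = LOGB"
    and ca: "code_at Q off (cseg ME R off fnd Pe)"
    and mr: "memrel R amax Mo M" and mob: "\<forall>a. Mo a < capo"
    and en: "enum_ok L Pe capo amax Bd w Mo"
  shows "\<exists>k M'. k \<le> sblk * Bd + 1 \<and> reach Q inp cap k (off, M, Os) (if infixes L w = {} then off + sLe Pe else fnd, M', Os) \<and>
    (\<exists>lg. loginv R amax M lg M' \<and> length lg \<le> Bd) \<and> (\<forall>q. \<not> scratch R q \<and> \<not> dsreg R amax q \<longrightarrow> M' q = M q) \<and> (\<forall>q. M' q < cap)"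
proof -
  from en obtain fuel M'' Os' T W where rn: "run Pe [] capo amax fuel Mo = Some (M'', Os', T, W)"
    and inf: "set (map snd Os') = infixes L w" and gp: "gaps_le Bd (0 # map fst Os' @ [T])"
    unfolding enum_ok_def by blast
  have cx: "ctx ME R cap capo amax Bd M []"
    using pa ps unfolding ctx_def parms_def pst_def by auto
  from enum_sim[OF cx ca rn gp mr mob lp, of inp Os 0 "{}"] obtain k' Mc' Wc' lg where
    k': "k' \<le> sblk * Bd + 1" and e: "steps Q inp cap cap k' (off, M, Os, 0, {}) = Some (if Os' = [] then off + sblk * length Pe else fnd, Mc', Os, 0 + k', Wc')"
    and r: "loginv R amax M lg Mc'" "length lg \<le> Bd" "\<forall>q. \<not> scratch R q \<and> \<not> dsreg R amax q \<longrightarrow> Mc' q = M q"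
    by auto
  have v: "\<forall>q. Mc' q < cap" using steps_vals[OF e] ps by (simp add: pst_def)
  have eq: "(Os' = []) = (infixes L w = {})" using inf by auto
  have "reach Q inp cap k' (off, M, Os) (if infixes L w = {} then off + sLe Pe else fnd, Mc', Os)"
    using reach_of[of Q inp cap k' off M Os 0 "{}"] e eq by simp
  then show ?thesis using k' r v by blast
qed

lemma undo_upd: "c \<notin> fst ` set lg \<Longrightarrow> undo lg (M(c := v)) = (undo lg M)(c := v)"
  by (induction lg) (auto simp: undo_def fun_upd_twist)

lemma call_undo:
  assumes pa: "parms R amax cap capo Bd" and ca: "code_at Q u (ucode u)"
    and li: "loginv R amax Mst lg M0" "length lg \<le> Bd" and r: "M rLB = LOGB" "M rONE = 1" and v: "\<forall>q. M q < cap"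
    and c: "M = M0(c := vc)" "\<not> scratch R c" "\<not> dsreg R amax c"
  shows "\<exists>k M'. k \<le> 9 * Bd + 2 \<and> reach Q inp cap k (u, M, Os) (u + 9, M', Os) \<and>
    (\<forall>q. \<not> scratch R q \<longrightarrow> M' q = (Mst(c := vc)) q) \<and> (\<forall>q. M' q < cap)"
proof -
  from pa have p: "LOGB + 2 * Bd < R" "R + amax \<le> cap" by (auto simp: parms_def)
  have sc: "\<And>q. scratch R q \<Longrightarrow> q \<noteq> c" using c(2) by auto
  have cn: "c \<notin> fst ` set lg" using li(1) c(3) unfolding loginv_def dsreg_def by force
  from li have l: "M rLP = LOGB + 2 * length lg"
    "\<forall>j<length lg. M (LOGB + 2 * j) = fst (lg ! j) \<and> M (LOGB + 2 * j + 1) = snd (lg ! j)"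
    "\<forall>e\<in>set lg. R \<le> fst e \<and> fst e < cap" "\<forall>q. \<not> scratch R q \<longrightarrow> undo lg M q = (Mst(c := vc)) q"
  proof -
    have s19: "scratch R rLP" using p by (simp add: scratch_def)
    show "M rLP = LOGB + 2 * length lg" using li(1) sc[OF s19] c(1) by (simp add: loginv_def)
    show "\<forall>j<length lg. M (LOGB + 2 * j) = fst (lg ! j) \<and> M (LOGB + 2 * j + 1) = snd (lg ! j)"
    proof (intro allI impI)
      fix j assume j: "j < length lg"
      have "scratch R (LOGB + 2 * j)" "scratch R (LOGB + 2 * j + 1)" using j li(2) p by (auto simp: scratch_def)
      with sc li(1) j c(1) show "M (LOGB + 2 * j) = fst (lg ! j) \<and> M (LOGB + 2 * j + 1) = snd (lg ! j)"
        unfolding loginv_def by auto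
    qed
    show "\<forall>e\<in>set lg. R \<le> fst e \<and> fst e < cap" using li(1) p unfolding loginv_def by fastforce
    show "\<forall>q. \<not> scratch R q \<longrightarrow> undo lg M q = (Mst(c := vc)) q"
      using li(1) unfolding c(1) undo_upd[OF cn] loginv_def by auto
  qed
  have lb: "LOGB + 2 * length lg \<le> R" using li(2) p by linarith
  from undo_loop[OF ca r l(1) l(2) l(3) lb v _ _, of inp Os 0 "{}"] p obtain k M' W' where
    k: "k \<le> 9 * length lg + 2" and e: "steps Q inp cap cap k (u, M, Os, 0, {}) = Some (u + 9, M', Os, 0 + k, W')"
    and m: "\<forall>q. \<not> scratch R q \<longrightarrow> M' q = undo lg M q" "\<forall>q. M' q < cap" by auto
  have "k \<le> 9 * Bd + 2" using k li(2) by linarith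
  moreover have "reach Q inp cap k (u, M, Os) (u + 9, M', Os)" using reach_of[of Q inp cap k u M Os 0 "{}"] e by simp
  ultimately show ?thesis using m l(4) by metis
qed


lemma code_at_split1: "code_at Q p (xs @ ys) \<Longrightarrow> code_at Q p xs" by (simp add: code_at_app)
lemma code_at_split2: "code_at Q p (xs @ ys) \<Longrightarrow> code_at Q (p + length xs) ys" by (simp add: code_at_app)

lemma reach_sl': "code_at Q pc xs \<Longrightarrow> sl inp cap cap xs M = Some M' \<Longrightarrow> length xs = n \<Longrightarrow> pc + n = pc' \<Longrightarrow>
   reach Q inp cap n (pc, M, Os) (pc', M', Os)"
  using reach_sl by blast

definition dtgt :: "nat \<Rightarrow> instr list \<Rightarrow> nat" where
  "dtgt op Pu = (if op = 1 then 9 else if op = 2 then 14 else if op = 3 then aL3 Pu else aL4 Pu)"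

lemma disp_run:
  assumes ca: "code_at Q 0 (disp Pu)" and ps: "pst R cap m bm M" and op: "op \<in> {1, 2, 3, 4}"
    and ic: "i < cap" and c21: "21 \<le> cap"
  shows "\<exists>k Md. k \<le> 9 \<and> reach Q [op, i] cap k (0, M, []) (dtgt op Pu, Md, []) \<and> Md rOP = op \<and> Md rIX = i \<and>
    (\<forall>q. q \<noteq> rOP \<and> q \<noteq> rIX \<and> q \<noteq> rT \<longrightarrow> Md q = M q) \<and> (\<forall>q. Md q < cap)"
proof -
  have dd: "disp Pu = [Input rOP rZ, Input rIX rONE, Sub rT rOP rONE] @ [Jz rT 9] @ [Sub rT rT rONE] @ [Jz rT 14] @
     [Sub rT rT rONE] @ [Jz rT (aL3 Pu)] @ [Jmp (aL4 Pu)]" by (simp add: disp_def)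
  note c = ca[unfolded dd]
  have c0: "code_at Q 0 [Input rOP rZ, Input rIX rONE, Sub rT rOP rONE]" using code_at_split1[OF c] .
  have c3: "code_at Q 3 [Jz rT 9]" using code_at_split1[OF code_at_split2[OF c]] by (simp add: eval_nat_numeral)
  have c4: "code_at Q 4 [Sub rT rT rONE]" using code_at_split1[OF code_at_split2[OF code_at_split2[OF c]]] by (simp add: eval_nat_numeral)
  have c5: "code_at Q 5 [Jz rT 14]" using code_at_split1[OF code_at_split2[OF code_at_split2[OF code_at_split2[OF c]]]] by (simp add: eval_nat_numeral)
  have c6: "code_at Q 6 [Sub rT rT rONE]"
    using code_at_split1[OF code_at_split2[OF code_at_split2[OF code_at_split2[OF code_at_split2[OF c]]]]] by (simp add: eval_nat_numeral)
  have c7: "code_at Q 7 [Jz rT (aL3 Pu)]"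
    using code_at_split1[OF code_at_split2[OF code_at_split2[OF code_at_split2[OF code_at_split2[OF code_at_split2[OF c]]]]]] by (simp add: eval_nat_numeral)
  have c8: "code_at Q 8 [Jmp (aL4 Pu)]"
    using code_at_split2[OF code_at_split2[OF code_at_split2[OF code_at_split2[OF code_at_split2[OF code_at_split2[OF c]]]]]] by (simp add: eval_nat_numeral)
  have rc: "\<And>q. q \<le> 20 \<Longrightarrow> q < cap" using c21 by linarith
  have r: "M rZ = 0" "M rONE = 1" "\<forall>q. M q < cap" using ps by (auto simp: pst_def)
  have opc: "op < cap" using op c21 by auto
  define M1 where "M1 = M(rOP := op, rIX := i, rT := op - 1)"
  have "sl [op, i] cap cap [Input rOP rZ, Input rIX rONE, Sub rT rOP rONE] M = Some M1"
    unfolding M1_def using r rc opc ic by simp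
  from reach_sl'[OF c0 this] have e0: "reach Q [op, i] cap 3 (0, M, []) (3, M1, [])" by simp
  have M1p: "M1 rOP = op" "M1 rIX = i" "\<forall>q. q \<noteq> rOP \<and> q \<noteq> rIX \<and> q \<noteq> rT \<longrightarrow> M1 q = M q" "\<forall>q. M1 q < cap"
    unfolding M1_def using r opc ic by auto
  have j3: "reach Q [op, i] cap 1 (3, M1, []) (if op = 1 then 9 else 4, M1, [])"
    using reach_Jz[OF c3, of cap "[op, i]" M1 "[]"] rc unfolding M1_def using op by auto
  show ?thesis
  proof (cases "op = 1")
    case True
    with reach_trans[OF e0 j3] M1p show ?thesis unfolding dtgt_def by (intro exI[of _ 4] exI[of _ M1]) auto
  next
    case n1: False
    define M2 where "M2 = M1(rT := op - 1 - 1)"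
    have "sl [op, i] cap cap [Sub rT rT rONE] M1 = Some M2" unfolding M2_def M1_def using r rc opc by auto
    from reach_sl'[OF c4 this] have e4: "reach Q [op, i] cap 1 (4, M1, []) (5, M2, [])" by simp
    have M2p: "M2 rOP = op" "M2 rIX = i" "\<forall>q. q \<noteq> rOP \<and> q \<noteq> rIX \<and> q \<noteq> rT \<longrightarrow> M2 q = M q" "\<forall>q. M2 q < cap"
      unfolding M2_def using M1p opc by auto
    have j5: "reach Q [op, i] cap 1 (5, M2, []) (if op = 2 then 14 else 6, M2, [])"
      using reach_Jz[OF c5, of cap "[op, i]" M2 "[]"] rc unfolding M2_def using op n1 by auto
    have j3': "reach Q [op, i] cap 1 (3, M1, []) (4, M1, [])" using j3 n1 by simp
    have e5: "reach Q [op, i] cap 6 (0, M, []) (if op = 2 then 14 else 6, M2, [])"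
      using reach_trans[OF reach_trans[OF reach_trans[OF e0 j3'] e4] j5] by simp
    show ?thesis
    proof (cases "op = 2")
      case True
      with e5 M2p show ?thesis unfolding dtgt_def by (intro exI[of _ 6] exI[of _ M2]) auto
    next
      case n2: False
      define M3 where "M3 = M2(rT := op - 1 - 1 - 1)"
      have "sl [op, i] cap cap [Sub rT rT rONE] M2 = Some M3" unfolding M3_def M2_def M1_def using r rc opc by auto
      from reach_sl'[OF c6 this] have e6: "reach Q [op, i] cap 1 (6, M2, []) (7, M3, [])" by simp
      have M3p: "M3 rOP = op" "M3 rIX = i" "\<forall>q. q \<noteq> rOP \<and> q \<noteq> rIX \<and> q \<noteq> rT \<longrightarrow> M3 q = M q" "\<forall>q. M3 q < cap"
        unfolding M3_def using M2p opc by auto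
      have j7: "reach Q [op, i] cap 1 (7, M3, []) (if op = 3 then aL3 Pu else 8, M3, [])"
        using reach_Jz[OF c7, of cap "[op, i]" M3 "[]"] rc unfolding M3_def using op n1 n2 by auto
      have e5': "reach Q [op, i] cap 6 (0, M, []) (6, M2, [])" using e5 n2 by simp
      have e7: "reach Q [op, i] cap 8 (0, M, []) (if op = 3 then aL3 Pu else 8, M3, [])"
        using reach_trans[OF reach_trans[OF e5' e6] j7] by simp
      show ?thesis
      proof (cases "op = 3")
        case True
        with e7 M3p show ?thesis unfolding dtgt_def by (intro exI[of _ 8] exI[of _ M3]) auto
      next
        case n3: False
        have e7': "reach Q [op, i] cap 8 (0, M, []) (8, M3, [])" using e7 n3 by simp
        have "reach Q [op, i] cap 9 (0, M, []) (aL4 Pu, M3, [])"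
          using reach_trans[OF e7' reach_Jmp[OF c8]] by simp
        with M3p n1 n2 n3 show ?thesis unfolding dtgt_def by (intro exI[of _ 9] exI[of _ M3]) auto
      qed
    qed
  qed
qed


definition opctx :: "nat \<Rightarrow> nat \<Rightarrow> nat \<Rightarrow> nat \<Rightarrow> nat \<Rightarrow> nat \<Rightarrow> nat \<Rightarrow> nat \<Rightarrow> bool" where
  "opctx R amax cap capo Bd m bm n \<longleftrightarrow> parms R amax cap capo Bd \<and> bm = R + amax \<and> m = 3 * n + 1 \<and>
     bm + n < cap \<and> 3 * n + 2 < cap"

lemma opctx_facts:
  assumes "opctx R amax cap capo Bd m bm n"
  shows "LOGB + 2 * Bd < R" "R + amax \<le> cap" "capo \<le> cap" "4 \<le> cap" "bm = R + amax" "m = 3 * n + 1"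
    "bm + n < cap" "3 * n + 2 < cap" "21 \<le> cap"
  using assms by (auto simp: opctx_def parms_def)

lemma fin_split:
  assumes "code_at Q (aZ Pu Pe) (finc Pu Pe)"
  shows "code_at Q (aZ Pu Pe) [Load rV rBM]" "code_at Q (aZ Pu Pe + 1) [Jz rV (aZ Pu Pe + 3)]"
    "code_at Q (aZ Pu Pe + 2) [Jmp (aH Pu Pe)]" "code_at Q (aZ Pu Pe + 3) [Out rZ rZ]"
proof -
  have d: "finc Pu Pe = [Load rV rBM] @ [Jz rV (aZ Pu Pe + 3)] @ [Jmp (aH Pu Pe)] @ [Out rZ rZ]" by (simp add: finc_def)
  note c = assms[unfolded d]
  show "code_at Q (aZ Pu Pe) [Load rV rBM]" using code_at_split1[OF c] .
  show "code_at Q (aZ Pu Pe + 1) [Jz rV (aZ Pu Pe + 3)]" using code_at_split1[OF code_at_split2[OF c]] by simp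
  show "code_at Q (aZ Pu Pe + 2) [Jmp (aH Pu Pe)]" using code_at_split1[OF code_at_split2[OF code_at_split2[OF c]]] by (simp add: add.assoc eval_nat_numeral)
  show "code_at Q (aZ Pu Pe + 3) [Out rZ rZ]" using code_at_split2[OF code_at_split2[OF code_at_split2[OF c]]] by (simp add: add.assoc eval_nat_numeral)
qed

lemma aH_Z: "aH Pu Pe = Suc (aZ Pu Pe + 3)" by (simp add: aH_def aZ_def)

lemma op1_run:
  assumes oc: "opctx R amax cap capo Bd m bm n" and ps: "pst R cap m bm M" and i: "1 \<le> i" "i \<le> n"
    and F: "20 \<le> F"
  shows "\<exists>M' Os t W. run (po R Pu Pe) [1, i] cap cap F M = Some (M', Os, t, W) \<and> (Os \<noteq> []) = (M (bm + i) \<noteq> 0) \<and>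
    pst R cap m bm M' \<and> (\<forall>q. \<not> scratch R q \<and> q \<noteq> rOP \<and> q \<noteq> rIX \<longrightarrow> M' q = M q)"
proof -
  let ?Q = "po R Pu Pe"
  note f = opctx_facts[OF oc]
  note pc = po_code[of R Pu Pe]
  have rc: "\<And>q. q \<le> 20 \<Longrightarrow> q < cap" using f by linarith
  have ic: "i < cap" using f i by linarith
  from disp_run[OF pc(1) ps _ ic f(9), of 1] obtain k1 Md where
    k1: "k1 \<le> 9" and e1: "reach ?Q [1, i] cap k1 (0, M, []) (9, Md, [])" and
    md: "Md rOP = 1" "Md rIX = i" "\<forall>q. q \<noteq> rOP \<and> q \<noteq> rIX \<and> q \<noteq> rT \<longrightarrow> Md q = M q" "\<forall>q. Md q < cap"
    by (auto simp: dtgt_def)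
  have d1: "op1c Pu Pe = [Add rT rBM rIX, Load rV rT] @ [Jz rV (aH Pu Pe)] @ [Jmp (aZ Pu Pe + 3)] @ [Jmp (aH Pu Pe)]"
    by (simp add: op1c_def)
  note c1 = pc(2)[unfolded d1]
  have ca: "code_at ?Q 9 [Add rT rBM rIX, Load rV rT]" using code_at_split1[OF c1] .
  have cb: "code_at ?Q 11 [Jz rV (aH Pu Pe)]" using code_at_split1[OF code_at_split2[OF c1]] by simp
  have cc: "code_at ?Q 12 [Jmp (aZ Pu Pe + 3)]" using code_at_split1[OF code_at_split2[OF code_at_split2[OF c1]]] by simp
  have bmi: "bm + i \<noteq> rOP" "bm + i \<noteq> rIX" "bm + i \<noteq> rT" "bm + i < cap" using f i by auto
  have mbm: "Md (bm + i) = M (bm + i)" using md(3) bmi by auto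
  have mr: "Md rBM = bm" using md(3) ps by (auto simp: pst_def)
  define M2 where "M2 = Md(rT := bm + i, rV := M (bm + i))"
  have "sl [1, i] cap cap [Add rT rBM rIX, Load rV rT] Md = Some M2"
    unfolding M2_def using md mr mbm rc bmi ps[unfolded pst_def] by auto
  from reach_sl'[OF ca this] have e2: "reach ?Q [1, i] cap 2 (9, Md, []) (11, M2, [])" by simp
  have m2: "\<forall>q. \<not> scratch R q \<and> q \<noteq> rOP \<and> q \<noteq> rIX \<longrightarrow> M2 q = M q"
    using md(3) f unfolding M2_def by (auto simp: scratch_def)
  have v2: "\<forall>q. M2 q < cap" using md(4) ps bmi unfolding M2_def pst_def by auto
  have "\<forall>q. q < 7 \<longrightarrow> M2 q = M q" using m2 f by (auto simp: scratch_def)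
  hence ps2: "pst R cap m bm M2" using pst_keep[OF ps _ v2] by blast
  have j: "reach ?Q [1, i] cap 1 (11, M2, []) (if M (bm + i) = 0 then aH Pu Pe else 12, M2, [])"
    using reach_Jz[OF cb, of cap "[1, i]" M2 "[]"] rc unfolding M2_def by auto
  have e12: "reach ?Q [1, i] cap (k1 + 2 + 1) (0, M, []) (if M (bm + i) = 0 then aH Pu Pe else 12, M2, [])"
    using reach_trans[OF reach_trans[OF e1 e2] j] .
  show ?thesis
  proof (cases "M (bm + i) = 0")
    case True
    from reach_run[OF e12[unfolded if_P[OF True]], of F] pc(23) k1 F obtain t W where
      "run ?Q [1, i] cap cap F M = Some (M2, [], t, W)" by auto
    with True ps2 m2 show ?thesis by auto
  next
    case False
    have e3: "reach ?Q [1, i] cap (k1 + 2 + 1 + 1) (0, M, []) (aZ Pu Pe + 3, M2, [])"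
      using reach_trans[OF e12[unfolded if_not_P[OF False]] reach_Jmp[OF cc]] .
    have lq: "length ?Q \<le> Suc (aZ Pu Pe + 3)" using pc(23) by (simp add: aH_def aZ_def)
    have kf: "Suc (k1 + 2 + 1 + 1) \<le> F" using k1 F by simp
    from reach_run_out[OF e3 fin_split(4)[OF pc(22)] lq _ _ kf] rc
    obtain t W Os where "run ?Q [1, i] cap cap F M = Some (M2, Os, t, W)" "Os \<noteq> []" by auto
    with False ps2 m2 show ?thesis by auto
  qed
qed

lemma upd_path:
  assumes oc: "opctx R amax cap capo Bd m bm n" and ps: "pst R cap m bm M" and i: "1 \<le> i" "i \<le> n" "M rIX = i"
    and ca1: "code_at Q s [Add rT rBM rIX, Store rT rB, Mul rT rIX rTHREE, Add rI0 rT rONE, Const rI1 x]"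
    and ca2: "code_at Q (s + 5) (cseg MU R (s + 5) 0 Pu)" and ca3: "code_at Q (s + 5 + sLu Pu) [Jmp H]"
    and rB: "rB = rZ \<or> rB = rONE" and x: "x < cap"
    and mr: "memrel R amax Mo M" and mob: "\<forall>a. Mo a < capo"
    and rn: "run Pu [3 * i + 1, x] capo amax Bd Mo = Some (Mo', rr)"
  shows "\<exists>k M'. k \<le> sblk * Bd + 6 \<and> reach Q inp cap k (s, M, []) (H, M', []) \<and> pst R cap m bm M' \<and>
    memrel R amax Mo' M' \<and> (\<forall>a. Mo' a < capo) \<and> M' (bm + i) = M rB \<and>
    (\<forall>q. \<not> scratch R q \<and> \<not> dsreg R amax q \<and> q \<noteq> rI0 \<and> q \<noteq> rI1 \<and> q \<noteq> bm + i \<longrightarrow> M' q = M q)"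
proof -
  note f = opctx_facts[OF oc]
  have rc: "\<And>q. q \<le> 20 \<Longrightarrow> q < cap" using f by linarith
  have pr: "M rZ = 0" "M rONE = 1" "M rTHREE = 3" "M rBM = bm" "\<forall>q. M q < cap" using ps by (auto simp: pst_def)
  have bmi: "bm + i < cap" "21 \<le> bm + i" "3 * i + 1 < cap" using f i by auto
  have mrb: "M rB < cap" using pr(5) by auto
  define M2 where "M2 = M(rT := bm + i, bm + i := M rB, rT := 3 * i, rI0 := 3 * i + 1, rI1 := x)"
  have "sl inp cap cap [Add rT rBM rIX, Store rT rB, Mul rT rIX rTHREE, Add rI0 rT rONE, Const rI1 x] M = Some M2"
    unfolding M2_def using pr rc bmi mrb x i(3) rB by auto
  from reach_sl'[OF ca1 this] have e1: "reach Q inp cap 5 (s, M, []) (s + 5, M2, [])" by simp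
  have m2: "\<forall>q. \<not> scratch R q \<and> q \<noteq> rI0 \<and> q \<noteq> rI1 \<and> q \<noteq> bm + i \<longrightarrow> M2 q = M q"
    unfolding M2_def using f by (auto simp: scratch_def)
  have v2: "\<forall>q. M2 q < cap" unfolding M2_def using pr(5) bmi x by auto
  have "\<forall>q. q < 7 \<longrightarrow> M2 q = M q" using m2 bmi by (auto simp: scratch_def)
  hence ps2: "pst R cap m bm M2" using pst_keep[OF ps _ v2] by blast
  have mr2: "memrel R amax Mo M2"
    using mr unfolding memrel_def M2_def using f by auto
  have i2: "M2 rI0 = 3 * i + 1" "M2 rI1 = x" unfolding M2_def by auto
  have pa: "parms R amax cap capo Bd" using oc by (simp add: opctx_def)
  from call_pu[OF pa ps2 ca2 _ _ mr2 mob, unfolded i2, OF bmi(3) x rn, of inp "[]"]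
  obtain k M3 where k: "k \<le> sblk * Bd" and e2: "reach Q inp cap k (s + 5, M2, []) (s + 5 + sLu Pu, M3, [])"
    and m3: "memrel R amax Mo' M3" "\<forall>q. \<not> scratch R q \<and> \<not> dsreg R amax q \<longrightarrow> M3 q = M2 q" "\<forall>a. Mo' a < capo" "pst R cap m bm M3"
    by blast
  have e3: "reach Q inp cap (5 + k + 1) (s, M, []) (H, M3, [])"
    using reach_trans[OF reach_trans[OF e1 e2] reach_Jmp[OF ca3]] .
  have "M3 (bm + i) = M2 (bm + i)" using m3(2) bmi f by (auto simp: scratch_def dsreg_def)
  also have "\<dots> = M rB" unfolding M2_def using bmi by auto
  finally have b: "M3 (bm + i) = M rB" .
  have "\<forall>q. \<not> scratch R q \<and> \<not> dsreg R amax q \<and> q \<noteq> rI0 \<and> q \<noteq> rI1 \<and> q \<noteq> bm + i \<longrightarrow> M3 q = M q"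
    using m3(2) m2 by auto
  moreover have "5 + k + 1 \<le> sblk * Bd + 6" using k by simp
  ultimately show ?thesis using e3 m3 b by blast
qed

lemma op23_run:
  assumes oc: "opctx R amax cap capo Bd m bm n" and ps: "pst R cap m bm M" and i: "1 \<le> i" "i \<le> n"
    and op: "op = 2 \<or> op = 3"
    and mr: "memrel R amax Mo M" and mob: "\<forall>a. Mo a < capo"
    and rn: "run Pu [3 * i + 1, if op = 2 then 2 else 3] capo amax Bd Mo = Some (Mo', rr)"
    and F: "sblk * Bd + 20 \<le> F"
  shows "\<exists>M' Os t W. run (po R Pu Pe) [op, i] cap cap F M = Some (M', Os, t, W) \<and>
    pst R cap m bm M' \<and> memrel R amax Mo' M' \<and> (\<forall>a. Mo' a < capo) \<and> M' (bm + i) = (if op = 2 then 1 else 0) \<and>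
    (\<forall>q. R + amax \<le> q \<and> q \<noteq> bm + i \<longrightarrow> M' q = M q)"
proof -
  let ?Q = "po R Pu Pe"
  note f = opctx_facts[OF oc]
  note pc = po_code[of R Pu Pe]
  have ic: "i < cap" using f i by linarith
  from disp_run[OF pc(1) ps _ ic f(9), of op] op obtain k1 Md where
    k1: "k1 \<le> 9" and e1: "reach ?Q [op, i] cap k1 (0, M, []) (dtgt op Pu, Md, [])" and
    md: "Md rOP = op" "Md rIX = i" "\<forall>q. q \<noteq> rOP \<and> q \<noteq> rIX \<and> q \<noteq> rT \<longrightarrow> Md q = M q" "\<forall>q. Md q < cap"
    by auto
  have psd: "pst R cap m bm Md" using pst_keep[OF ps _ md(4)] md(3) by auto
  have mrd: "memrel R amax Mo Md" using mr md(3) f unfolding memrel_def by auto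
  have mdb: "Md rONE = 1" "Md rZ = 0" using psd by (auto simp: pst_def)
  have pa: "parms R amax cap capo Bd" using oc by (simp add: opctx_def)
  obtain k2 M' where k2: "k2 \<le> sblk * Bd + 6" and e2: "reach ?Q [op, i] cap k2 (dtgt op Pu, Md, []) (aH Pu Pe, M', [])"
    and m': "pst R cap m bm M'" "memrel R amax Mo' M'" "\<forall>a. Mo' a < capo" "M' (bm + i) = (if op = 2 then 1 else 0)"
      "\<forall>q. \<not> scratch R q \<and> \<not> dsreg R amax q \<and> q \<noteq> rI0 \<and> q \<noteq> rI1 \<and> q \<noteq> bm + i \<longrightarrow> M' q = Md q"
  proof (cases "op = 2")
    case True
    have ca2: "code_at ?Q (14 + 5) (cseg MU R (14 + 5) 0 Pu)" "code_at ?Q (14 + 5 + sLu Pu) [Jmp (aH Pu Pe)]" using pc(4,5) by simp_all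
    have rn2: "run Pu [3 * i + 1, 2] capo amax Bd Mo = Some (Mo', rr)" using rn True by simp
    have x2: "(2::nat) < cap" using f by linarith
    from upd_path[OF oc psd i md(2) pc(3)[unfolded op2c_def] ca2 _ x2 mrd mob rn2, where inp="[op, i]"]
    show ?thesis using that mdb True unfolding dtgt_def by auto
  next
    case False
    hence o3: "op = 3" using op by simp
    have ca2: "code_at ?Q (aL3 Pu + 5) (cseg MU R (aL3 Pu + 5) 0 Pu)" "code_at ?Q (aL3 Pu + 5 + sLu Pu) [Jmp (aH Pu Pe)]"
      using pc(7,8) by (simp_all add: aL3_def aU3_def)
    have rn2: "run Pu [3 * i + 1, 3] capo amax Bd Mo = Some (Mo', rr)" using rn o3 by simp
    have x2: "(3::nat) < cap" using f by linarith
    from upd_path[OF oc psd i md(2) pc(6)[unfolded op3c_def] ca2 _ x2 mrd mob rn2, where inp="[op, i]"]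
    show ?thesis using that mdb o3 unfolding dtgt_def by auto
  qed
  from reach_trans[OF e1 e2] have e: "reach ?Q [op, i] cap (k1 + k2) (0, M, []) (aH Pu Pe, M', [])" .
  from reach_run[OF e, of F] pc(23) k1 k2 F obtain t W where "run ?Q [op, i] cap cap F M = Some (M', [], t, W)" by auto
  moreover have "\<forall>q. R + amax \<le> q \<and> q \<noteq> bm + i \<longrightarrow> M' q = M q"
    using m'(5) md(3) f by (auto simp: scratch_def dsreg_def)
  ultimately show ?thesis using m' by blast
qed


lemma q_path:
  assumes oc: "opctx R amax cap capo Bd m bm n" and ps: "pst R cap m bm M" and i: "1 \<le> i" "i \<le> n" "M rIX = i"
    and ca1: "code_at Q s [Mul rT rIX rTHREE, ins, Const rI1 x]"
    and ins: "ins = Sub rI0 rT rONE \<and> p = 3 * i - 1 \<or> ins = Add rI0 rT rZ \<and> p = 3 * i"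
    and ca2: "code_at Q (s + 3) (cseg MU R (s + 3) 0 Pu)" and x: "x < cap"
    and mr: "memrel R amax Mo M" and mob: "\<forall>a. Mo a < capo"
    and rn: "run Pu [p, x] capo amax Bd Mo = Some (Mo', rr)"
  shows "\<exists>k M'. k \<le> sblk * Bd + 3 \<and> reach Q inp cap k (s, M, []) (s + 3 + sLu Pu, M', []) \<and> pst R cap m bm M' \<and>
    memrel R amax Mo' M' \<and> (\<forall>a. Mo' a < capo) \<and> M' rIX = i \<and>
    (\<forall>q. \<not> scratch R q \<and> \<not> dsreg R amax q \<and> q \<noteq> rI0 \<and> q \<noteq> rI1 \<longrightarrow> M' q = M q)"
proof -
  note f = opctx_facts[OF oc]
  have rc: "\<And>q. q \<le> 20 \<Longrightarrow> q < cap" using f by linarith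
  have pr: "M rZ = 0" "M rONE = 1" "M rTHREE = 3" "M rBM = bm" "\<forall>q. M q < cap" using ps by (auto simp: pst_def)
  have b3: "3 * i < cap" "p < cap" using f i ins by auto
  define M2 where "M2 = M(rT := 3 * i, rI0 := p, rI1 := x)"
  have "sl inp cap cap [Mul rT rIX rTHREE, ins, Const rI1 x] M = Some M2"
    using ins
  proof
    assume h: "ins = Sub rI0 rT rONE \<and> p = 3 * i - 1"
    show ?thesis unfolding M2_def using h pr rc b3 x i(3) by (auto simp: mult.commute)
  next
    assume h: "ins = Add rI0 rT rZ \<and> p = 3 * i"
    show ?thesis unfolding M2_def using h pr rc b3 x i(3) by (auto simp: mult.commute)
  qed
  from reach_sl'[OF ca1 this] have e1: "reach Q inp cap 3 (s, M, []) (s + 3, M2, [])" by simp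
  have m2: "\<forall>q. \<not> scratch R q \<and> q \<noteq> rI0 \<and> q \<noteq> rI1 \<longrightarrow> M2 q = M q"
    unfolding M2_def using f by (auto simp: scratch_def)
  have v2: "\<forall>q. M2 q < cap" unfolding M2_def using pr(5) b3 x by auto
  have "\<forall>q. q < 7 \<longrightarrow> M2 q = M q" using m2 by (auto simp: scratch_def)
  hence ps2: "pst R cap m bm M2" using pst_keep[OF ps _ v2] by blast
  have mr2: "memrel R amax Mo M2" using mr unfolding memrel_def M2_def using f by auto
  have i2: "M2 rI0 = p" "M2 rI1 = x" unfolding M2_def by auto
  have pa: "parms R amax cap capo Bd" using oc by (simp add: opctx_def)
  from call_pu[OF pa ps2 ca2 _ _ mr2 mob, unfolded i2, OF b3(2) x rn, of inp "[]"]
  obtain k M3 where k: "k \<le> sblk * Bd" and e2: "reach Q inp cap k (s + 3, M2, []) (s + 3 + sLu Pu, M3, [])"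
    and m3: "memrel R amax Mo' M3" "\<forall>q. \<not> scratch R q \<and> \<not> dsreg R amax q \<longrightarrow> M3 q = M2 q" "\<forall>a. Mo' a < capo" "pst R cap m bm M3"
    by blast
  have "M3 rIX = i" using m3(2) i(3) f unfolding M2_def by (auto simp: scratch_def dsreg_def)
  moreover have "\<forall>q. \<not> scratch R q \<and> \<not> dsreg R amax q \<and> q \<noteq> rI0 \<and> q \<noteq> rI1 \<longrightarrow> M3 q = M q"
    using m3(2) m2 by auto
  moreover have "3 + k \<le> sblk * Bd + 3" using k by simp
  ultimately show ?thesis using reach_trans[OF e1 e2] m3 by blast
qed

lemma op4_run:
  assumes oc: "opctx R amax cap capo Bd m bm n" and ps: "pst R cap m bm M" and i: "1 \<le> i" "i \<le> n"
    and mr: "memrel R amax Mo M" and mob: "\<forall>a. Mo a < capo"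
    and r1: "run Pu [3 * i - 1, 1] capo amax Bd Mo = Some (Mq1, rr1)"
    and r2: "run Pu [3 * i, 1] capo amax Bd Mq1 = Some (Mq, rr2)"
    and en: "enum_ok L Pe capo amax Bd w Mq"
    and r3: "run Pu [3 * i - 1, 3] capo amax Bd Mq = Some (Mr1, rr3)"
    and r4: "run Pu [3 * i, 3] capo amax Bd Mr1 = Some (Mr, rr4)"
    and F: "5 * (sblk * Bd) + 9 * Bd + 40 \<le> F"
  shows "\<exists>M' Os t W. run (po R Pu Pe) [4, i] cap cap F M = Some (M', Os, t, W) \<and> (Os \<noteq> []) = (infixes L w = {}) \<and>
    pst R cap m bm M' \<and> memrel R amax Mr M' \<and> (\<forall>a. Mr a < capo) \<and>
    (\<forall>q. R + amax \<le> q \<and> q \<noteq> bm \<longrightarrow> M' q = M q)"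
proof -
  let ?Q = "po R Pu Pe" let ?inp = "[4, i]"
  note f = opctx_facts[OF oc]
  note pc = po_code[of R Pu Pe]
  have rc: "\<And>q. q \<le> 20 \<Longrightarrow> q < cap" using f by linarith
  have pa: "parms R amax cap capo Bd" using oc by (simp add: opctx_def)
  have ic: "i < cap" using f i by linarith
  have nsb: "\<not> scratch R bm" "\<not> dsreg R amax bm" using f by (auto simp: scratch_def dsreg_def)
  from disp_run[OF pc(1) ps _ ic f(9), of 4] obtain k0 Md where
    k0: "k0 \<le> 9" and e0: "reach ?Q ?inp cap k0 (0, M, []) (aL4 Pu, Md, [])" and
    md: "Md rOP = 4" "Md rIX = i" "\<forall>q. q \<noteq> rOP \<and> q \<noteq> rIX \<and> q \<noteq> rT \<longrightarrow> Md q = M q" "\<forall>q. Md q < cap"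
    by (auto simp: dtgt_def)
  have psd: "pst R cap m bm Md" using pst_keep[OF ps _ md(4)] md(3) by auto
  have mrd: "memrel R amax Mo Md" using mr md(3) f unfolding memrel_def by auto
  have x1: "(1::nat) < cap" "(3::nat) < cap" using f by linarith+
  have ca: "code_at ?Q (aL4 Pu + 3) (cseg MU R (aL4 Pu + 3) 0 Pu)" using pc(10) by (simp add: aL4_def aU4a_def)
  from q_path[OF oc psd i md(2) pc(9)[unfolded q1c_def] _ ca x1(1) mrd mob r1, where inp="?inp"]
  obtain k1 N1 where k1: "k1 \<le> sblk * Bd + 3" and e1: "reach ?Q ?inp cap k1 (aL4 Pu, Md, []) (aL4 Pu + 3 + sLu Pu, N1, [])"
    and n1: "pst R cap m bm N1" "memrel R amax Mq1 N1" "\<forall>a. Mq1 a < capo" "N1 rIX = i"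
      "\<forall>q. \<not> scratch R q \<and> \<not> dsreg R amax q \<and> q \<noteq> rI0 \<and> q \<noteq> rI1 \<longrightarrow> N1 q = Md q" by auto
  have ca1: "code_at ?Q (aL4 Pu + 3 + sLu Pu) [Mul rT rIX rTHREE, Add rI0 rT rZ, Const rI1 1]"
    using pc(11) by (simp add: aL4_def aU4a_def q2c_def)
  have ca: "code_at ?Q (aL4 Pu + 3 + sLu Pu + 3) (cseg MU R (aL4 Pu + 3 + sLu Pu + 3) 0 Pu)"
    using pc(12) by (simp add: aL4_def aU4b_def)
  from q_path[OF oc n1(1) i n1(4) ca1 _ ca x1(1) n1(2,3) r2, where inp="?inp"]
  obtain k2 N2 where k2: "k2 \<le> sblk * Bd + 3" and e2: "reach ?Q ?inp cap k2 (aL4 Pu + 3 + sLu Pu, N1, []) (aL4 Pu + 3 + sLu Pu + 3 + sLu Pu, N2, [])"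
    and n2: "pst R cap m bm N2" "memrel R amax Mq N2" "\<forall>a. Mq a < capo" "N2 rIX = i"
      "\<forall>q. \<not> scratch R q \<and> \<not> dsreg R amax q \<and> q \<noteq> rI0 \<and> q \<noteq> rI1 \<longrightarrow> N2 q = N1 q" by auto
  have ca3: "code_at ?Q (aL4 Pu + 3 + sLu Pu + 3 + sLu Pu) [Add rLP rLB rZ, Store rBM rZ]"
    using pc(13) by (simp add: aL4_def aU4b_def q3c_def)
  have pn2: "N2 rZ = 0" "N2 rONE = 1" "N2 rLB = LOGB" "N2 rBM = bm" "\<forall>q. N2 q < cap" using n2(1) by (auto simp: pst_def)
  define M3 where "M3 = N2(rLP := LOGB, bm := 0)"
  have "sl ?inp cap cap [Add rLP rLB rZ, Store rBM rZ] N2 = Some M3"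
    unfolding M3_def using pn2 rc f by auto
  from reach_sl'[OF ca3 this] have e3: "reach ?Q ?inp cap 2 (aL4 Pu + 3 + sLu Pu + 3 + sLu Pu, N2, []) (aE Pu, M3, [])"
    by (simp add: aL4_def aE_def)
  have m3: "\<forall>q. q \<noteq> rLP \<and> q \<noteq> bm \<longrightarrow> M3 q = N2 q" "M3 rLP = LOGB" "M3 bm = 0" unfolding M3_def using f by auto
  have v3: "\<forall>q. M3 q < cap" unfolding M3_def using pn2 rc f by auto
  have "\<forall>q. q < 7 \<longrightarrow> M3 q = N2 q" using m3(1) f by auto
  hence ps3: "pst R cap m bm M3" using pst_keep[OF n2(1) _ v3] by blast
  have mr3: "memrel R amax Mq M3" using n2(2) m3(1) f unfolding memrel_def by auto
  from call_pe[OF pa ps3 m3(2) pc(14) mr3 n2(3) en, where inp="?inp" and Os="[]"]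
  obtain k4 N3 lg where k4: "k4 \<le> sblk * Bd + 1"
    and e4: "reach ?Q ?inp cap k4 (aE Pu, M3, []) (if infixes L w = {} then aE Pu + sLe Pe else aF Pu Pe, N3, [])"
    and li: "loginv R amax M3 lg N3" "length lg \<le> Bd"
    and n3: "\<forall>q. \<not> scratch R q \<and> \<not> dsreg R amax q \<longrightarrow> N3 q = M3 q" "\<forall>q. N3 q < cap" by blast
  have n3b: "N3 bm = 0" "N3 rBM = bm" "N3 rONE = 1" "N3 rLB = LOGB"
    using n3(1) nsb m3(3) ps3 f by (auto simp: pst_def scratch_def dsreg_def)
  define ans where "ans = (if infixes L w = {} then (0::nat) else 1)"
  obtain k5 where k5: "k5 \<le> 1" and e5: "reach ?Q ?inp cap k5 (if infixes L w = {} then aE Pu + sLe Pe else aF Pu Pe, N3, []) (aU Pu Pe, N3(bm := ans), [])"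
  proof (cases "infixes L w = {}")
    case True
    have "N3(bm := ans) = N3" using n3b True unfolding ans_def by auto
    with reach_Jmp[OF pc(15)] True show ?thesis using that[of 1] by simp
  next
    case False
    have "sl ?inp cap cap [Store rBM rONE] N3 = Some (N3(bm := 1))" using n3b rc f by auto
    from reach_sl'[OF pc(16) this] False have "reach ?Q ?inp cap 1 (aF Pu Pe, N3, []) (aU Pu Pe, N3(bm := ans), [])"
      unfolding ans_def by (simp add: aF_def aU_def)
    with False show ?thesis using that[of 1] by simp
  qed
  have v4: "\<forall>q. (N3(bm := ans)) q < cap" using n3(2) x1 unfolding ans_def by auto
  have r4': "(N3(bm := ans)) rLB = LOGB" "(N3(bm := ans)) rONE = 1" using n3b f by auto
  from call_undo[OF pa pc(17) li r4' v4 refl nsb, where inp="?inp" and Os="[]"]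
  obtain k6 N4 where k6: "k6 \<le> 9 * Bd + 2" and e6: "reach ?Q ?inp cap k6 (aU Pu Pe, N3(bm := ans), []) (aU Pu Pe + 9, N4, [])"
    and n4: "\<forall>q. \<not> scratch R q \<longrightarrow> N4 q = (M3(bm := ans)) q" "\<forall>q. N4 q < cap" by blast
  have "\<forall>q. q < 7 \<longrightarrow> N4 q = M3 q" using n4(1) f by (auto simp: scratch_def)
  hence ps4: "pst R cap m bm N4" using pst_keep[OF ps3 _ n4(2)] by blast
  have mr4: "memrel R amax Mq N4" using mr3 n4(1) f unfolding memrel_def by (auto simp: scratch_def)
  have n4i: "N4 rIX = i" "N4 bm = ans" using n4(1) n2(4) m3(1) f by (auto simp: scratch_def)
  have ca: "code_at ?Q (aU Pu Pe + 9 + 3) (cseg MU R (aU Pu Pe + 9 + 3) 0 Pu)" using pc(19) by (simp add: aU_def aU4c_def add_ac)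
  from q_path[OF oc ps4 i n4i(1) pc(18)[unfolded q4c_def] _ ca x1(2) mr4 n2(3) r3, where inp="?inp"]
  obtain k7 N5 where k7: "k7 \<le> sblk * Bd + 3" and e7: "reach ?Q ?inp cap k7 (aU Pu Pe + 9, N4, []) (aU Pu Pe + 9 + 3 + sLu Pu, N5, [])"
    and n5: "pst R cap m bm N5" "memrel R amax Mr1 N5" "\<forall>a. Mr1 a < capo" "N5 rIX = i"
      "\<forall>q. \<not> scratch R q \<and> \<not> dsreg R amax q \<and> q \<noteq> rI0 \<and> q \<noteq> rI1 \<longrightarrow> N5 q = N4 q" by auto
  have ca1: "code_at ?Q (aU Pu Pe + 9 + 3 + sLu Pu) [Mul rT rIX rTHREE, Add rI0 rT rZ, Const rI1 3]"
    using pc(20) by (simp add: aU_def aU4c_def q5c_def add_ac)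
  have ca: "code_at ?Q (aU Pu Pe + 9 + 3 + sLu Pu + 3) (cseg MU R (aU Pu Pe + 9 + 3 + sLu Pu + 3) 0 Pu)"
    using pc(21) by (simp add: aU_def aU4d_def add_ac)
  from q_path[OF oc n5(1) i n5(4) ca1 _ ca x1(2) n5(2,3) r4, where inp="?inp"]
  obtain k8 N6 where k8: "k8 \<le> sblk * Bd + 3" and e8: "reach ?Q ?inp cap k8 (aU Pu Pe + 9 + 3 + sLu Pu, N5, []) (aU Pu Pe + 9 + 3 + sLu Pu + 3 + sLu Pu, N6, [])"
    and n6: "pst R cap m bm N6" "memrel R amax Mr N6" "\<forall>a. Mr a < capo" "N6 rIX = i"
      "\<forall>q. \<not> scratch R q \<and> \<not> dsreg R amax q \<and> q \<noteq> rI0 \<and> q \<noteq> rI1 \<longrightarrow> N6 q = N5 q" by auto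
  have zz: "aU Pu Pe + 9 + 3 + sLu Pu + 3 + sLu Pu = aZ Pu Pe" by (simp add: aU_def aZ_def add_ac)
  note fc = fin_split[OF pc(22)]
  have n6b: "N6 bm = ans" "N6 rBM = bm" using n6(5) n5(5) n4i nsb f n6(1) by (auto simp: pst_def scratch_def dsreg_def)
  define N7 where "N7 = N6(rV := ans)"
  have "sl ?inp cap cap [Load rV rBM] N6 = Some N7" unfolding N7_def using n6b rc f x1 unfolding ans_def by auto
  from reach_sl'[OF fc(1) this] have e9: "reach ?Q ?inp cap 1 (aZ Pu Pe, N6, []) (aZ Pu Pe + 1, N7, [])" by simp
  have j: "reach ?Q ?inp cap 1 (aZ Pu Pe + 1, N7, []) (if ans = 0 then aZ Pu Pe + 3 else Suc (aZ Pu Pe + 1), N7, [])"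
    using reach_Jz[OF fc(2), of cap ?inp N7 "[]"] rc unfolding N7_def by auto
  have eall: "reach ?Q ?inp cap (k0 + (k1 + (k2 + (2 + (k4 + (k5 + (k6 + (k7 + (k8 + (1 + 1)))))))))) (0, M, [])
      (if ans = 0 then aZ Pu Pe + 3 else Suc (aZ Pu Pe + 1), N7, [])"
    using reach_trans[OF e0 reach_trans[OF e1 reach_trans[OF e2 reach_trans[OF e3 reach_trans[OF e4
      reach_trans[OF e5 reach_trans[OF e6 reach_trans[OF e7 reach_trans[OF e8[unfolded zz] reach_trans[OF e9 j]]]]]]]]]] .
  define K where "K = k0 + (k1 + (k2 + (2 + (k4 + (k5 + (k6 + (k7 + (k8 + (1 + 1)))))))))"
  have Kb: "K + 2 \<le> F" unfolding K_def using k0 k1 k2 k4 k5 k6 k7 k8 F by linarith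
  have v7: "\<forall>q. N7 q < cap" using n6(1) x1 unfolding N7_def pst_def ans_def by auto
  have "\<forall>q. q < 7 \<longrightarrow> N7 q = N6 q" unfolding N7_def by auto
  hence ps7: "pst R cap m bm N7" using pst_keep[OF n6(1) _ v7] by blast
  have mr7: "memrel R amax Mr N7" using n6(2) f unfolding memrel_def N7_def by auto
  have keep: "\<forall>q. R + amax \<le> q \<and> q \<noteq> bm \<longrightarrow> N7 q = M q"
  proof (intro allI impI)
    fix q assume q: "R + amax \<le> q \<and> q \<noteq> bm"
    hence ns: "\<not> scratch R q" "\<not> dsreg R amax q" "q \<noteq> rI0" "q \<noteq> rI1" "q \<noteq> rV" "q \<noteq> rLP" "q \<noteq> rOP" "q \<noteq> rIX" "q \<noteq> rT"
      using f by (auto simp: scratch_def dsreg_def)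
    have "N7 q = N6 q" using ns unfolding N7_def by simp
    also have "\<dots> = N5 q" using n6(5) ns by auto
    also have "\<dots> = N4 q" using n5(5) ns by auto
    also have "\<dots> = M3 q" using n4(1) ns q by auto
    also have "\<dots> = N2 q" using m3(1) ns q by auto
    also have "\<dots> = N1 q" using n2(5) ns by auto
    also have "\<dots> = Md q" using n1(5) ns by auto
    also have "\<dots> = M q" using md(3) ns by auto
    finally show "N7 q = M q" .
  qed
  show ?thesis
  proof (cases "ans = 0")
    case True
    hence emp: "infixes L w = {}" unfolding ans_def by (auto split: if_splits)
    have lq: "length ?Q \<le> Suc (aZ Pu Pe + 3)" using pc(23) by (simp add: aH_def aZ_def)
    from reach_run_out[OF eall[folded K_def, unfolded if_P[OF True]] fc(4) lq _ _, of F] rc Kb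
    obtain t W Os where "run ?Q ?inp cap cap F M = Some (N7, Os, t, W)" "Os \<noteq> []" by auto
    with emp ps7 mr7 n6(3) keep show ?thesis by blast
  next
    case False
    hence nemp: "infixes L w \<noteq> {}" unfolding ans_def by (auto split: if_splits)
    have e10: "reach ?Q ?inp cap (K + 1) (0, M, []) (aH Pu Pe, N7, [])"
      using reach_trans[OF eall[folded K_def, unfolded if_not_P[OF False]] reach_Jmp] fc(3) by simp
    from reach_run[OF e10, of F] pc(23) Kb obtain t W where "run ?Q ?inp cap cap F M = Some (N7, [], t, W)" by auto
    with nemp ps7 mr7 n6(3) keep show ?thesis by blast
  qed
qed


definition prol :: "nat \<Rightarrow> nat \<Rightarrow> instr list" where
  "prol R Bd = [Input rN rZ, Const rONE 1, Const rTHREE 3, Const rRR R, Const rLB 21, Mul rT rN rTHREE,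
     Add rMM rT rONE, Const rT2 Bd, Add rT rMM rONE, Mul rT rT rT2, Add rBM rT rRR]"

definition pii :: "nat \<Rightarrow> nat \<Rightarrow> instr list \<Rightarrow> instr list" where
  "pii R Bd Pb = prol R Bd @ cseg MB R 11 0 Pb"

lemma inp_MB:
  fixes n :: nat
  defines "m \<equiv> 3 * n + 1"
  shows "(if v < length (m # map code (wordS n {})) then (m # map code (wordS n {})) ! v else 0) =
    (if v = 0 then m else if v = 1 then 0 else if v \<le> m then 3 else 0)"
proof (cases v)
  case 0 then show ?thesis by simp
next
  case (Suc v')
  show ?thesis
  proof (cases "v' < m")
    case True
    hence "(m # map code (wordS n {})) ! v = code (gS {} v')" using Suc by (simp add: wordS_def m_def del: upt_Suc)
    then show ?thesis using Suc True by (auto simp: gS_def m_def)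
  next
    case False
    then show ?thesis using Suc by (simp add: wordS_def m_def)
  qed
qed

lemma pi_run:
  assumes oc: "opctx R amax cap capo Bd m bm n" and am: "amax = Bd * (m + 1)" and c0: "0 < capo"
    and rn: "run Pb (m # map code (wordS n {})) capo amax (Bd * (m + 1)) (\<lambda>_. 0) = Some (M0ds, rr)"
  shows "\<exists>fuel M0 Os t W. run (pii R Bd Pb) [n] cap cap fuel (\<lambda>_. 0) = Some (M0, Os, t, W) \<and> pst R cap m bm M0 \<and>
    memrel R amax M0ds M0 \<and> (\<forall>a. M0ds a < capo) \<and> (\<forall>j. M0 (bm + j) = 0)"
proof -
  note f = opctx_facts[OF oc]
  have rc: "\<And>q. q \<le> 20 \<Longrightarrow> q < cap" using f by linarith
  have bds: "Bd < cap" "R < cap" "n < cap" "3 * n < cap" "m < cap" "m + 1 < cap" "(m + 1) * Bd < cap" "(m + 1) * Bd + R < cap" "LOGB < cap"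
    using f am by (auto simp: algebra_simps)
  define Mp where "Mp = (\<lambda>_::nat. 0::nat)(rN := n, rONE := 1, rTHREE := 3, rRR := R, rLB := 21, rT := 3 * n,
     rMM := m, rT2 := Bd, rT := m + 1, rT := (m + 1) * Bd, rBM := bm)"
  have "sl [n] cap cap (prol R Bd) (\<lambda>_. 0) = Some Mp"
    unfolding prol_def Mp_def using bds rc f am by (auto simp: algebra_simps)
  have self: "code_at (pii R Bd Pb) 0 (prol R Bd @ cseg MB R 11 0 Pb)" by (simp add: pii_def code_at_def)
  have l11: "length (prol R Bd) = 11" by (simp add: prol_def)
  have cp: "code_at (pii R Bd Pb) 0 (prol R Bd)" "code_at (pii R Bd Pb) 11 (cseg MB R 11 0 Pb)"
    using code_at_split1[OF self] code_at_split2[OF self] l11 by simp_all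
  from reach_sl'[OF cp(1) \<open>sl [n] cap cap (prol R Bd) (\<lambda>_. 0) = Some Mp\<close>] have e1: "reach (pii R Bd Pb) [n] cap 11 (0, \<lambda>_. 0, []) (11, Mp, [])"
    by (simp add: prol_def)
  have mp: "Mp rZ = 0" "Mp rONE = 1" "Mp rTHREE = 3" "Mp rRR = R" "Mp rMM = m" "Mp rBM = bm" "Mp rLB = LOGB"
    "\<forall>q. Mp q < cap" "\<And>q. 21 \<le> q \<Longrightarrow> Mp q = 0"
    unfolding Mp_def using bds rc f am by (auto simp: algebra_simps)
  have iv: "\<forall>v. (if v < length (m # map code (wordS n {})) then (m # map code (wordS n {})) ! v else 0) = ival MB Mp v"
  proof
    fix v show "(if v < length (m # map code (wordS n {})) then (m # map code (wordS n {})) ! v else 0) = ival MB Mp v"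
      using inp_MB[of v n] mp(5) f(6) by (simp only: ival.simps)
  qed
  have cx: "ctx MB R cap capo amax Bd Mp (m # map code (wordS n {}))"
    unfolding ctx_def using mp(1-5) f bds iv by auto
  from rn obtain pf Os' T W where st: "steps Pb (m # map code (wordS n {})) capo amax (Bd * (m + 1)) (0, \<lambda>_. 0, [], 0, {}) = Some (pf, M0ds, Os', T, W)"
    and hl: "length Pb \<le> pf" unfolding run_def by (auto split: option.splits if_splits)
  have mr0: "memrel R amax (\<lambda>_. 0) Mp" unfolding memrel_def using mp(9) f by auto
  from run_sim[OF cx cp(2) st hl mr0 _ _, of "[n]" "[]" 0 "{}"] c0
  obtain k' Mc' Wc' where e: "steps (pii R Bd Pb) [n] cap cap k' (11, Mp, [], 0, {}) = Some (11 + sblk * length Pb, Mc', [], 0 + k', Wc')"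
    and r: "memrel R amax M0ds Mc'" "\<forall>q. \<not> scratch R q \<and> \<not> dsreg R amax q \<longrightarrow> Mc' q = Mp q" "\<forall>a. M0ds a < capo"
    by auto
  from reach_of[of _ _ _ k' 11 Mp "[]" 0 "{}"] e have e2: "reach (pii R Bd Pb) [n] cap k' (11, Mp, []) (11 + sblk * length Pb, Mc', [])" by simp
  have lp: "length (pii R Bd Pb) \<le> 11 + sblk * length Pb" unfolding pii_def by (simp add: prol_def)
  from reach_run[OF reach_trans[OF e1 e2] lp order_refl] obtain t W' where
    rr': "run (pii R Bd Pb) [n] cap cap (11 + k') (\<lambda>_. 0) = Some (Mc', [], t, W')" by auto
  have v: "\<forall>q. Mc' q < cap" using steps_vals[OF e] mp(8) by simp
  have "\<forall>q. q < 7 \<longrightarrow> Mc' q = Mp q" using r(2) f by (auto simp: scratch_def dsreg_def)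
  hence ps: "pst R cap m bm Mc'" using v mp unfolding pst_def by auto
  have bz: "\<forall>j. Mc' (bm + j) = 0" using r(2) mp(9) f by (auto simp: scratch_def dsreg_def)
  from rr' ps r(1,3) bz show ?thesis by blast
qed


lemma upds_append: "upds Pu cap amax Bd M (xs @ ys) = Option.bind (upds Pu cap amax Bd M xs) (\<lambda>M'. upds Pu cap amax Bd M' ys)"
  by (induction xs arbitrary: M) (auto split: option.splits)

lemma upds_one: "upds Pu cap amax Bd M [(p, x)] = Some M' \<Longrightarrow> \<exists>r. run Pu [p, code x] cap amax Bd M = Some (M', r)"
  by (auto split: option.splits)

lemma upds_two: "upds Pu cap amax Bd M [(p, x), (p', x')] = Some M' \<Longrightarrow>
   \<exists>M1 r r'. run Pu [p, code x] cap amax Bd M = Some (M1, r) \<and> run Pu [p', code x'] cap amax Bd M1 = Some (M', r')"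
  by (auto split: option.splits)

lemma apply_upds_append: "apply_upds w (xs @ ys) = apply_upds (apply_upds w xs) ys"
  by (simp add: apply_upds_def)

lemma apply_upds_one: "apply_upds w [(p, x)] = w[p - 1 := x]" by (simp add: apply_upds_def)
lemma apply_upds_two: "apply_upds w [(p, x), (p', x')] = w[p - 1 := x, p' - 1 := x']" by (simp add: apply_upds_def)

lemma valid_upds_append: "valid_upds n (xs @ ys) \<longleftrightarrow> valid_upds n xs \<and> valid_upds n ys"
  by (auto simp: valid_upds_def)

lemma word_ins: "1 \<le> i \<Longrightarrow> i \<le> n \<Longrightarrow> (wordS n S)[3 * i := C] = wordS n (insert i S)"
  by (rule nth_equalityI) (auto simp: wordS_def gS_def nth_list_update simp del: upt_Suc)

lemma word_del: "1 \<le> i \<Longrightarrow> i \<le> n \<Longrightarrow> (wordS n S)[3 * i := E] = wordS n (S - {i})"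
  by (rule nth_equalityI) (auto simp: wordS_def gS_def nth_list_update simp del: upt_Suc)

lemma word_q: "1 \<le> i \<Longrightarrow> i \<le> n \<Longrightarrow> (wordS n S)[3 * i - 2 := B, 3 * i - 1 := B] = map (qS S i) [0..<3 * n + 1]"
  by (rule nth_equalityI) (auto simp: wordS_def qS_def nth_list_update simp del: upt_Suc)

lemma word_r: "1 \<le> i \<Longrightarrow> i \<le> n \<Longrightarrow> (map (qS S i) [0..<3 * n + 1])[3 * i - 2 := E, 3 * i - 1 := E] = wordS n S"
proof (rule nth_equalityI)
  fix k assume i: "1 \<le> i" "i \<le> n" and k: "k < length ((map (qS S i) [0..<3 * n + 1])[3 * i - 2 := E, 3 * i - 1 := E])"
  have a: "k = 3 * i - 2 \<or> k = 3 * i - 1 \<Longrightarrow> gS S k = E"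
  proof -
    assume "k = 3 * i - 2 \<or> k = 3 * i - 1"
    hence "k mod 3 \<noteq> 0" "k \<noteq> 0" using i by (auto simp: mod_eq_0_iff_dvd, presburger+)
    thus ?thesis by (simp add: gS_def)
  qed
  let ?xs = "map (qS S i) [0..<3 * n + 1]"
  have L: "length ?xs = 3 * n + 1" by simp
  have kk: "k < 3 * n + 1" using k by simp
  have w: "wordS n S ! k = gS S k" using kk unfolding wordS_def by (simp del: upt_Suc)
  have x: "?xs ! k = qS S i k" using kk by (simp del: upt_Suc)
  have b: "3 * i - 1 < 3 * n + 1" "3 * i - 2 < 3 * n + 1" using i by auto
  show "?xs[3 * i - 2 := E, 3 * i - 1 := E] ! k = wordS n S ! k"
  proof (cases "k = 3 * i - 1")
    case True then show ?thesis using a w b by simp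
  next
    case f1: False
    show ?thesis
    proof (cases "k = 3 * i - 2")
      case True then show ?thesis using a w b f1 by simp
    next
      case False
      then show ?thesis using f1 w x by (simp add: qS_def)
    qed
  qed
qed (simp add: wordS_def)


definition INV :: "instr list \<Rightarrow> nat \<Rightarrow> nat \<Rightarrow> nat \<Rightarrow> nat \<Rightarrow> nat \<Rightarrow> nat \<Rightarrow> nat \<Rightarrow> nat \<Rightarrow> mem \<Rightarrow> nat set \<Rightarrow> mem \<Rightarrow> bool" where
  "INV Pu R Bd n capo amax cap m bm M0ds S M \<longleftrightarrow> S \<subseteq> {1..n} \<and> pst R cap m bm M \<and>
     (\<forall>j. 1 \<le> j \<and> j \<le> n \<longrightarrow> M (bm + j) = (if j \<in> S then 1 else 0)) \<and>
     (\<exists>us Mds. valid_upds m us \<and> upds Pu capo amax Bd M0ds us = Some Mds \<and> apply_upds (wordS n {}) us = wordS n S \<and>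
        memrel R amax Mds M \<and> (\<forall>a. Mds a < capo))"

lemma u1_ind:
  assumes oc: "opctx R amax cap capo Bd m bm n"
    and T: "\<forall>us. valid_upds m us \<longrightarrow> (\<exists>Mds. upds Pu capo amax Bd M0ds us = Some Mds \<and>
              enum_ok L3 Pe capo amax Bd (apply_upds (wordS n {}) us) Mds)"
    and Cst: "Cst = 5 * (sblk * Bd) + 9 * Bd + 40"
  shows "INV Pu R Bd n capo amax cap m bm M0ds S M \<Longrightarrow> \<forall>(op, i)\<in>set ops. op \<in> {1, 2, 3, 4} \<and> 1 \<le> i \<and> i \<le> n \<Longrightarrow>
    u1_run (po R Pu Pe) cap Cst M S ops"
proof (induction ops arbitrary: S M)
  case Nil then show ?case by simp
next
  case (Cons oi ops)
  obtain op i where oi: "oi = (op, i)" by (cases oi) auto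
  from Cons.prems(2) oi have opi: "op \<in> {1, 2, 3, 4}" "1 \<le> i" "i \<le> n"
    and rest: "\<forall>(op, i)\<in>set ops. op \<in> {1, 2, 3, 4} \<and> 1 \<le> i \<and> i \<le> n" by auto
  note f = opctx_facts[OF oc]
  from Cons.prems(1) have S: "S \<subseteq> {1..n}" and ps: "pst R cap m bm M"
    and bmp: "\<forall>j. 1 \<le> j \<and> j \<le> n \<longrightarrow> M (bm + j) = (if j \<in> S then 1 else 0)"
    unfolding INV_def by auto
  from Cons.prems(1) obtain us Mds where us: "valid_upds m us" "upds Pu capo amax Bd M0ds us = Some Mds"
    "apply_upds (wordS n {}) us = wordS n S" "memrel R amax Mds M" "\<forall>a. Mds a < capo"
    unfolding INV_def by blast
  have F: "20 \<le> Cst" "sblk * Bd + 20 \<le> Cst" "5 * (sblk * Bd) + 9 * Bd + 40 \<le> Cst" using Cst by auto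
  consider "op = 1" | "op = 2 \<or> op = 3" | "op = 4" using opi(1) by auto
  then show ?case
  proof cases
    case 1
    from op1_run[OF oc ps opi(2,3) F(1), of Pu Pe] obtain M' Os t W where
      r: "run (po R Pu Pe) [1, i] cap cap Cst M = Some (M', Os, t, W)" "(Os \<noteq> []) = (M (bm + i) \<noteq> 0)"
        "pst R cap m bm M'" "\<forall>q. \<not> scratch R q \<and> q \<noteq> rOP \<and> q \<noteq> rIX \<longrightarrow> M' q = M q" by blast
    have ans: "(Os \<noteq> []) = (i \<in> S)" using r(2) bmp opi by auto
    have inv: "INV Pu R Bd n capo amax cap m bm M0ds S M'"
    proof -
      have "\<forall>j. 1 \<le> j \<and> j \<le> n \<longrightarrow> M' (bm + j) = (if j \<in> S then 1 else 0)"
        using r(4) bmp f by (auto simp: scratch_def)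
      moreover have "memrel R amax Mds M'" using us(4) r(4) f unfolding memrel_def by (auto simp: scratch_def)
      ultimately show ?thesis unfolding INV_def using S r(3) us by blast
    qed
    from Cons.IH[OF inv rest] show ?thesis using r(1) ans 1 oi by (simp add: u1_spec_def)
  next
    case 2
    let ?x = "if op = 2 then C else E"
    let ?S' = "if op = 2 then insert i S else S - {i}"
    let ?us' = "us @ [(3 * i + 1, ?x)]"
    have v: "valid_upds m ?us'" using us(1) opi f by (auto simp: valid_upds_def)
    from T v obtain Mds' where u': "upds Pu capo amax Bd M0ds ?us' = Some Mds'" by blast
    hence "upds Pu capo amax Bd Mds [(3 * i + 1, ?x)] = Some Mds'" using us(2) by (simp add: upds_append)
    from upds_one[OF this] obtain rr where "run Pu [3 * i + 1, code ?x] capo amax Bd Mds = Some (Mds', rr)" by blast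
    hence rn: "run Pu [3 * i + 1, if op = 2 then 2 else 3] capo amax Bd Mds = Some (Mds', rr)"
      by (cases "op = 2") auto
    from op23_run[OF oc ps opi(2,3) 2 us(4) us(5) rn F(2), of Pe] obtain M' Os t W where
      r: "run (po R Pu Pe) [op, i] cap cap Cst M = Some (M', Os, t, W)" "pst R cap m bm M'" "memrel R amax Mds' M'"
        "\<forall>a. Mds' a < capo" "M' (bm + i) = (if op = 2 then 1 else 0)" "\<forall>q. R + amax \<le> q \<and> q \<noteq> bm + i \<longrightarrow> M' q = M q"
      by blast
    have inv: "INV Pu R Bd n capo amax cap m bm M0ds ?S' M'"
    proof -
      have "?S' \<subseteq> {1..n}" using S opi by auto
      moreover have "\<forall>j. 1 \<le> j \<and> j \<le> n \<longrightarrow> M' (bm + j) = (if j \<in> ?S' then 1 else 0)"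
      proof (intro allI impI)
        fix j assume j: "1 \<le> j \<and> j \<le> n"
        show "M' (bm + j) = (if j \<in> ?S' then 1 else 0)"
        proof (cases "j = i")
          case True then show ?thesis using r(5) by auto
        next
          case False
          hence "M' (bm + j) = M (bm + j)" using r(6) f by auto
          then show ?thesis using bmp j False by auto
        qed
      qed
      moreover have "apply_upds (wordS n {}) ?us' = wordS n ?S'"
        using us(3) word_ins[OF opi(2,3)] word_del[OF opi(2,3)] by (simp add: apply_upds_append apply_upds_one)
      ultimately show ?thesis unfolding INV_def using r(2,3,4) v u' by blast
    qed
    from Cons.IH[OF inv rest] 2 show ?thesis using r(1) oi by (auto simp: u1_spec_def)
  next
    case 3
    let ?us1 = "us @ [(3 * i - 1, B), (3 * i, B)]"
    let ?us2 = "?us1 @ [(3 * i - 1, E), (3 * i, E)]"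
    have v1: "valid_upds m ?us1" using us(1) opi f by (auto simp: valid_upds_def)
    have v2: "valid_upds m ?us2" using v1 opi f by (auto simp: valid_upds_def)
    from T v1 obtain Mq where u1: "upds Pu capo amax Bd M0ds ?us1 = Some Mq"
      and en: "enum_ok L3 Pe capo amax Bd (apply_upds (wordS n {}) ?us1) Mq" by blast
    from T v2 obtain Mr where u2: "upds Pu capo amax Bd M0ds ?us2 = Some Mr" by blast
    have "upds Pu capo amax Bd Mds [(3 * i - 1, B), (3 * i, B)] = Some Mq" using u1 us(2) by (simp add: upds_append)
    from upds_two[OF this] obtain Mq1 r1 r2 where rq: "run Pu [3 * i - 1, 1] capo amax Bd Mds = Some (Mq1, r1)"
      "run Pu [3 * i, 1] capo amax Bd Mq1 = Some (Mq, r2)" by auto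
    have "upds Pu capo amax Bd Mq [(3 * i - 1, E), (3 * i, E)] = Some Mr"
      using u2 by (subst (asm) upds_append) (simp only: u1 Option.bind.simps)
    from upds_two[OF this] obtain Mr1 r3 r4 where rr: "run Pu [3 * i - 1, 3] capo amax Bd Mq = Some (Mr1, r3)"
      "run Pu [3 * i, 3] capo amax Bd Mr1 = Some (Mr, r4)" by auto
    from op4_run[OF oc ps opi(2,3) us(4,5) rq en rr F(3)] obtain M' Os t W where
      r: "run (po R Pu Pe) [4, i] cap cap Cst M = Some (M', Os, t, W)"
        "(Os \<noteq> []) = (infixes L3 (apply_upds (wordS n {}) ?us1) = {})"
        "pst R cap m bm M'" "memrel R amax Mr M'" "\<forall>a. Mr a < capo" "\<forall>q. R + amax \<le> q \<and> q \<noteq> bm \<longrightarrow> M' q = M q"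
      by blast
    have wq: "apply_upds (wordS n {}) ?us1 = map (qS S i) [0..<3 * n + 1]"
    proof -
      have "apply_upds (wordS n {}) ?us1 = (wordS n S)[3 * i - 1 - 1 := B, 3 * i - 1 := B]"
        using us(3) by (simp only: apply_upds_append apply_upds_two)
      also have "3 * i - 1 - 1 = 3 * i - 2" by simp
      finally show ?thesis using word_q[OF opi(2,3)] by simp
    qed
    have ans: "(Os \<noteq> []) = (\<forall>j\<in>S. i \<le> j)" using r(2) wq qword_infixes[OF S opi(2,3)] by simp
    have inv: "INV Pu R Bd n capo amax cap m bm M0ds S M'"
    proof -
      have "\<forall>j. 1 \<le> j \<and> j \<le> n \<longrightarrow> M' (bm + j) = (if j \<in> S then 1 else 0)"
        using r(6) bmp f by auto
      moreover have "apply_upds (wordS n {}) ?us2 = wordS n S"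
      proof -
        have "apply_upds (wordS n {}) ?us2 = (map (qS S i) [0..<3 * n + 1])[3 * i - 1 - 1 := E, 3 * i - 1 := E]"
          using wq by (simp only: apply_upds_append apply_upds_two)
        also have "3 * i - 1 - 1 = 3 * i - 2" by simp
        finally show ?thesis using word_r[OF opi(2,3)] by simp
      qed
      ultimately show ?thesis unfolding INV_def using S r(3,4,5) v2 u2 by blast
    qed
    from Cons.IH[OF inv rest] show ?thesis using r(1) ans 3 oi by (simp add: u1_spec_def)
  qed
qed


lemma bounds:
  fixes n K0 Bd :: nat
  defines "R \<equiv> LOGB + 2 * Bd + 1" and "m \<equiv> 3 * n + 1"
  shows "opctx R (Bd * (m + 1)) ((n + 2) ^ (2 * K0 + R + 3 * Bd + 4)) ((m + 2) ^ K0) Bd m (R + Bd * (m + 1)) n \<and> 0 < (m + 2) ^ K0"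
proof -
  let ?j = "R + 3 * Bd + 3"
  let ?A = "(n + 2) ^ (2 * K0)" let ?B = "(n + 2) ^ (R + 3 * Bd + 4)"
  have cap: "(n + 2) ^ (2 * K0 + R + 3 * Bd + 4) = ?A * ?B" by (simp add: power_add add.assoc)
  have "(m + 2) ^ K0 \<le> ((n + 2) ^ 2) ^ K0"
    by (rule power_mono) (auto simp: m_def power2_eq_square)
  hence A: "(m + 2) ^ K0 \<le> ?A" by (simp add: power_mult)
  have c0: "0 < (m + 2) ^ K0" by simp
  have "2 ^ ?j \<le> (n + 2) ^ ?j" by (rule power_mono) auto
  moreover have "?j < 2 ^ ?j" by (rule less_exp)
  ultimately have "?j + 1 \<le> (n + 2) ^ ?j" by linarith
  hence "(n + 2) * (?j + 1) \<le> (n + 2) * (n + 2) ^ ?j" by (rule mult_le_mono2)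
  moreover have "(n + 2) * (n + 2) ^ ?j = ?B"
  proof -
    have "R + 3 * Bd + 4 = Suc ?j" by simp
    hence "?B = (n + 2) ^ Suc ?j" by (simp only:)
    thus ?thesis by (simp only: power_Suc)
  qed
  ultimately have B0: "(n + 2) * (?j + 1) \<le> ?B" by (rule ord_le_eq_trans)
  have j1: "?j + 1 = R + 3 * Bd + 4" by simp
  from B0 have B: "(n + 2) * (R + 3 * Bd + 4) \<le> ?B" unfolding j1 .
  have A1: "1 \<le> ?A" using A c0 by linarith
  have B1: "1 \<le> ?B" using B by (metis le_trans less_one not_le_imp_less mult_is_0 zero_neq_numeral add_eq_0_iff_both_eq_0)
  have AB1: "?B \<le> ?A * ?B" using mult_le_mono1[OF A1, of ?B] by simp
  have "?A \<le> ?A * ?B" using mult_le_mono2[OF B1, of ?A] by simp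
  hence AB2: "(m + 2) ^ K0 \<le> ?A * ?B" using A by linarith
  note AB = AB1 AB2
  have e1: "(n + 2) * (R + 3 * Bd + 4) = R * n + 2 * R + 3 * (Bd * n) + 6 * Bd + 4 * n + 8" by (simp add: algebra_simps)
  have e2: "R + Bd * (m + 1) + n = R + 3 * (Bd * n) + 2 * Bd + n" by (simp add: m_def algebra_simps)
  have "R + Bd * (m + 1) + n < ?B" using B e1 e2 by linarith
  hence g1: "R + Bd * (m + 1) + n < ?A * ?B" using AB1 by linarith
  have "3 * n + 2 < ?B" "4 \<le> ?B" using B e1 by linarith+
  hence g2: "3 * n + 2 < ?A * ?B" "4 \<le> ?A * ?B" using AB1 by linarith+
  have g3: "LOGB + 2 * Bd < R" by (simp add: R_def)
  have g4: "R + Bd * (m + 1) \<le> ?A * ?B" using g1 by linarith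
  show ?thesis unfolding opctx_def parms_def cap using g1 g2 g3 g4 AB2 c0 by (simp add: m_def)
qed

lemma tract_refutes:
  assumes "tractable L3"
  shows "\<not> prefix_U1_hyp"
proof -
  from assms obtain Pb Pu Pe K0 Bd where T: "\<forall>w us. valid_upds (length w) us \<longrightarrow>
     (case run Pb (length w # map code w) ((length w + 2) ^ K0) (Bd * (length w + 1)) (Bd * (length w + 1)) (\<lambda>_. 0) of
        None \<Rightarrow> False
      | Some (M0, _) \<Rightarrow>
          (case upds Pu ((length w + 2) ^ K0) (Bd * (length w + 1)) Bd M0 us of
             None \<Rightarrow> False
           | Some M \<Rightarrow> enum_ok L3 Pe ((length w + 2) ^ K0) (Bd * (length w + 1)) Bd (apply_upds w us) M))"
    unfolding tractable_def Let_def by blast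
  define R where "R = LOGB + 2 * Bd + 1"
  define Cst where "Cst = 5 * (sblk * Bd) + 9 * Bd + 40"
  define K where "K = 2 * K0 + R + 3 * Bd + 4"
  have main: "\<forall>n ops. (\<forall>(op, i)\<in>set ops. op \<in> {1, 2, 3, 4} \<and> 1 \<le> i \<and> i \<le> n) \<longrightarrow>
      (\<exists>fuel M0 Os t W. run (pii R Bd Pb) [n] ((n + 2) ^ K) ((n + 2) ^ K) fuel (\<lambda>_. 0) = Some (M0, Os, t, W) \<and>
         u1_run (po R Pu Pe) ((n + 2) ^ K) Cst M0 {} ops)"
  proof (intro allI impI)
    fix n :: nat and ops :: "(nat \<times> nat) list"
    assume vo: "\<forall>(op, i)\<in>set ops. op \<in> {1, 2, 3, 4} \<and> 1 \<le> i \<and> i \<le> n"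
    define m where "m = 3 * n + 1"
    define capo where "capo = (m + 2) ^ K0"
    define amax where "amax = Bd * (m + 1)"
    define bm where "bm = R + amax"
    define cap where "cap = (n + 2) ^ K"
    have bo: "opctx R amax cap capo Bd m bm n" "0 < capo"
      using bounds[of Bd n K0] unfolding R_def m_def capo_def amax_def bm_def cap_def K_def by auto
    let ?w0 = "wordS n {}"
    have lw: "length ?w0 = m" by (simp add: m_def)
    have T': "valid_upds m us \<Longrightarrow>
     (case run Pb (m # map code ?w0) capo amax amax (\<lambda>_. 0) of
        None \<Rightarrow> False
      | Some (M0, _) \<Rightarrow>
          (case upds Pu capo amax Bd M0 us of
             None \<Rightarrow> False
           | Some M \<Rightarrow> enum_ok L3 Pe capo amax Bd (apply_upds ?w0 us) M))" for us
      using T[rule_format, of ?w0 us] unfolding lw capo_def amax_def by simp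
    have "valid_upds m []" by (simp add: valid_upds_def)
    from T'[OF this] obtain M0ds rr where rPb: "run Pb (m # map code ?w0) capo amax amax (\<lambda>_. 0) = Some (M0ds, rr)"
      by (auto split: option.splits)
    have TT: "\<forall>us. valid_upds m us \<longrightarrow> (\<exists>Mds. upds Pu capo amax Bd M0ds us = Some Mds \<and>
              enum_ok L3 Pe capo amax Bd (apply_upds ?w0 us) Mds)"
    proof (intro allI impI)
      fix us assume "valid_upds m us"
      from T'[OF this] rPb show "\<exists>Mds. upds Pu capo amax Bd M0ds us = Some Mds \<and> enum_ok L3 Pe capo amax Bd (apply_upds ?w0 us) Mds"
        by (auto split: option.splits)
    qed
    have rPb': "run Pb (m # map code ?w0) capo amax (Bd * (m + 1)) (\<lambda>_. 0) = Some (M0ds, rr)" using rPb by (simp add: amax_def)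
    from pi_run[OF bo(1) amax_def bo(2) rPb'] obtain fuel M0 Os t W where
      pr: "run (pii R Bd Pb) [n] cap cap fuel (\<lambda>_. 0) = Some (M0, Os, t, W)" "pst R cap m bm M0"
        "memrel R amax M0ds M0" "\<forall>a. M0ds a < capo" "\<forall>j. M0 (bm + j) = 0" by blast
    have inv: "INV Pu R Bd n capo amax cap m bm M0ds {} M0"
      unfolding INV_def using pr(2-5) \<open>valid_upds m []\<close> by (intro conjI exI[of _ "[]"] exI[of _ M0ds]) (auto simp: apply_upds_def)
    from u1_ind[OF bo(1) TT Cst_def inv vo] pr(1) show "\<exists>fuel M0 Os t W. run (pii R Bd Pb) [n] ((n + 2) ^ K) ((n + 2) ^ K) fuel (\<lambda>_. 0) = Some (M0, Os, t, W) \<and>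
         u1_run (po R Pu Pe) ((n + 2) ^ K) Cst M0 {} ops" unfolding cap_def by blast
  qed
  show ?thesis unfolding prefix_U1_hyp_def using main by blast
qed

theorem claim7p4:
  shows "ZG L3 \<and> \<not> semi_ext_ZG L3 \<and> (prefix_U1_hyp \<longrightarrow> \<not> tractable L3)"
  using ZG_L3 not_semi tract_refutes by blast


end
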